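(* Let $n\geq1$ and $\mu\vdash 2n$. Then for every $\lambda\vdash n$, $$\hat{\phi}^{2\lambda}_{\mu}=\sum_{\tau\vdash n}m(\mu,2\tau)\,\hat{\theta}^{2\lambda}_{2\tau}.$$ Equivalently, writing $\hat{\phi}_\mu=(\hat{\phi}^{2\lambda}_\mu)_{\lambda\vdash n}$ and $m(\mu)=(m(\mu,2\tau))_{\tau\vdash n}$ as column vectors, $\hat{\phi}_\mu=\hat{\Theta}(2n)\,m(\mu)$.
   Context: Let $K_{2n}$ be the complete graph on $\{1,\ldots,2n\}$, ${\cal M}_{2n}$ its set of perfect matchings, and $[i,j]$ the edge joining $i,j$. For $A,B\in{\cal M}_{2n}$, $d(A,B)$ is the partition of $2n$ whose parts are the numbers of vertices of the connected components of the spanning subgraph with edge set $A\cup B$; it has the form $2\mu$ with $\mu\vdash n$. The group $S_{2n}$ acts on ${\cal M}_{2n}$ by relabelling vertices. For $\mu\vdash n$, $N_{2\mu}(A)=\sum_{B:\,d(A,B)=2\mu}B$ defines an element of ${\cal B}_{2n}=\mathrm{End}_{S_{2n}}({\mathbb C}[{\cal M}_{2n}])$. It is known that ${\mathbb C}[{\cal M}_{2n}]\cong\bigoplus_{\lambda\vdash n}V^{2\lambda}$ multiplicity-free, where $V^\nu$ is the irreducible $S_{2n}$-module indexed by $\nu$ and $2\lambda$ doubles the row lengths of $\lambda$. The scalar by which $N_{2\tau}$ acts on $V^{2\lambda}$ is $\hat{\theta}^{2\lambda}_{2\tau}$, and $\hat{\Theta}(2n)=(\hat{\theta}^{2\lambda}_{2\tau})_{\lambda,\tau\vdash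 n}$. For $\nu,\rho\vdash 2n$, $\hat{\phi}^\nu_\rho$ is the scalar by which the class sum of permutations of cycle type $\rho$ acts on $V^\nu$. Let $I=\{[1,n+1],[2,n+2],\ldots,[n,2n]\}$. For $\rho\vdash 2n$ and $\tau\vdash n$, $m(\rho,2\tau)$ is the number of permutations in $S_{2n}$ of cycle type $\rho$ sending $I$ to $A$, where $A\in{\cal M}_{2n}$ is any matching with $d(I,A)=2\tau$; this number does not depend on the choice of such $A$. *)

theory Defs
  imports Complex_Main "HOL-Library.Multiset" "HOL-Combinatorics.Permutations"
begin

(* Partitions are multisets of positive naturals; vertices/entries are 0-indexed: {0..<m}. *)

definition is_partition :: "nat \<Rightarrow> nat multiset \<Rightarrow> bool" where
  "is_partition m p \<longleftrightarrow> (\<forall>x\<in>#p. 0 < x) \<and> sum_mset p = m"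

definition double :: "nat multiset \<Rightarrow> nat multiset" where
  "double p = image_mset (\<lambda>x. 2 * x) p"

definition orbit_of :: "(nat \<Rightarrow> nat) \<Rightarrow> nat \<Rightarrow> nat set" where
  "orbit_of s x = {(s ^^ k) x | k. True}"

definition cycle_type :: "nat \<Rightarrow> (nat \<Rightarrow> nat) \<Rightarrow> nat multiset" where
  "cycle_type m s = image_mset card (mset_set {orbit_of s x | x. x < m})"

definition perms_of_type :: "nat \<Rightarrow> nat multiset \<Rightarrow> (nat \<Rightarrow> nat) set" where
  "perms_of_type m r = {s. s permutes {0..<m} \<and> cycle_type m s = r}"

definition rows :: "nat multiset \<Rightarrow> nat list" where
  "rows nu = rev (sorted_list_of_multiset nu)"

definition cells :: "nat multiset \<Rightarrow> (nat \<times> nat) set" where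
  "cells nu = {(i, j). i < length (rows nu) \<and> j < rows nu ! i}"

definition tableaux :: "nat multiset \<Rightarrow> (nat \<Rightarrow> nat \<times> nat) set" where
  "tableaux nu = {t. bij_betw t {0..<sum_mset nu} (cells nu)}"

definition column_group :: "nat multiset \<Rightarrow> (nat \<Rightarrow> nat \<times> nat) \<Rightarrow> (nat \<Rightarrow> nat) set" where
  "column_group nu t = {p. p permutes {0..<sum_mset nu} \<and>
      (\<forall>x < sum_mset nu. snd (t (p x)) = snd (t x))}"

(* a tabloid is represented by its row function: entry \<mapsto> row index (0 outside {0..<m}) *)
definition tabloid_of :: "nat multiset \<Rightarrow> (nat \<Rightarrow> nat \<times> nat) \<Rightarrow> (nat \<Rightarrow> nat) \<Rightarrow> (nat \<Rightarrow> nat)" where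
  "tabloid_of nu t p = (\<lambda>x. if x < sum_mset nu then fst (t (p x)) else 0)"

(* polytabloid e_t = sum over column group of sign(p) {p t}, as a function on tabloids;
   (reindexed p \<mapsto> inv p, which preserves the sign) *)
definition polytabloid :: "nat multiset \<Rightarrow> (nat \<Rightarrow> nat \<times> nat) \<Rightarrow> (nat \<Rightarrow> nat) \<Rightarrow> complex" where
  "polytabloid nu t = (\<lambda>T. \<Sum>p\<in>column_group nu t.
      of_int (sign p) * (if T = tabloid_of nu t p then 1 else 0))"

definition specht :: "nat multiset \<Rightarrow> ((nat \<Rightarrow> nat) \<Rightarrow> complex) set" where
  "specht nu = {v. \<exists>F c. finite F \<and> F \<subseteq> tableaux nu \<and>
      v = (\<lambda>T. \<Sum>t\<in>F. c t * polytabloid nu t T)}"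

(* permutation action on functions on tabloids: (s.f)(T) = f(s^{-1} T), s^{-1}T = T o s *)
definition act_tab :: "(nat \<Rightarrow> nat) \<Rightarrow> ((nat \<Rightarrow> nat) \<Rightarrow> complex) \<Rightarrow> ((nat \<Rightarrow> nat) \<Rightarrow> complex)" where
  "act_tab s f = (\<lambda>T. f (T \<circ> s))"

definition class_sum_tab :: "nat \<Rightarrow> nat multiset \<Rightarrow> ((nat \<Rightarrow> nat) \<Rightarrow> complex) \<Rightarrow> ((nat \<Rightarrow> nat) \<Rightarrow> complex)" where
  "class_sum_tab m r f = (\<lambda>T. \<Sum>s\<in>perms_of_type m r. act_tab s f T)"

(* phi_hat^nu_rho : the scalar by which the class sum of type rho acts on V^nu = S^nu *)
definition phi_hat :: "nat multiset \<Rightarrow> nat multiset \<Rightarrow> complex" where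
  "phi_hat nu rho = (THE c. \<forall>v\<in>specht nu. class_sum_tab (sum_mset nu) rho v = (\<lambda>T. c * v T))"

definition matchings :: "nat \<Rightarrow> nat set set set" where
  "matchings n = {A. (\<forall>e\<in>A. \<exists>i j. e = {i, j} \<and> i \<noteq> j \<and> i < 2 * n \<and> j < 2 * n) \<and>
                     (\<forall>x < 2 * n. \<exists>!e. e \<in> A \<and> x \<in> e)}"

definition comp_of :: "nat set set \<Rightarrow> nat \<Rightarrow> nat set" where
  "comp_of E x = {y. (x, y) \<in> {(u, v). {u, v} \<in> E}\<^sup>*}"

definition dmatch :: "nat \<Rightarrow> nat set set \<Rightarrow> nat set set \<Rightarrow> nat multiset" where
  "dmatch n A B = image_mset card (mset_set {comp_of (A \<union> B) x | x. x < 2 * n})"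

(* elements of C[M_{2n}] are functions M_{2n} \<rightarrow> C (zero outside matchings) *)
definition in_CM :: "nat \<Rightarrow> (nat set set \<Rightarrow> complex) \<Rightarrow> bool" where
  "in_CM n g \<longleftrightarrow> (\<forall>B. B \<notin> matchings n \<longrightarrow> g B = 0)"

(* relabelling action: s.delta_A = delta_{s A} *)
definition act_M :: "(nat \<Rightarrow> nat) \<Rightarrow> (nat set set \<Rightarrow> complex) \<Rightarrow> (nat set set \<Rightarrow> complex)" where
  "act_M s g = (\<lambda>B. g ((\<lambda>e. inv s ` e) ` B))"

(* N_{2tau}(A) = sum of B with d(A,B) = 2tau, extended linearly *)
definition N_op :: "nat \<Rightarrow> nat multiset \<Rightarrow> (nat set set \<Rightarrow> complex) \<Rightarrow> (nat set set \<Rightarrow> complex)" where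
  "N_op n tau g = (\<lambda>B. if B \<in> matchings n then
       (\<Sum>A\<in>{A \<in> matchings n. dmatch n A B = double tau}. g A) else 0)"

definition equivariant_into_CM :: "nat \<Rightarrow> nat multiset \<Rightarrow>
    (((nat \<Rightarrow> nat) \<Rightarrow> complex) \<Rightarrow> (nat set set \<Rightarrow> complex)) \<Rightarrow> bool" where
  "equivariant_into_CM n nu f \<longleftrightarrow>
     (\<forall>u\<in>specht nu. in_CM n (f u)) \<and>
     (\<forall>u\<in>specht nu. \<forall>v\<in>specht nu. \<forall>a b.
        f (\<lambda>T. a * u T + b * v T) = (\<lambda>B. a * f u B + b * f v B)) \<and>
     (\<forall>s u. s permutes {0..<2 * n} \<longrightarrow> u \<in> specht nu \<longrightarrow> f (act_tab s u) = act_M s (f u))"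

definition V_in_CM :: "nat \<Rightarrow> nat multiset \<Rightarrow> (nat set set \<Rightarrow> complex) set" where
  "V_in_CM n lam = {f u | f u. equivariant_into_CM n (double lam) f \<and> u \<in> specht (double lam)}"

definition theta_hat :: "nat \<Rightarrow> nat multiset \<Rightarrow> nat multiset \<Rightarrow> complex" where
  "theta_hat n lam tau = (THE c. \<forall>v\<in>V_in_CM n lam. N_op n tau v = (\<lambda>B. c * v B))"

(* I = {[1,n+1],...,[n,2n]} (0-indexed: {i, n+i}, i < n) *)
definition I_match :: "nat \<Rightarrow> nat set set" where
  "I_match n = {{i, n + i} | i. i < n}"

definition m_count :: "nat \<Rightarrow> nat multiset \<Rightarrow> nat multiset \<Rightarrow> nat" where
  "m_count n rho tau =
     (let A = (SOME A. A \<in> matchings n \<and> dmatch n (I_match n) A = double tau) in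
      card {s \<in> perms_of_type (2 * n) rho. (\<lambda>e. s ` e) ` I_match n = A})"

end

theory Submission
  imports Defs
begin

definition rlen :: "nat multiset \<Rightarrow> nat \<Rightarrow> nat" where
  "rlen nu r = (if r < length (rows nu) then rows nu ! r else 0)"

lemma rows_sorted: "sorted_wrt (\<ge>) (rows nu)"
  unfolding rows_def by (simp add: sorted_wrt_rev)

lemma rlen_mono: assumes "i \<le> j" shows "rlen nu j \<le> rlen nu i"
proof -
  have s: "sorted_wrt (\<ge>) (rows nu)" by (rule rows_sorted)
  show ?thesis
  proof (cases "j < length (rows nu)")
    case True
    then have "i < length (rows nu)" using assms by simp
    show ?thesis
    proof (cases "i = j")
      case False
      then have "i < j" using assms by simp
      then show ?thesis using True \<open>i < length (rows nu)\<close> s unfolding rlen_def sorted_wrt_iff_nth_less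
        by simp
    qed simp
  next
    case False then show ?thesis unfolding rlen_def by simp
  qed
qed

lemma cells_iff: "(i, j) \<in> cells nu \<longleftrightarrow> j < rlen nu i"
  unfolding cells_def rlen_def by auto

lemma cells_iff': "c \<in> cells nu \<longleftrightarrow> snd c < rlen nu (fst c)"
  using cells_iff[of "fst c" "snd c" nu] by simp

lemma sum_list_rows: "sum_list (rows nu) = sum_mset nu"
  unfolding rows_def by (simp add: sum_mset_sum_list[symmetric])

lemma rlen_le: "rlen nu i \<le> sum_mset nu"
  unfolding rlen_def using sum_list_rows[of nu]
  using elem_le_sum_list[of i "rows nu"] by auto

lemma sum_rlen: "(\<Sum>i<length (rows nu). rlen nu i) = sum_mset nu"
proof -
  have "(\<Sum>i<length (rows nu). rlen nu i) = (\<Sum>i<length (rows nu). rows nu ! i)"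
    by (rule sum.cong) (auto simp: rlen_def)
  also have "\<dots> = sum_list (rows nu)" by (simp add: sum_list_sum_nth atLeast0LessThan)
  finally show ?thesis by (simp add: sum_list_rows)
qed

lemma cells_Sigma: "cells nu = (SIGMA i:{..<length (rows nu)}. {..<rlen nu i})"
  unfolding cells_def rlen_def by auto

lemma finite_cells: "finite (cells nu)"
  unfolding cells_Sigma by auto

lemma card_cells: "card (cells nu) = sum_mset nu"
  unfolding cells_Sigma by (simp add: sum_rlen)

lemma tableaux_exist: "\<exists>t. t \<in> tableaux nu"
proof -
  obtain h where "bij_betw h {0..<card (cells nu)} (cells nu)"
    using ex_bij_betw_nat_finite[OF finite_cells] by blast
  then show ?thesis unfolding tableaux_def by (auto simp: card_cells)
qed

lemma tab_cell: "t \<in> tableaux nu \<Longrightarrow> x < sum_mset nu \<Longrightarrow> t x \<in> cells nu"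
  unfolding tableaux_def bij_betw_def by auto

lemma tab_inj: "t \<in> tableaux nu \<Longrightarrow> x < sum_mset nu \<Longrightarrow> y < sum_mset nu \<Longrightarrow> t x = t y \<Longrightarrow> x = y"
  unfolding tableaux_def bij_betw_def inj_on_def by auto

lemma tab_surj: "t \<in> tableaux nu \<Longrightarrow> c \<in> cells nu \<Longrightarrow> \<exists>x < sum_mset nu. t x = c"
proof -
  assume a: "t \<in> tableaux nu" "c \<in> cells nu"
  then have "c \<in> t ` {0..<sum_mset nu}" unfolding tableaux_def bij_betw_def by simp
  then obtain x where "x \<in> {0..<sum_mset nu}" "c = t x" by blast
  then show ?thesis by auto
qed

lemma tab_inv: "t \<in> tableaux nu \<Longrightarrow> c \<in> cells nu \<Longrightarrow>
   inv_into {0..<sum_mset nu} t c < sum_mset nu \<and> t (inv_into {0..<sum_mset nu} t c) = c"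
proof -
  assume a: "t \<in> tableaux nu" "c \<in> cells nu"
  then have b: "bij_betw t {0..<sum_mset nu} (cells nu)" unfolding tableaux_def by simp
  then have "c \<in> t ` {0..<sum_mset nu}" using a(2) by (simp add: bij_betw_def)
  then show ?thesis using inv_into_into[of c t "{0..<sum_mset nu}"] f_inv_into_f[of c t "{0..<sum_mset nu}"] by auto
qed

lemma cg_perm: "p \<in> column_group nu t \<Longrightarrow> p permutes {0..<sum_mset nu}"
  unfolding column_group_def by simp

lemma cg_col: "p \<in> column_group nu t \<Longrightarrow> x < sum_mset nu \<Longrightarrow> snd (t (p x)) = snd (t x)"
  unfolding column_group_def by simp

lemma perm_lt: "p permutes {0..<(m::nat)} \<Longrightarrow> x < m \<Longrightarrow> p x < m"
proof -
  assume p: "p permutes {0..<m}" and x: "x < m"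
  have "p x \<in> {0..<m} \<longleftrightarrow> x \<in> {0..<m}" by (rule permutes_in_image[OF p])
  then show ?thesis using x by simp
qed

lemma perm_lt_iff: "p permutes {0..<(m::nat)} \<Longrightarrow> p x < m \<longleftrightarrow> x < m"
proof -
  assume p: "p permutes {0..<m}"
  have "p x \<in> {0..<m} \<longleftrightarrow> x \<in> {0..<m}" by (rule permutes_in_image[OF p])
  then show ?thesis by simp
qed

lemma cg_id: "id \<in> column_group nu t"
  unfolding column_group_def by (simp add: permutes_id)

lemma cg_comp: "p \<in> column_group nu t \<Longrightarrow> q \<in> column_group nu t \<Longrightarrow> p \<circ> q \<in> column_group nu t"
  unfolding column_group_def using permutes_compose[of q "{0..<sum_mset nu}" p]
  by (auto simp: perm_lt)

lemma cg_inv: "p \<in> column_group nu t \<Longrightarrow> inv p \<in> column_group nu t"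
proof -
  assume p: "p \<in> column_group nu t"
  have pp: "p permutes {0..<sum_mset nu}" using p by (rule cg_perm)
  have "snd (t (inv p x)) = snd (t x)" if "x < sum_mset nu" for x
  proof -
    have "inv p x < sum_mset nu" using perm_lt[OF permutes_inv[OF pp] that] .
    then have "snd (t (p (inv p x))) = snd (t (inv p x))" using cg_col[OF p] by blast
    then show ?thesis using permutes_inverses(1)[OF pp] by simp
  qed
  then show ?thesis unfolding column_group_def using permutes_inv[OF pp] by simp
qed

lemma cg_finite: "finite (column_group nu t)"
proof -
  have "column_group nu t \<subseteq> {p. p permutes {0..<sum_mset nu}}" unfolding column_group_def by auto
  then show ?thesis using finite_permutations[of "{0..<sum_mset nu}"] finite_subset by blast
qed

lemma cg_swap: "a < sum_mset nu \<Longrightarrow> b < sum_mset nu \<Longrightarrow> snd (t a) = snd (t b) \<Longrightarrow>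
   transpose a b \<in> column_group nu t"
  unfolding column_group_def
  by (auto simp: permutes_swap_id transpose_def)

lemma cg_nonempty_card: "card (column_group nu t) > 0"
  using cg_id[of nu t] cg_finite[of nu t] by (auto simp: card_gt_0_iff)

lemma tab_comp: "c permutes {0..<sum_mset nu} \<Longrightarrow> tabloid_of nu t p \<circ> c = tabloid_of nu t (p \<circ> c)"
  unfolding tabloid_of_def by (auto simp: perm_lt_iff fun_eq_iff)

definition shape_ok :: "nat multiset \<Rightarrow> (nat \<Rightarrow> nat) \<Rightarrow> bool" where
  "shape_ok nu T \<longleftrightarrow> (\<forall>x. sum_mset nu \<le> x \<longrightarrow> T x = 0) \<and>
     (\<forall>r. card {x. x < sum_mset nu \<and> T x = r} = rlen nu r)"

lemma shape_tab:
  assumes t: "t \<in> tableaux nu" and p: "p permutes {0..<sum_mset nu}"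
  shows "shape_ok nu (tabloid_of nu t p)"
proof -
  let ?m = "sum_mset nu"
  have "card {x. x < ?m \<and> fst (t (p x)) = r} = rlen nu r" for r
  proof -
    let ?A = "{x. x < ?m \<and> fst (t (p x)) = r}"
    have inj: "inj_on (\<lambda>x. t (p x)) ?A"
    proof (rule inj_onI)
      fix x y assume "x \<in> ?A" "y \<in> ?A" "t (p x) = t (p y)"
      then have "p x = p y" using tab_inj[OF t] perm_lt[OF p] by blast
      then show "x = y" using permutes_inj[OF p] by (simp add: inj_eq)
    qed
    have img: "(\<lambda>x. t (p x)) ` ?A = {r} \<times> {..<rlen nu r}"
    proof
      show "(\<lambda>x. t (p x)) ` ?A \<subseteq> {r} \<times> {..<rlen nu r}"
      proof
        fix c assume "c \<in> (\<lambda>x. t (p x)) ` ?A"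
        then obtain x where x: "x < ?m" "fst (t (p x)) = r" "c = t (p x)" by blast
        then have "t (p x) \<in> cells nu" using tab_cell[OF t] perm_lt[OF p] by blast
        then have "snd c < rlen nu (fst c)" using x cells_iff' by simp
        then show "c \<in> {r} \<times> {..<rlen nu r}" using x by (simp add: mem_Times_iff)
      qed
      show "{r} \<times> {..<rlen nu r} \<subseteq> (\<lambda>x. t (p x)) ` ?A"
      proof
        fix c assume c: "c \<in> {r} \<times> {..<rlen nu r}"
        then have "c \<in> cells nu" using cells_iff[of r "snd c" nu] by auto
        then obtain y where y: "y < ?m" "t y = c" using tab_surj[OF t] by blast
        have "inv p y < ?m" using perm_lt[OF permutes_inv[OF p] y(1)] .
        moreover have "p (inv p y) = y" using permutes_inverses(1)[OF p] by simp
        ultimately show "c \<in> (\<lambda>x. t (p x)) ` ?A" using y c by force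
      qed
    qed
    have "card ?A = card ({r} \<times> {..<rlen nu r})" using card_image[OF inj] img by simp
    then show ?thesis by simp
  qed
  moreover have "{x. x < ?m \<and> tabloid_of nu t p x = r} = {x. x < ?m \<and> fst (t (p x)) = r}" for r
    unfolding tabloid_of_def by auto
  ultimately show ?thesis unfolding shape_ok_def by (auto simp: tabloid_of_def)
qed

lemma shape_comp:
  assumes sh: "shape_ok nu T" and c: "c permutes {0..<sum_mset nu}"
  shows "shape_ok nu (T \<circ> c)"
proof -
  let ?m = "sum_mset nu"
  have "card {x. x < ?m \<and> T (c x) = r} = rlen nu r" for r
  proof -
    have inj: "inj_on c {x. x < ?m \<and> T (c x) = r}" by (rule inj_on_subset[OF permutes_inj[OF c]]) simp
    have "c ` {x. x < ?m \<and> T (c x) = r} = {y. y < ?m \<and> T y = r}"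
    proof
      show "c ` {x. x < ?m \<and> T (c x) = r} \<subseteq> {y. y < ?m \<and> T y = r}" using perm_lt[OF c] by auto
      show "{y. y < ?m \<and> T y = r} \<subseteq> c ` {x. x < ?m \<and> T (c x) = r}"
      proof
        fix y assume y: "y \<in> {y. y < ?m \<and> T y = r}"
        have "inv c y < ?m" using perm_lt[OF permutes_inv[OF c]] y by simp
        moreover have "c (inv c y) = y" using permutes_inverses(1)[OF c] by simp
        ultimately show "y \<in> c ` {x. x < ?m \<and> T (c x) = r}" using y by force
      qed
    qed
    then show ?thesis using card_image[OF inj] sh unfolding shape_ok_def by simp
  qed
  moreover have "\<forall>x. ?m \<le> x \<longrightarrow> T (c x) = 0"
  proof (intro allI impI)
    fix x assume "?m \<le> x"
    then have "c x = x" using permutes_not_in[OF c, of x] by simp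
    then show "T (c x) = 0" using sh \<open>?m \<le> x\<close> unfolding shape_ok_def by simp
  qed
  ultimately show ?thesis unfolding shape_ok_def by simp
qed

lemma downclosed_finite:
  fixes Q :: "nat set" assumes "finite Q" "\<And>i i'. i \<in> Q \<Longrightarrow> i' \<le> i \<Longrightarrow> i' \<in> Q"
  shows "Q = {..<card Q}"
proof -
  have "Q \<subseteq> {..<card Q}"
  proof
    fix x assume "x \<in> Q"
    then have "{..x} \<subseteq> Q" using assms(2) by auto
    then have "card {..x} \<le> card Q" by (rule card_mono[OF assms(1)])
    then show "x \<in> {..<card Q}" by simp
  qed
  then show ?thesis using card_subset_eq[of "{..<card Q}" Q] by auto
qed

lemma tab_col_lt: "t \<in> tableaux nu \<Longrightarrow> x < sum_mset nu \<Longrightarrow> snd (t x) < sum_mset nu"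
proof -
  assume t: "t \<in> tableaux nu" and x: "x < sum_mset nu"
  have "t x \<in> cells nu" using tab_cell[OF t x] .
  then have "snd (t x) < rlen nu (fst (t x))" using cells_iff[of "fst (t x)" "snd (t x)" nu] by simp
  then show ?thesis using rlen_le[of nu "fst (t x)"] by simp
qed

lemma dominance:
  assumes t: "t \<in> tableaux nu" and sh: "shape_ok nu T"
    and inj: "\<And>x y. x < sum_mset nu \<Longrightarrow> y < sum_mset nu \<Longrightarrow> snd (t x) = snd (t y) \<Longrightarrow> T x = T y \<Longrightarrow> x = y"
    and x: "x < sum_mset nu"
  shows "snd (t x) < rlen nu (T x)"
proof (rule ccontr)
  assume contra: "\<not> snd (t x) < rlen nu (T x)"
  define m where "m = sum_mset nu"
  define Q where "Q j = {i. j < rlen nu i}" for j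
  define Col where "Col j = {x. x < m \<and> snd (t x) = j}" for j
  define S where "S r = {x. x < m \<and> T x \<le> r}" for r
  have finQ: "finite (Q j)" for j
  proof -
    have "Q j \<subseteq> {..<length (rows nu)}" unfolding Q_def rlen_def by (auto split: if_splits)
    then show ?thesis by (rule finite_subset) simp
  qed
  have Qdown: "i \<in> Q j \<Longrightarrow> i' \<le> i \<Longrightarrow> i' \<in> Q j" for i i' j
    unfolding Q_def using rlen_mono[of i' i nu] by auto
  have Qeq: "Q j = {..<card (Q j)}" for j by (rule downclosed_finite[OF finQ Qdown])
  have finCol: "finite (Col j)" for j unfolding Col_def by simp
  have cardCol: "card (Col j) = card (Q j)" for j
  proof -
    have "bij_betw (\<lambda>x. fst (t x)) (Col j) (Q j)"
      unfolding bij_betw_def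
    proof
      show "inj_on (\<lambda>x. fst (t x)) (Col j)"
      proof (rule inj_onI)
        fix x y assume "x \<in> Col j" "y \<in> Col j" "fst (t x) = fst (t y)"
        then have "t x = t y" "x < m" "y < m" unfolding Col_def by (auto simp: prod_eq_iff)
        then show "x = y" using tab_inj[OF t] unfolding m_def by blast
      qed
      show "(\<lambda>x. fst (t x)) ` Col j = Q j"
      proof
        show "(\<lambda>x. fst (t x)) ` Col j \<subseteq> Q j"
        proof
          fix i assume "i \<in> (\<lambda>x. fst (t x)) ` Col j"
          then obtain x where x: "x \<in> Col j" "i = fst (t x)" by blast
          then have "t x \<in> cells nu" "snd (t x) = j" using tab_cell[OF t] unfolding Col_def m_def by auto
          then show "i \<in> Q j" using cells_iff' x(2) unfolding Q_def by simp
        qed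
        show "Q j \<subseteq> (\<lambda>x. fst (t x)) ` Col j"
        proof
          fix i assume "i \<in> Q j"
          then have "(i, j) \<in> cells nu" unfolding Q_def cells_iff by simp
          then obtain x where "x < m" "t x = (i, j)" using tab_surj[OF t] unfolding m_def by blast
          then show "i \<in> (\<lambda>x. fst (t x)) ` Col j" unfolding Col_def by force
        qed
      qed
    qed
    then show ?thesis by (rule bij_betw_same_card)
  qed
  have cardS: "card (S r) = (\<Sum>i\<le>r. rlen nu i)" for r
  proof -
    have "S r = (\<Union>i\<in>{..r}. {x. x < m \<and> T x = i})" unfolding S_def by auto
    then have "card (S r) = card (\<Union>i\<in>{..r}. {x. x < m \<and> T x = i})" by simp
    also have "\<dots> = (\<Sum>i\<le>r. card {x. x < m \<and> T x = i})" by (rule card_UN_disjoint) auto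
    also have "\<dots> = (\<Sum>i\<le>r. rlen nu i)" using sh unfolding shape_ok_def m_def by simp
    finally show ?thesis .
  qed
  have le: "card (S r \<inter> Col j) \<le> card ({..r} \<inter> Q j)" for r j
  proof -
    define cq where "cq = card (Q j)"
    have qe: "Q j = {..<cq}" using Qeq[of j] unfolding cq_def .
    have "{..r} \<inter> Q j = {..<min (Suc r) (card (Q j))}" unfolding qe cq_def[symmetric] by auto
    then have c1: "card ({..r} \<inter> Q j) = min (Suc r) (card (Q j))" by simp
    have c2: "card (S r \<inter> Col j) \<le> card (Q j)"
      using card_mono[OF finCol, of "S r \<inter> Col j" j] cardCol by simp
    have "inj_on T (S r \<inter> Col j)"
    proof (rule inj_onI)
      fix x y assume "x \<in> S r \<inter> Col j" "y \<in> S r \<inter> Col j" "T x = T y"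
      then show "x = y" using inj[of x y] unfolding S_def Col_def m_def by simp
    qed
    moreover have "T ` (S r \<inter> Col j) \<subseteq> {..r}" unfolding S_def by auto
    ultimately have "card (S r \<inter> Col j) \<le> card {..r}" by (rule card_inj_on_le) simp
    then show ?thesis using c1 c2 by simp
  qed
  have sum1: "(\<Sum>j<m. card (S r \<inter> Col j)) = card (S r)" for r
  proof -
    have "S r = (\<Union>j\<in>{..<m}. S r \<inter> Col j)"
      using tab_col_lt[OF t] unfolding S_def Col_def m_def by auto
    then have "card (S r) = card (\<Union>j\<in>{..<m}. S r \<inter> Col j)" by simp
    also have "\<dots> = (\<Sum>j<m. card (S r \<inter> Col j))"
      by (rule card_UN_disjoint) (auto simp: Col_def)
    finally show ?thesis by simp
  qed
  have sum2: "(\<Sum>j<m. card ({..r} \<inter> Q j)) = (\<Sum>i\<le>r. rlen nu i)" for r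
  proof -
    have "(\<Sum>j<m. card ({..r} \<inter> Q j)) = card (SIGMA j:{..<m}. {..r} \<inter> Q j)"
      by simp
    also have "\<dots> = card ((\<lambda>(j, i). (i, j)) ` (SIGMA j:{..<m}. {..r} \<inter> Q j))"
      by (rule card_image[symmetric]) (auto simp: inj_on_def)
    also have "(\<lambda>(j, i). (i, j)) ` (SIGMA j:{..<m}. {..r} \<inter> Q j) = (SIGMA i:{..r}. {..<rlen nu i})"
    proof
      show "(\<lambda>(j, i). (i, j)) ` (SIGMA j:{..<m}. {..r} \<inter> Q j) \<subseteq> (SIGMA i:{..r}. {..<rlen nu i})"
        unfolding Q_def by auto
      show "(SIGMA i:{..r}. {..<rlen nu i}) \<subseteq> (\<lambda>(j, i). (i, j)) ` (SIGMA j:{..<m}. {..r} \<inter> Q j)"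
      proof
        fix p assume p: "p \<in> (SIGMA i:{..r}. {..<rlen nu i})"
        then have "snd p < m" using rlen_le[of nu "fst p"] unfolding m_def by auto
        then have "(snd p, fst p) \<in> (SIGMA j:{..<m}. {..r} \<inter> Q j)"
          using p unfolding Q_def by (auto simp: mem_Times_iff)
        then show "p \<in> (\<lambda>(j, i). (i, j)) ` (SIGMA j:{..<m}. {..r} \<inter> Q j)"
          by (rule image_eqI[rotated]) simp
      qed
    qed
    also have "card (SIGMA i:{..r}. {..<rlen nu i}) = (\<Sum>i\<le>r. rlen nu i)" by simp
    finally show ?thesis .
  qed
  have eq: "card (S r \<inter> Col j) = card ({..r} \<inter> Q j)" if "j < m" for r j
    using sum_mono_inv[of "\<lambda>j. card (S r \<inter> Col j)" "{..<m}" "\<lambda>j. card ({..r} \<inter> Q j)" j]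
      sum1 sum2 cardS le that by simp
  define j where "j = snd (t x)"
  define r where "r = T x"
  have jm: "j < m" using tab_col_lt[OF t x] unfolding j_def m_def .
  have xC: "x \<in> Col j" using x unfolding Col_def j_def m_def by simp
  have Qsub: "Q j \<subseteq> {..<r}"
  proof
    fix i assume "i \<in> Q j"
    then have "j < rlen nu i" unfolding Q_def by simp
    moreover have "r \<le> i \<Longrightarrow> rlen nu i \<le> rlen nu r" by (rule rlen_mono)
    ultimately show "i \<in> {..<r}" using contra unfolding j_def r_def by force
  qed
  show False
  proof (cases r)
    case 0
    then have "Q j = {}" using Qsub by auto
    then have "Col j = {}" using cardCol[of j] finCol[of j] by simp
    then show False using xC by simp
  next
    case (Suc r')
    have "{..r'} \<inter> Q j = Q j" using Qsub Suc by auto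
    then have "card (S r' \<inter> Col j) = card (Col j)" using eq[OF jm, of r'] cardCol by simp
    then have "S r' \<inter> Col j = Col j" using card_subset_eq[OF finCol, of "S r' \<inter> Col j"] by auto
    then have "x \<in> S r'" using xC by auto
    then show False unfolding S_def r_def using Suc r_def by simp
  qed
qed

lemma dominance_perm:
  assumes t: "t \<in> tableaux nu" and sh: "shape_ok nu T"
    and inj: "\<And>x y. x < sum_mset nu \<Longrightarrow> y < sum_mset nu \<Longrightarrow> snd (t x) = snd (t y) \<Longrightarrow> T x = T y \<Longrightarrow> x = y"
  shows "\<exists>p \<in> column_group nu t. T = tabloid_of nu t p"
proof -
  let ?m = "sum_mset nu"
  define p where "p x = (if x < ?m then inv_into {0..<?m} t (T x, snd (t x)) else x)" for x
  have cell: "(T x, snd (t x)) \<in> cells nu" if "x < ?m" for x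
  proof -
    have "snd (t x) < rlen nu (T x)" by (rule dominance[OF t sh inj that])
    then show ?thesis by (simp add: cells_iff)
  qed
  have px: "p x < ?m \<and> t (p x) = (T x, snd (t x))" if "x < ?m" for x
    using tab_inv[OF t cell[OF that]] that unfolding p_def by simp
  have injp: "inj_on p {0..<?m}"
  proof (rule inj_onI)
    fix x y assume "x \<in> {0..<?m}" "y \<in> {0..<?m}" "p x = p y"
    then have xy: "x < ?m" "y < ?m" "t (p x) = t (p y)" by auto
    then have "(T x, snd (t x)) = (T y, snd (t y))" using px[of x] px[of y] by simp
    then show "x = y" using inj xy by auto
  qed
  have "p ` {0..<?m} \<subseteq> {0..<?m}" using px by auto
  then have "p ` {0..<?m} = {0..<?m}"
    using endo_inj_surj[of "{0..<?m}" p] injp by blast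
  then have "bij_betw p {0..<?m} {0..<?m}" using injp by (simp add: bij_betw_def)
  moreover have "\<And>x. x \<notin> {0..<?m} \<Longrightarrow> p x = x" unfolding p_def by simp
  ultimately have pp: "p permutes {0..<?m}" by (rule bij_imp_permutes)
  have "p \<in> column_group nu t" unfolding column_group_def using pp px by simp
  moreover have "T = tabloid_of nu t p"
  proof
    fix x show "T x = tabloid_of nu t p x"
    proof (cases "x < ?m")
      case True then show ?thesis using px[OF True] unfolding tabloid_of_def by simp
    next
      case False then show ?thesis using sh unfolding tabloid_of_def shape_ok_def by simp
    qed
  qed
  ultimately show ?thesis by blast
qed

definition lin_closed :: "('x \<Rightarrow> complex) set \<Rightarrow> bool" where
  "lin_closed S \<longleftrightarrow> S \<noteq> {} \<and> (\<forall>u\<in>S. \<forall>v\<in>S. \<forall>a b. (\<lambda>T. a * u T + b * v T) \<in> S)"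

definition lin_on :: "('x \<Rightarrow> complex) set \<Rightarrow> (('x \<Rightarrow> complex) \<Rightarrow> ('y \<Rightarrow> complex)) \<Rightarrow> bool" where
  "lin_on S \<phi> \<longleftrightarrow> (\<forall>u\<in>S. \<forall>v\<in>S. \<forall>a b. \<phi> (\<lambda>T. a * u T + b * v T) = (\<lambda>T. a * \<phi> u T + b * \<phi> v T))"

lemma lin_closedD: "lin_closed S \<Longrightarrow> u \<in> S \<Longrightarrow> v \<in> S \<Longrightarrow> (\<lambda>T. a * u T + b * v T) \<in> S"
  unfolding lin_closed_def by blast

lemma lin_onD: "lin_on S \<phi> \<Longrightarrow> u \<in> S \<Longrightarrow> v \<in> S \<Longrightarrow> \<phi> (\<lambda>T. a * u T + b * v T) = (\<lambda>T. a * \<phi> u T + b * \<phi> v T)"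
  unfolding lin_on_def by blast

lemma lin_zero: assumes "lin_closed S" shows "(\<lambda>T. 0) \<in> S"
proof -
  obtain u where u: "u \<in> S" using assms unfolding lin_closed_def by blast
  have "(\<lambda>T. 0 * u T + 0 * u T) \<in> S" by (rule lin_closedD[OF assms u u])
  then show ?thesis by simp
qed

lemma lin_smult: assumes "lin_closed S" "u \<in> S" shows "(\<lambda>T. a * u T) \<in> S"
proof -
  have "(\<lambda>T. a * u T + 0 * u T) \<in> S" by (rule lin_closedD[OF assms(1) assms(2) assms(2)])
  then show ?thesis by simp
qed

lemma lin_on_zero: assumes "lin_closed S" "lin_on S \<phi>" shows "\<phi> (\<lambda>T. 0) = (\<lambda>T. 0)"
proof -
  obtain u where u: "u \<in> S" using assms unfolding lin_closed_def by blast
  have "\<phi> (\<lambda>T. 0 * u T + 0 * u T) = (\<lambda>T. 0 * \<phi> u T + 0 * \<phi> u T)" by (rule lin_onD[OF assms(2) u u])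
  then show ?thesis by simp
qed

lemma lin_on_smult: assumes "lin_on S \<phi>" "u \<in> S" shows "\<phi> (\<lambda>T. a * u T) = (\<lambda>T. a * \<phi> u T)"
proof -
  have "\<phi> (\<lambda>T. a * u T + 0 * u T) = (\<lambda>T. a * \<phi> u T + 0 * \<phi> u T)" by (rule lin_onD[OF assms(1) assms(2) assms(2)])
  then show ?thesis by simp
qed

lemma lin_sum:
  assumes S: "lin_closed S" and phi: "lin_on S \<phi>" and I: "finite I" and u: "\<forall>i\<in>I. u i \<in> S"
  shows "(\<lambda>T. \<Sum>i\<in>I. a i * u i T) \<in> S \<and> \<phi> (\<lambda>T. \<Sum>i\<in>I. a i * u i T) = (\<lambda>T. \<Sum>i\<in>I. a i * \<phi> (u i) T)"
  using I u
proof (induction I rule: finite_induct)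
  case empty
  then show ?case using lin_zero[OF S] lin_on_zero[OF S phi] by simp
next
  case (insert j I)
  let ?w = "\<lambda>T. \<Sum>i\<in>I. a i * u i T"
  have w: "?w \<in> S" and pw: "\<phi> ?w = (\<lambda>T. \<Sum>i\<in>I. a i * \<phi> (u i) T)" using insert by auto
  have uj: "u j \<in> S" using insert by simp
  have eq: "(\<lambda>T. \<Sum>i\<in>insert j I. a i * u i T) = (\<lambda>T. a j * u j T + 1 * ?w T)"
    using insert by simp
  have "(\<lambda>T. a j * u j T + 1 * ?w T) \<in> S" by (rule lin_closedD[OF S uj w])
  moreover have "\<phi> (\<lambda>T. a j * u j T + 1 * ?w T) = (\<lambda>T. a j * \<phi> (u j) T + 1 * \<phi> ?w T)"
    by (rule lin_onD[OF phi uj w])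
  ultimately show ?case unfolding eq using insert pw by simp
qed

lemma lin_on_id: "lin_on S (\<lambda>v. v)" unfolding lin_on_def by simp

lemma lin_sum_mem:
  assumes S: "lin_closed S" and I: "finite I" and u: "\<forall>i\<in>I. u i \<in> S"
  shows "(\<lambda>T. \<Sum>i\<in>I. a i * u i T) \<in> S"
  using lin_sum[OF S lin_on_id I u] by blast

lemma specht_lin: "lin_closed (specht nu)"
  unfolding lin_closed_def
proof (intro conjI ballI allI)
  have "(\<lambda>T. \<Sum>t\<in>{}. (\<lambda>_. 0) t * polytabloid nu t T) \<in> specht nu"
    unfolding specht_def by (rule CollectI, rule exI[where x="{}"], rule exI[where x="\<lambda>_. 0"]) simp
  then show "specht nu \<noteq> {}" by blast
next
  fix u v a b assume u: "u \<in> specht nu" and v: "v \<in> specht nu"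
  obtain F1 c1 where F1: "finite F1" "F1 \<subseteq> tableaux nu" and u': "u = (\<lambda>T. \<Sum>t\<in>F1. c1 t * polytabloid nu t T)"
    using u unfolding specht_def by blast
  obtain F2 c2 where F2: "finite F2" "F2 \<subseteq> tableaux nu" and v': "v = (\<lambda>T. \<Sum>t\<in>F2. c2 t * polytabloid nu t T)"
    using v unfolding specht_def by blast
  define c where "c t = a * (if t \<in> F1 then c1 t else 0) + b * (if t \<in> F2 then c2 t else 0)" for t
  have fin: "finite (F1 \<union> F2)" using F1 F2 by simp
  have "(\<lambda>T. a * u T + b * v T) = (\<lambda>T. \<Sum>t\<in>F1 \<union> F2. c t * polytabloid nu t T)"
  proof
    fix T
    have s1: "(\<Sum>t\<in>F1. c1 t * polytabloid nu t T) = (\<Sum>t\<in>F1 \<union> F2. (if t \<in> F1 then c1 t else 0) * polytabloid nu t T)"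
      by (rule sum.mono_neutral_cong_left) (use fin in auto)
    have s2: "(\<Sum>t\<in>F2. c2 t * polytabloid nu t T) = (\<Sum>t\<in>F1 \<union> F2. (if t \<in> F2 then c2 t else 0) * polytabloid nu t T)"
      by (rule sum.mono_neutral_cong_left) (use fin in auto)
    show "a * u T + b * v T = (\<Sum>t\<in>F1 \<union> F2. c t * polytabloid nu t T)"
      unfolding u' v' s1 s2 c_def by (simp add: sum_distrib_left sum.distrib algebra_simps)
  qed
  then show "(\<lambda>T. a * u T + b * v T) \<in> specht nu" unfolding specht_def
    by (intro CollectI exI[where x="F1 \<union> F2"] exI[where x=c]) (use fin F1 F2 in simp)
qed

lemma polytab_in: "t \<in> tableaux nu \<Longrightarrow> polytabloid nu t \<in> specht nu"
proof -
  assume t: "t \<in> tableaux nu"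
  have "polytabloid nu t = (\<lambda>T. \<Sum>t'\<in>{t}. (\<lambda>_. 1) t' * polytabloid nu t' T)" by simp
  then show ?thesis unfolding specht_def
    by (intro CollectI exI[where x="{t}"] exI[where x="\<lambda>_. 1"]) (use t in simp)
qed

lemma tab_inj_cg:
  assumes t: "t \<in> tableaux nu" and p: "p \<in> column_group nu t" and q: "q \<in> column_group nu t"
    and eq: "tabloid_of nu t p = tabloid_of nu t q"
  shows "p = q"
proof
  fix x show "p x = q x"
  proof (cases "x < sum_mset nu")
    case True
    have "fst (t (p x)) = fst (t (q x))" using eq True unfolding tabloid_of_def by (metis (mono_tags))
    moreover have "snd (t (p x)) = snd (t (q x))" using cg_col[OF p True] cg_col[OF q True] by simp
    ultimately have "t (p x) = t (q x)" by (simp add: prod_eq_iff)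
    then show ?thesis using tab_inj[OF t] perm_lt[OF cg_perm[OF p] True] perm_lt[OF cg_perm[OF q] True] by blast
  next
    case False
    then show ?thesis using permutes_not_in[OF cg_perm[OF p]] permutes_not_in[OF cg_perm[OF q]] by simp
  qed
qed

lemma polytab_support: "t \<in> tableaux nu \<Longrightarrow> polytabloid nu t T \<noteq> 0 \<Longrightarrow> \<exists>p\<in>column_group nu t. T = tabloid_of nu t p"
  unfolding polytabloid_def by (rule ccontr) simp

lemma specht_support: "v \<in> specht nu \<Longrightarrow> v T \<noteq> 0 \<Longrightarrow> shape_ok nu T"
proof -
  assume v: "v \<in> specht nu" and nz: "v T \<noteq> 0"
  obtain F c where F: "finite F" "F \<subseteq> tableaux nu" and v': "v = (\<lambda>T. \<Sum>t\<in>F. c t * polytabloid nu t T)"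
    using v unfolding specht_def by blast
  have "\<exists>t\<in>F. polytabloid nu t T \<noteq> 0"
  proof (rule ccontr)
    assume "\<not> ?thesis"
    then have "v T = 0" unfolding v' by simp
    then show False using nz by simp
  qed
  then obtain t p where "t \<in> tableaux nu" "p \<in> column_group nu t" "T = tabloid_of nu t p"
    using polytab_support F by blast
  then show ?thesis using shape_tab cg_perm by blast
qed

lemma polytab_self: assumes t: "t \<in> tableaux nu" shows "polytabloid nu t (tabloid_of nu t id) = 1"
proof -
  have "polytabloid nu t (tabloid_of nu t id) =
      (\<Sum>p\<in>column_group nu t. if p = id then 1 else 0)"
    unfolding polytabloid_def
  proof (rule sum.cong[OF refl])
    fix p assume p: "p \<in> column_group nu t"
    have "tabloid_of nu t id = tabloid_of nu t p \<longleftrightarrow> p = id"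
      using tab_inj_cg[OF t cg_id p] by blast
    then show "of_int (sign p) * (if tabloid_of nu t id = tabloid_of nu t p then 1 else 0) = (if p = id then 1 else 0)"
      by auto
  qed
  also have "\<dots> = 1" using cg_id[of nu t] cg_finite[of nu t] by simp
  finally show ?thesis .
qed

lemma act_tab_comp: "act_tab s (act_tab s' v) = act_tab (s \<circ> s') v"
  unfolding act_tab_def by (simp add: comp_assoc)

lemma perm_sign: "p permutes {0..<(m::nat)} \<Longrightarrow> permutation p"
  by (rule permutes_imp_permutation[of "{0..<m}"]) simp

lemma cg_reindex:
  assumes q: "q \<in> column_group nu t"
  shows "(\<Sum>c\<in>column_group nu t. f c) = (\<Sum>c\<in>column_group nu t. f (q \<circ> c))"
proof (rule sum.reindex_bij_witness[where i = "\<lambda>c. q \<circ> c" and j = "\<lambda>c. inv q \<circ> c"])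
  have qp: "q permutes {0..<sum_mset nu}" by (rule cg_perm[OF q])
  fix c :: "nat \<Rightarrow> nat"
  show "q \<circ> (inv q \<circ> c) = c" using permutes_inv_o(1)[OF qp] by (simp add: comp_assoc[symmetric])
  show "inv q \<circ> (q \<circ> c) = c" using permutes_inv_o(2)[OF qp] by (simp add: comp_assoc[symmetric])
  assume "c \<in> column_group nu t"
  then show "inv q \<circ> c \<in> column_group nu t" "q \<circ> c \<in> column_group nu t"
    using cg_comp cg_inv q by blast+
qed (use permutes_inv_o(1)[OF cg_perm[OF q]] in \<open>simp add: comp_assoc[symmetric]\<close>)

lemma polytab_act_cg:
  assumes t: "t \<in> tableaux nu" and c: "c \<in> column_group nu t"
  shows "act_tab c (polytabloid nu t) = (\<lambda>T. of_int (sign c) * polytabloid nu t T)"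
proof
  fix T
  let ?G = "column_group nu t"
  have cp: "c permutes {0..<sum_mset nu}" by (rule cg_perm[OF c])
  have "act_tab c (polytabloid nu t) T = (\<Sum>p\<in>?G. of_int (sign p) * (if T \<circ> c = tabloid_of nu t p then 1 else 0))"
    unfolding act_tab_def polytabloid_def by simp
  also have "\<dots> = (\<Sum>p\<in>?G. of_int (sign (p \<circ> c)) * (if T \<circ> c = tabloid_of nu t (p \<circ> c) then 1 else 0))"
  proof (rule sum.reindex_bij_witness[where j = "\<lambda>p. p \<circ> inv c" and i = "\<lambda>p. p \<circ> c"])
    fix p :: "nat \<Rightarrow> nat"
    show "p \<circ> c \<circ> inv c = p" using permutes_inv_o(1)[OF cp] by (simp add: comp_assoc)
    show "p \<circ> inv c \<circ> c = p" using permutes_inv_o(2)[OF cp] by (simp add: comp_assoc)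
    assume "p \<in> ?G"
    then show "p \<circ> c \<in> ?G" "p \<circ> inv c \<in> ?G" using cg_comp cg_inv c by blast+
  qed (use permutes_inv_o(2)[OF cp] in \<open>simp add: comp_assoc\<close>)
  also have "\<dots> = (\<Sum>p\<in>?G. of_int (sign c) * (of_int (sign p) * (if T = tabloid_of nu t p then 1 else 0)))"
  proof (rule sum.cong[OF refl])
    fix p assume p: "p \<in> ?G"
    have "sign (p \<circ> c) = sign p * sign c"
      using sign_compose[OF perm_sign[OF cg_perm[OF p]] perm_sign[OF cp]] .
    moreover have "T \<circ> c = tabloid_of nu t (p \<circ> c) \<longleftrightarrow> T = tabloid_of nu t p"
    proof
      assume "T \<circ> c = tabloid_of nu t (p \<circ> c)"
      then have "T \<circ> c = tabloid_of nu t p \<circ> c" using tab_comp[OF cp] by simp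
      then have "T \<circ> c \<circ> inv c = tabloid_of nu t p \<circ> c \<circ> inv c" by simp
      then show "T = tabloid_of nu t p" using permutes_inv_o(1)[OF cp] by (simp add: comp_assoc)
    next
      assume "T = tabloid_of nu t p"
      then show "T \<circ> c = tabloid_of nu t (p \<circ> c)" using tab_comp[OF cp] by simp
    qed
    ultimately show "of_int (sign (p \<circ> c)) * (if T \<circ> c = tabloid_of nu t (p \<circ> c) then 1 else 0) =
         of_int (sign c) * (of_int (sign p) * (if T = tabloid_of nu t p then 1 else (0::complex)))"
      by simp
  qed
  also have "\<dots> = of_int (sign c) * polytabloid nu t T"
    unfolding polytabloid_def by (simp add: sum_distrib_left)
  finally show "act_tab c (polytabloid nu t) T = of_int (sign c) * polytabloid nu t T" .
qed

lemma cg_cong: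
  assumes "\<forall>x < sum_mset nu. t x = t' x"
  shows "column_group nu t = column_group nu t'"
proof -
  have "p permutes {0..<sum_mset nu} \<Longrightarrow> x < sum_mset nu \<Longrightarrow> t (p x) = t' (p x) \<and> t x = t' x" for p x
    using assms perm_lt by blast
  then show ?thesis unfolding column_group_def by auto
qed

lemma polytab_cong:
  assumes "\<forall>x < sum_mset nu. t x = t' x"
  shows "polytabloid nu t = polytabloid nu t'"
proof -
  have "tabloid_of nu t p = tabloid_of nu t' p" if "p permutes {0..<sum_mset nu}" for p
    using assms perm_lt[OF that] unfolding tabloid_of_def by (auto simp: fun_eq_iff)
  then show ?thesis unfolding polytabloid_def cg_cong[OF assms, symmetric]
    using cg_perm by (auto intro!: sum.cong simp: fun_eq_iff)
qed

lemma tableau_conj: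
  assumes t: "t \<in> tableaux nu" and s: "s permutes {0..<sum_mset nu}"
  shows "t \<circ> inv s \<in> tableaux nu"
proof -
  have "bij_betw (inv s) {0..<sum_mset nu} {0..<sum_mset nu}"
    using permutes_imp_bij[OF permutes_inv[OF s]] .
  moreover have "bij_betw t {0..<sum_mset nu} (cells nu)" using t unfolding tableaux_def by simp
  ultimately show ?thesis unfolding tableaux_def using bij_betw_trans by blast
qed

lemma tab_conj:
  assumes s: "s permutes {0..<sum_mset nu}"
  shows "tabloid_of nu (t \<circ> inv s) (s \<circ> p \<circ> inv s) = tabloid_of nu t p \<circ> inv s"
proof
  fix x
  have "inv s x < sum_mset nu \<longleftrightarrow> x < sum_mset nu" using perm_lt_iff[OF permutes_inv[OF s]] .
  moreover have "inv s (s y) = y" for y using permutes_inverses(2)[OF s] .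
  ultimately show "tabloid_of nu (t \<circ> inv s) (s \<circ> p \<circ> inv s) x = (tabloid_of nu t p \<circ> inv s) x"
    unfolding tabloid_of_def by simp
qed

lemma cg_conj:
  assumes s: "s permutes {0..<sum_mset nu}" and p: "p \<in> column_group nu t"
  shows "s \<circ> p \<circ> inv s \<in> column_group nu (t \<circ> inv s)"
proof -
  have "(s \<circ> p) \<circ> inv s permutes {0..<sum_mset nu}"
    using permutes_compose[OF permutes_inv[OF s] permutes_compose[OF cg_perm[OF p] s]] .
  moreover have "snd (t (inv s (s (p (inv s x))))) = snd (t (inv s x))" if "x < sum_mset nu" for x
    using permutes_inverses(2)[OF s] cg_col[OF p perm_lt[OF permutes_inv[OF s] that]] by simp
  ultimately show ?thesis unfolding column_group_def by (simp add: comp_assoc)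
qed

lemma polytab_act:
  assumes t: "t \<in> tableaux nu" and s: "s permutes {0..<sum_mset nu}"
  shows "act_tab s (polytabloid nu t) = polytabloid nu (t \<circ> inv s)"
proof
  fix T
  let ?t' = "t \<circ> inv s"
  have inv1: "inv s \<circ> s = id" and inv2: "s \<circ> inv s = id" using permutes_inv_o[OF s] by auto
  have "act_tab s (polytabloid nu t) T =
    (\<Sum>p\<in>column_group nu t. of_int (sign p) * (if T \<circ> s = tabloid_of nu t p then 1 else 0))"
    unfolding act_tab_def polytabloid_def by simp
  also have "\<dots> = (\<Sum>p\<in>column_group nu ?t'. of_int (sign p) * (if T = tabloid_of nu ?t' p then 1 else 0))"
  proof (rule sum.reindex_bij_witness[where j = "\<lambda>p. s \<circ> p \<circ> inv s" and i = "\<lambda>p. inv s \<circ> p \<circ> s"])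
    fix p :: "nat \<Rightarrow> nat"
    show "inv s \<circ> (s \<circ> p \<circ> inv s) \<circ> s = p" using permutes_inverses[OF s] by (simp add: fun_eq_iff)
    show "s \<circ> (inv s \<circ> p \<circ> s) \<circ> inv s = p" using permutes_inverses[OF s] by (simp add: fun_eq_iff)
  next
    fix p assume p: "p \<in> column_group nu t"
    show "s \<circ> p \<circ> inv s \<in> column_group nu ?t'" by (rule cg_conj[OF s p])
    have pp: "permutation p" using perm_sign[OF cg_perm[OF p]] .
    have ps: "permutation s" "permutation (inv s)" using perm_sign[OF s] perm_sign[OF permutes_inv[OF s]] by auto
    have "sign (s \<circ> p \<circ> inv s) = sign s * sign p * sign (inv s)"
      using sign_compose[OF permutation_compose[OF ps(1) pp] ps(2)] sign_compose[OF ps(1) pp] by simp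
    also have "\<dots> = sign p" using sign_inverse[OF ps(1)] by (simp add: mult.commute mult.left_commute)
    finally have sg: "sign (s \<circ> p \<circ> inv s) = sign p" .
    have "T = tabloid_of nu t p \<circ> inv s \<longleftrightarrow> T \<circ> s = tabloid_of nu t p"
    proof
      assume "T = tabloid_of nu t p \<circ> inv s"
      then show "T \<circ> s = tabloid_of nu t p" using inv1 by (simp add: comp_assoc)
    next
      assume "T \<circ> s = tabloid_of nu t p"
      then have "T \<circ> s \<circ> inv s = tabloid_of nu t p \<circ> inv s" by simp
      then show "T = tabloid_of nu t p \<circ> inv s" using inv2 by (simp add: comp_assoc)
    qed
    then show "of_int (sign (s \<circ> p \<circ> inv s)) * (if T = tabloid_of nu ?t' (s \<circ> p \<circ> inv s) then 1 else 0) =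
          of_int (sign p) * (if T \<circ> s = tabloid_of nu t p then 1 else (0::complex))"
      using sg tab_conj[OF s, of t p] by simp
  next
    fix p assume p: "p \<in> column_group nu ?t'"
    have "inv s \<circ> p \<circ> inv (inv s) \<in> column_group nu (?t' \<circ> inv (inv s))"
      by (rule cg_conj[OF permutes_inv[OF s] p])
    moreover have "inv (inv s) = s" using permutes_inv_inv[OF s] .
    moreover have "?t' \<circ> s = t" using inv1 by (simp add: comp_assoc)
    ultimately show "inv s \<circ> p \<circ> s \<in> column_group nu t" by simp
  qed
  also have "\<dots> = polytabloid nu ?t' T" unfolding polytabloid_def by simp
  finally show "act_tab s (polytabloid nu t) T = polytabloid nu ?t' T" .
qed

lemma tableau_trans:
  assumes t: "t \<in> tableaux nu" and t0: "t0 \<in> tableaux nu"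
  shows "\<exists>s. s permutes {0..<sum_mset nu} \<and> polytabloid nu t = act_tab s (polytabloid nu t0)"
proof -
  let ?m = "sum_mset nu"
  define s where "s x = (if x < ?m then inv_into {0..<?m} t (t0 x) else x)" for x
  have sx: "s x < ?m \<and> t (s x) = t0 x" if "x < ?m" for x
    using tab_inv[OF t tab_cell[OF t0 that]] that unfolding s_def by simp
  have injs: "inj_on s {0..<?m}"
  proof (rule inj_onI)
    fix x y assume "x \<in> {0..<?m}" "y \<in> {0..<?m}" "s x = s y"
    then have "t0 x = t0 y" "x < ?m" "y < ?m" using sx[of x] sx[of y] by auto
    then show "x = y" using tab_inj[OF t0] by blast
  qed
  have "s ` {0..<?m} \<subseteq> {0..<?m}" using sx by auto
  then have "s ` {0..<?m} = {0..<?m}" using endo_inj_surj[of "{0..<?m}" s] injs by blast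
  then have "bij_betw s {0..<?m} {0..<?m}" using injs by (simp add: bij_betw_def)
  moreover have "\<And>x. x \<notin> {0..<?m} \<Longrightarrow> s x = x" unfolding s_def by simp
  ultimately have sp: "s permutes {0..<?m}" by (rule bij_imp_permutes)
  have "\<forall>x<?m. t x = (t0 \<circ> inv s) x"
  proof (intro allI impI)
    fix x assume x: "x < ?m"
    have "inv s x < ?m" using perm_lt[OF permutes_inv[OF sp] x] .
    moreover have "s (inv s x) = x" using permutes_inverses(1)[OF sp] by simp
    ultimately show "t x = (t0 \<circ> inv s) x" using sx[of "inv s x"] by simp
  qed
  then have "polytabloid nu t = polytabloid nu (t0 \<circ> inv s)" by (rule polytab_cong)
  also have "\<dots> = act_tab s (polytabloid nu t0)" using polytab_act[OF t0 sp] by simp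
  finally show ?thesis using sp by blast
qed

definition kappa :: "nat multiset \<Rightarrow> (nat \<Rightarrow> nat \<times> nat) \<Rightarrow> ((nat \<Rightarrow> nat) \<Rightarrow> complex) \<Rightarrow> ((nat \<Rightarrow> nat) \<Rightarrow> complex)" where
  "kappa nu t v = (\<lambda>T. \<Sum>c\<in>column_group nu t. of_int (sign c) * act_tab c v T)"

lemma kappa_e:
  assumes t: "t \<in> tableaux nu"
  shows "kappa nu t (polytabloid nu t) = (\<lambda>T. of_nat (card (column_group nu t)) * polytabloid nu t T)"
proof
  fix T
  have "kappa nu t (polytabloid nu t) T = (\<Sum>c\<in>column_group nu t. polytabloid nu t T)"
  proof -
    have "of_int (sign c) * act_tab c (polytabloid nu t) T = polytabloid nu t T" if c: "c \<in> column_group nu t" for c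
    proof -
      have h: "(of_int (sign c) :: complex) * of_int (sign c) = 1"
      proof -
        have "(of_int (sign c * sign c) :: complex) = 1" by simp
        then show ?thesis by (simp only: of_int_mult)
      qed
      have "of_int (sign c) * act_tab c (polytabloid nu t) T = (of_int (sign c) * of_int (sign c)) * polytabloid nu t T"
        using polytab_act_cg[OF t c] by (simp add: mult.assoc)
      then show ?thesis using h by simp
    qed
    then show ?thesis unfolding kappa_def by simp
  qed
  then show "kappa nu t (polytabloid nu t) T = of_nat (card (column_group nu t)) * polytabloid nu t T" by simp
qed

lemma polytab_at:
  assumes t: "t \<in> tableaux nu" and p: "p \<in> column_group nu t"
  shows "polytabloid nu t (tabloid_of nu t p) = of_int (sign p)"
proof -
  have "polytabloid nu t (tabloid_of nu t p) =
      (\<Sum>q\<in>column_group nu t. if q = p then of_int (sign p) else 0)"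
    unfolding polytabloid_def
  proof (rule sum.cong[OF refl])
    fix q assume q: "q \<in> column_group nu t"
    have "tabloid_of nu t p = tabloid_of nu t q \<longleftrightarrow> q = p"
      using tab_inj_cg[OF t p q] by blast
    then show "of_int (sign q) * (if tabloid_of nu t p = tabloid_of nu t q then 1 else 0) = (if q = p then of_int (sign p) else (0::complex))"
      by auto
  qed
  also have "\<dots> = of_int (sign p)" using p cg_finite[of nu t] by simp
  finally show ?thesis .
qed

lemma polytab_off:
  assumes "\<not> (\<exists>p\<in>column_group nu t. T = tabloid_of nu t p)"
  shows "polytabloid nu t T = 0"
  using assms unfolding polytabloid_def by (auto intro!: sum.neutral)

lemma kappa_scalar:
  assumes t: "t \<in> tableaux nu" and w: "\<And>T. w T \<noteq> 0 \<Longrightarrow> shape_ok nu T"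
  shows "kappa nu t w = (\<lambda>T. kappa nu t w (tabloid_of nu t id) * polytabloid nu t T)"
proof
  fix T
  let ?G = "column_group nu t"
  let ?m = "sum_mset nu"
  have k0: "kappa nu t w (tabloid_of nu t id) = (\<Sum>c\<in>?G. of_int (sign c) * w (tabloid_of nu t c))"
    unfolding kappa_def act_tab_def using tab_comp[OF cg_perm, of _ nu t t id] by simp
  show "kappa nu t w T = kappa nu t w (tabloid_of nu t id) * polytabloid nu t T"
  proof (cases "\<exists>p\<in>?G. T = tabloid_of nu t p")
    case True
    then obtain p where p: "p \<in> ?G" and T: "T = tabloid_of nu t p" by blast
    have pp: "p permutes {0..<?m}" by (rule cg_perm[OF p])
    have "kappa nu t w T = (\<Sum>c\<in>?G. of_int (sign c) * w (tabloid_of nu t (p \<circ> c)))"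
      unfolding kappa_def act_tab_def T using tab_comp[OF cg_perm, of _ nu t t p] by simp
    also have "\<dots> = (\<Sum>c\<in>?G. of_int (sign (inv p \<circ> c)) * w (tabloid_of nu t (p \<circ> (inv p \<circ> c))))"
      by (rule cg_reindex[OF cg_inv[OF p]])
    also have "\<dots> = (\<Sum>c\<in>?G. of_int (sign p) * (of_int (sign c) * w (tabloid_of nu t c)))"
    proof (rule sum.cong[OF refl])
      fix c assume c: "c \<in> ?G"
      have "p \<circ> (inv p \<circ> c) = c" using permutes_inv_o(1)[OF pp] by (simp add: comp_assoc[symmetric])
      moreover have "sign (inv p \<circ> c) = sign p * sign c"
        using sign_compose[OF perm_sign[OF permutes_inv[OF pp]] perm_sign[OF cg_perm[OF c]]]
          sign_inverse[OF perm_sign[OF pp]] by simp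
      ultimately show "of_int (sign (inv p \<circ> c)) * w (tabloid_of nu t (p \<circ> (inv p \<circ> c))) =
          of_int (sign p) * (of_int (sign c) * w (tabloid_of nu t c))" by simp
    qed
    also have "\<dots> = of_int (sign p) * kappa nu t w (tabloid_of nu t id)"
      unfolding k0 by (simp add: sum_distrib_left)
    finally show ?thesis using polytab_at[OF t p] T by simp
  next
    case False
    then have e0: "polytabloid nu t T = 0" by (rule polytab_off)
    have "kappa nu t w T = 0"
    proof (cases "shape_ok nu T")
      case False
      have "w (T \<circ> c) = 0" if c: "c \<in> ?G" for c
      proof (rule ccontr)
        assume "w (T \<circ> c) \<noteq> 0"
        then have "shape_ok nu (T \<circ> c)" by (rule w)
        then have "shape_ok nu (T \<circ> c \<circ> inv c)" by (rule shape_comp[OF _ permutes_inv[OF cg_perm[OF c]]])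
        then show False using False permutes_inv_o(1)[OF cg_perm[OF c]] by (simp add: comp_assoc)
      qed
      then show ?thesis unfolding kappa_def act_tab_def by simp
    next
      case True
      obtain x y where xy: "x < ?m" "y < ?m" "snd (t x) = snd (t y)" "T x = T y" "x \<noteq> y"
        using dominance_perm[OF t True] False by blast
      let ?tau = "transpose x y"
      have tau: "?tau \<in> ?G" by (rule cg_swap[OF xy(1) xy(2) xy(3)])
      have Ttau: "T \<circ> ?tau = T"
      proof
        fix z show "(T \<circ> ?tau) z = T z" using xy(4) by (simp add: transpose_def)
      qed
      define S where "S = (\<Sum>c\<in>?G. of_int (sign c) * w (T \<circ> c))"
      have "S = (\<Sum>c\<in>?G. of_int (sign (?tau \<circ> c)) * w (T \<circ> (?tau \<circ> c)))"
        unfolding S_def by (rule cg_reindex[OF tau])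
      also have "\<dots> = (\<Sum>c\<in>?G. - (of_int (sign c) * w (T \<circ> c)))"
      proof (rule sum.cong[OF refl])
        fix c assume c: "c \<in> ?G"
        have "sign (?tau \<circ> c) = - sign c"
          using sign_compose[OF perm_sign[OF cg_perm[OF tau]] perm_sign[OF cg_perm[OF c]]]
            sign_swap_id[of x y] xy(5) by simp
        moreover have "T \<circ> (?tau \<circ> c) = T \<circ> c" using Ttau by (simp add: comp_assoc[symmetric])
        ultimately show "of_int (sign (?tau \<circ> c)) * w (T \<circ> (?tau \<circ> c)) = - (of_int (sign c) * w (T \<circ> c))"
          by simp
      qed
      also have "\<dots> = - S" unfolding S_def by (simp add: sum_negf)
      finally have "S = 0" by simp
      then show ?thesis unfolding kappa_def act_tab_def S_def by simp
    qed
    then show ?thesis using e0 by simp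
  qed
qed

lemma specht_form: "v \<in> specht nu \<Longrightarrow> \<exists>F c. finite F \<and> F \<subseteq> tableaux nu \<and> v = (\<lambda>T. \<Sum>t\<in>F. c t * polytabloid nu t T)"
  unfolding specht_def by blast

lemma act_tab_specht: "s permutes {0..<sum_mset nu} \<Longrightarrow> v \<in> specht nu \<Longrightarrow> act_tab s v \<in> specht nu"
proof -
  assume s: "s permutes {0..<sum_mset nu}" and v: "v \<in> specht nu"
  obtain F c where F: "finite F" "F \<subseteq> tableaux nu" and v': "v = (\<lambda>T. \<Sum>t\<in>F. c t * polytabloid nu t T)"
    using specht_form[OF v] by blast
  have "act_tab s v = (\<lambda>T. \<Sum>t\<in>F. c t * act_tab s (polytabloid nu t) T)"
    unfolding v' act_tab_def by simp
  also have "\<dots> = (\<lambda>T. \<Sum>t\<in>F. c t * polytabloid nu (t \<circ> inv s) T)"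
  proof (rule ext, rule sum.cong[OF refl])
    fix T t assume "t \<in> F"
    then have "t \<in> tableaux nu" using F by blast
    then show "c t * act_tab s (polytabloid nu t) T = c t * polytabloid nu (t \<circ> inv s) T"
      using polytab_act[OF _ s] by simp
  qed
  finally have eq: "act_tab s v = (\<lambda>T. \<Sum>t\<in>F. c t * polytabloid nu (t \<circ> inv s) T)" .
  have "\<forall>t\<in>F. polytabloid nu (t \<circ> inv s) \<in> specht nu"
    using F tableau_conj[OF _ s] polytab_in by blast
  then show ?thesis unfolding eq by (rule lin_sum_mem[OF specht_lin F(1)])
qed

theorem schur_specht:
  assumes into: "\<And>v. v \<in> specht nu \<Longrightarrow> \<phi> v \<in> specht nu"
    and lin: "lin_on (specht nu) \<phi>"
    and eqv: "\<And>s v. s permutes {0..<sum_mset nu} \<Longrightarrow> v \<in> specht nu \<Longrightarrow> \<phi> (act_tab s v) = act_tab s (\<phi> v)"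
  shows "\<exists>c. \<forall>v\<in>specht nu. \<phi> v = (\<lambda>T. c * v T)"
proof -
  obtain t0 where t0: "t0 \<in> tableaux nu" using tableaux_exist by blast
  let ?e = "polytabloid nu t0"
  let ?G = "column_group nu t0"
  have e: "?e \<in> specht nu" by (rule polytab_in[OF t0])
  have acte: "\<forall>c\<in>?G. act_tab c ?e \<in> specht nu" using act_tab_specht[OF cg_perm e] by blast
  have k1: "\<phi> (kappa nu t0 ?e) = kappa nu t0 (\<phi> ?e)"
  proof -
    have "\<phi> (kappa nu t0 ?e) = (\<lambda>T. \<Sum>c\<in>?G. of_int (sign c) * \<phi> (act_tab c ?e) T)"
      unfolding kappa_def using lin_sum[OF specht_lin lin cg_finite acte, of "\<lambda>c. of_int (sign c)"] by blast
    also have "\<dots> = kappa nu t0 (\<phi> ?e)" unfolding kappa_def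
      using eqv[OF cg_perm e] by (auto intro!: sum.cong)
    finally show ?thesis .
  qed
  define K where "K = kappa nu t0 (\<phi> ?e) (tabloid_of nu t0 id)"
  have k3: "kappa nu t0 (\<phi> ?e) = (\<lambda>T. K * ?e T)"
    unfolding K_def by (rule kappa_scalar[OF t0 specht_support[OF into[OF e]]])
  define N where "N = (of_nat (card ?G) :: complex)"
  have N0: "N \<noteq> 0" unfolding N_def using cg_nonempty_card[of nu t0] by simp
  have "\<phi> (\<lambda>T. N * ?e T) = (\<lambda>T. N * \<phi> ?e T)" by (rule lin_on_smult[OF lin e])
  then have "(\<lambda>T. N * \<phi> ?e T) = (\<lambda>T. K * ?e T)" using k1 k3 kappa_e[OF t0] unfolding N_def by simp
  then have phie: "\<phi> ?e = (\<lambda>T. (K / N) * ?e T)" using N0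
    by (auto simp: fun_eq_iff field_simps)
  define c where "c = K / N"
  have phit: "\<phi> (polytabloid nu t) = (\<lambda>T. c * polytabloid nu t T)" if t: "t \<in> tableaux nu" for t
  proof -
    obtain s where s: "s permutes {0..<sum_mset nu}" and et: "polytabloid nu t = act_tab s ?e"
      using tableau_trans[OF t t0] by blast
    have "\<phi> (polytabloid nu t) = act_tab s (\<phi> ?e)" unfolding et by (rule eqv[OF s e])
    also have "\<dots> = (\<lambda>T. c * act_tab s ?e T)" unfolding phie c_def act_tab_def by simp
    finally show ?thesis unfolding et .
  qed
  have "\<phi> v = (\<lambda>T. c * v T)" if v: "v \<in> specht nu" for v
  proof -
    obtain F a where F: "finite F" "F \<subseteq> tableaux nu" and v': "v = (\<lambda>T. \<Sum>t\<in>F. a t * polytabloid nu t T)"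
      using specht_form[OF v] by blast
    have "\<forall>t\<in>F. polytabloid nu t \<in> specht nu" using F polytab_in by blast
    then have "\<phi> v = (\<lambda>T. \<Sum>t\<in>F. a t * \<phi> (polytabloid nu t) T)"
      unfolding v' using lin_sum[OF specht_lin lin F(1)] by blast
    also have "\<dots> = (\<lambda>T. \<Sum>t\<in>F. a t * (c * polytabloid nu t T))"
    proof (rule ext, rule sum.cong[OF refl])
      fix T t assume "t \<in> F"
      then have "t \<in> tableaux nu" using F by blast
      then show "a t * \<phi> (polytabloid nu t) T = a t * (c * polytabloid nu t T)" using phit by simp
    qed
    also have "\<dots> = (\<lambda>T. c * v T)" unfolding v' by (simp add: sum_distrib_left mult.left_commute)
    finally show ?thesis .
  qed
  then show ?thesis by blast
qed

definition pa :: "nat set set \<Rightarrow> nat \<Rightarrow> nat" where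
  "pa A x = (if \<exists>y. y \<noteq> x \<and> {x, y} \<in> A then (THE y. y \<noteq> x \<and> {x, y} \<in> A) else x)"

definition img :: "(nat \<Rightarrow> nat) \<Rightarrow> nat set set \<Rightarrow> nat set set" where
  "img g A = (\<lambda>e. g ` e) ` A"

lemma matchD1: "A \<in> matchings n \<Longrightarrow> e \<in> A \<Longrightarrow> \<exists>i j. e = {i, j} \<and> i \<noteq> j \<and> i < 2 * n \<and> j < 2 * n"
  unfolding matchings_def by blast

lemma matchD2: "A \<in> matchings n \<Longrightarrow> x < 2 * n \<Longrightarrow> \<exists>!e. e \<in> A \<and> x \<in> e"
  unfolding matchings_def by blast

lemma match_edge_unique:
  assumes A: "A \<in> matchings n" and "{x, y} \<in> A" "{x, z} \<in> A" "y \<noteq> x" "z \<noteq> x"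
  shows "y = z"
proof -
  obtain i j where "{x, y} = {i, j}" "i \<noteq> j" "i < 2 * n" "j < 2 * n" using matchD1[OF A assms(2)] by blast
  then have x: "x < 2 * n" by (auto simp: doubleton_eq_iff)
  have "{x, y} = {x, z}" using matchD2[OF A x] assms(2,3) by blast
  then show ?thesis using assms(4,5) by (auto simp: doubleton_eq_iff)
qed

lemma pa_props:
  assumes A: "A \<in> matchings n" and x: "x < 2 * n"
  shows "pa A x \<noteq> x" "{x, pa A x} \<in> A" "pa A x < 2 * n"
proof -
  obtain e where e: "e \<in> A" "x \<in> e" using matchD2[OF A x] by blast
  obtain i j where ij: "e = {i, j}" "i \<noteq> j" "i < 2 * n" "j < 2 * n" using matchD1[OF A e(1)] by blast
  obtain y where y: "y \<noteq> x" "{x, y} \<in> A" "y < 2 * n"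
  proof (cases "x = i")
    case True then show ?thesis using that[of j] ij e by auto
  next
    case False then have "x = j" using ij e by auto
    then show ?thesis using that[of i] ij e by (auto simp: insert_commute)
  qed
  have ex: "\<exists>y. y \<noteq> x \<and> {x, y} \<in> A" using y by blast
  have the: "(THE y. y \<noteq> x \<and> {x, y} \<in> A) = y"
    by (rule the_equality) (use y match_edge_unique[OF A] in blast)+
  show "pa A x \<noteq> x" "{x, pa A x} \<in> A" "pa A x < 2 * n" unfolding pa_def using ex the y by auto
qed

lemma pa_eqI:
  assumes A: "A \<in> matchings n" and "{x, y} \<in> A" 
  shows "pa A x = y"
proof -
  obtain i j where "{x, y} = {i, j}" "i \<noteq> j" "i < 2 * n" "j < 2 * n" using matchD1[OF A assms(2)] by blast
  then have x: "x < 2 * n" and yx: "y \<noteq> x" by (auto simp: doubleton_eq_iff)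
  show ?thesis using match_edge_unique[OF A pa_props(2)[OF A x] assms(2) pa_props(1)[OF A x] yx] .
qed

lemma pa_out:
  assumes A: "A \<in> matchings n" and x: "\<not> x < 2 * n"
  shows "pa A x = x"
proof -
  have "\<not> (\<exists>y. y \<noteq> x \<and> {x, y} \<in> A)"
  proof
    assume "\<exists>y. y \<noteq> x \<and> {x, y} \<in> A"
    then obtain y where "{x, y} \<in> A" by blast
    then obtain i j where "{x, y} = {i, j}" "i < 2 * n" "j < 2 * n" using matchD1[OF A] by blast
    then show False using x by (auto simp: doubleton_eq_iff)
  qed
  then show ?thesis unfolding pa_def by (simp only: if_False)
qed

lemma pa_pa: assumes A: "A \<in> matchings n" shows "pa A (pa A x) = x"
proof (cases "x < 2 * n")
  case True
  have "{pa A x, x} \<in> A" using pa_props(2)[OF A True] by (simp add: insert_commute)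
  then show ?thesis by (rule pa_eqI[OF A])
next
  case False then show ?thesis using pa_out[OF A] by simp
qed

lemma match_edge_form:
  assumes A: "A \<in> matchings n" and e: "e \<in> A"
  shows "\<exists>x < 2 * n. e = {x, pa A x}"
proof -
  obtain i j where ij: "e = {i, j}" "i \<noteq> j" "i < 2 * n" "j < 2 * n" using matchD1[OF A e] by blast
  have "pa A i = j" using pa_eqI[OF A] e ij by simp
  then show ?thesis using ij by blast
qed

lemma match_eq:
  assumes A: "A \<in> matchings n" and B: "B \<in> matchings n" and eq: "\<And>x. x < 2 * n \<Longrightarrow> pa A x = pa B x"
  shows "A = B"
proof -
  have "A \<subseteq> B" if A: "A \<in> matchings n" and B: "B \<in> matchings n" and eq: "\<And>x. x < 2 * n \<Longrightarrow> pa A x = pa B x" for A B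
  proof
    fix e assume "e \<in> A"
    then obtain x where "x < 2 * n" "e = {x, pa A x}" using match_edge_form[OF A] by blast
    then show "e \<in> B" using pa_props(2)[OF B] eq by simp
  qed
  then show ?thesis using assms by (metis order_antisym)
qed

lemma pa_permutes: assumes A: "A \<in> matchings n" shows "pa A permutes {0..<2 * n}"
proof -
  have "bij_betw (pa A) {0..<2 * n} {0..<2 * n}"
  proof (rule bij_betw_byWitness[where f' = "pa A"])
    show "\<forall>a\<in>{0..<2 * n}. pa A (pa A a) = a" "\<forall>a\<in>{0..<2 * n}. pa A (pa A a) = a" using pa_pa[OF A] by auto
    show "pa A ` {0..<2 * n} \<subseteq> {0..<2 * n}" "pa A ` {0..<2 * n} \<subseteq> {0..<2 * n}" using pa_props(3)[OF A] by auto
  qed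
  moreover have "\<And>x. x \<notin> {0..<2 * n} \<Longrightarrow> pa A x = x" using pa_out[OF A] by simp
  ultimately show ?thesis by (rule bij_imp_permutes)
qed

lemma img_match:
  assumes A: "A \<in> matchings n" and g: "g permutes {0..<2 * n}"
  shows "img g A \<in> matchings n"
  unfolding matchings_def
proof (intro CollectI conjI ballI allI impI)
  fix e assume "e \<in> img g A"
  then obtain e0 where e0: "e0 \<in> A" "e = g ` e0" unfolding img_def by blast
  obtain i j where ij: "e0 = {i, j}" "i \<noteq> j" "i < 2 * n" "j < 2 * n" using matchD1[OF A e0(1)] by blast
  have "g i \<noteq> g j" using ij(2) permutes_inj[OF g] by (simp add: inj_eq)
  then show "\<exists>i j. e = {i, j} \<and> i \<noteq> j \<and> i < 2 * n \<and> j < 2 * n"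
    using e0 ij perm_lt[OF g] by auto
next
  fix x :: nat assume x: "x < 2 * n"
  define y where "y = inv g x"
  have y: "y < 2 * n" "g y = x" unfolding y_def using perm_lt[OF permutes_inv[OF g] x] permutes_inverses(1)[OF g] by auto
  obtain e0 where e0: "e0 \<in> A" "y \<in> e0" using matchD2[OF A y(1)] by blast
  show "\<exists>!e. e \<in> img g A \<and> x \<in> e"
  proof (rule ex1I[where a = "g ` e0"])
    show "g ` e0 \<in> img g A \<and> x \<in> g ` e0" unfolding img_def using e0 y by auto
  next
    fix e assume e: "e \<in> img g A \<and> x \<in> e"
    then obtain e1 where e1: "e1 \<in> A" "e = g ` e1" unfolding img_def by blast
    then obtain z where "z \<in> e1" "g z = x" using e by blast
    then have "z = y" using y permutes_inj[OF g] by (auto simp: inj_eq)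
    then have "e1 = e0" using matchD2[OF A y(1)] e0 e1 \<open>z \<in> e1\<close> by blast
    then show "e = g ` e0" using e1 by simp
  qed
qed

lemma pa_img:
  assumes A: "A \<in> matchings n" and g: "g permutes {0..<2 * n}" and x: "x < 2 * n"
  shows "pa (img g A) (g x) = g (pa A x)"
proof -
  have "{g x, g (pa A x)} \<in> img g A" unfolding img_def using pa_props(2)[OF A x]
    by (metis image_empty image_eqI image_insert)
  then show ?thesis by (rule pa_eqI[OF img_match[OF A g]])
qed

lemma img_eqI:
  assumes A: "A \<in> matchings n" and A': "A' \<in> matchings n" and g: "g permutes {0..<2 * n}"
    and h: "\<And>x. x < 2 * n \<Longrightarrow> g (pa A x) = pa A' (g x)"
  shows "img g A = A'"
proof (rule match_eq[OF img_match[OF A g] A'])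
  fix y assume y: "y < 2 * n"
  define x where "x = inv g y"
  have x: "x < 2 * n" "g x = y" unfolding x_def using perm_lt[OF permutes_inv[OF g] y] permutes_inverses(1)[OF g] by auto
  show "pa (img g A) y = pa A' y" using pa_img[OF A g x(1)] h[OF x(1)] x(2) by simp
qed

lemma finite_matchings: "finite (matchings n)"
proof -
  have "matchings n \<subseteq> Pow (Pow {0..<2 * n})"
    unfolding matchings_def by auto
  then show ?thesis by (rule finite_subset) simp
qed

definition fa :: "nat set set \<Rightarrow> nat set set \<Rightarrow> nat \<Rightarrow> nat \<Rightarrow> nat" where
  "fa A B i = (if even i then pa A else pa B)"

primrec walk :: "nat set set \<Rightarrow> nat set set \<Rightarrow> nat \<Rightarrow> nat \<Rightarrow> nat" where
  "walk A B v 0 = v"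
| "walk A B v (Suc i) = fa A B i (walk A B v i)"

context
  fixes n :: nat and A B :: "nat set set"
  assumes A: "A \<in> matchings n" and B: "B \<in> matchings n"
begin

lemma fa_inv: "fa A B i (fa A B i x) = x"
  unfolding fa_def using pa_pa[OF A] pa_pa[OF B] by simp

lemma fa_lt: "x < 2 * n \<Longrightarrow> fa A B i x < 2 * n"
  unfolding fa_def using pa_props(3)[OF A] pa_props(3)[OF B] by simp

lemma fa_nofix: "x < 2 * n \<Longrightarrow> fa A B i x \<noteq> x"
  unfolding fa_def using pa_props(1)[OF A] pa_props(1)[OF B] by simp

lemma fa_edge: "x < 2 * n \<Longrightarrow> {x, fa A B i x} \<in> A \<union> B"
  unfolding fa_def using pa_props(2)[OF A] pa_props(2)[OF B] by simp

lemma fa_par: "even i = even j \<Longrightarrow> fa A B i = fa A B j"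
  unfolding fa_def by simp

lemma walk_lt: "v < 2 * n \<Longrightarrow> walk A B v i < 2 * n"
  by (induction i) (simp_all add: fa_lt)

lemma walk_back: "walk A B v i = fa A B i (walk A B v (Suc i))"
  by (simp add: fa_inv)

lemma walk_shift:
  assumes "even a = even b" "walk A B v (a + c) = walk A B v (b + c)"
  shows "walk A B v a = walk A B v b"
  using assms(2)
proof (induction c)
  case 0 then show ?case by simp
next
  case (Suc c)
  have "walk A B v (a + c) = fa A B (a + c) (walk A B v (Suc (a + c)))" by (rule walk_back)
  also have "\<dots> = fa A B (b + c) (walk A B v (Suc (b + c)))"
  proof -
    have "fa A B (a + c) = fa A B (b + c)" by (rule fa_par) (use assms(1) in simp)
    moreover have "walk A B v (Suc (a + c)) = walk A B v (Suc (b + c))" using Suc.prems by simp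
    ultimately show ?thesis by simp
  qed
  also have "\<dots> = walk A B v (b + c)" by (rule walk_back[symmetric])
  finally show ?case by (rule Suc.IH)
qed

lemma walk_period_ex:
  assumes v: "v < 2 * n"
  shows "\<exists>k>0. walk A B v (2 * k) = v"
proof -
  let ?f = "\<lambda>j. walk A B v (2 * j)"
  have "?f ` {..2 * n} \<subseteq> {0..<2 * n}" using walk_lt[OF v] by auto
  then have "card (?f ` {..2 * n}) \<le> card {0..<2 * n}" by (rule card_mono[rotated]) simp
  then have "card (?f ` {..2 * n}) < card {..2 * n}" by simp
  then have "\<not> inj_on ?f {..2 * n}" by (rule pigeonhole)
  then obtain i j where ij: "i \<le> 2 * n" "j \<le> 2 * n" "i \<noteq> j" "?f i = ?f j" unfolding inj_on_def by blast
  obtain a b where ab: "a < b" "?f a = ?f b"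
  proof (cases "i < j")
    case True then show ?thesis using that ij by blast
  next
    case False then show ?thesis using that[of j i] ij by auto
  qed
  have "walk A B v (0 + 2 * a) = walk A B v (2 * (b - a) + 2 * a)" using ab by (simp add: algebra_simps)
  then have "walk A B v 0 = walk A B v (2 * (b - a))" by (rule walk_shift[rotated]) simp
  then show ?thesis using ab(1) by (intro exI[of _ "b - a"]) simp
qed

definition per :: "nat \<Rightarrow> nat" where
  "per v = (LEAST k. 0 < k \<and> walk A B v (2 * k) = v)"

lemma per_props:
  assumes v: "v < 2 * n"
  shows "0 < per v" "walk A B v (2 * per v) = v" "\<And>k. 0 < k \<Longrightarrow> k < per v \<Longrightarrow> walk A B v (2 * k) \<noteq> v"
proof -
  obtain k where k: "0 < k \<and> walk A B v (2 * k) = v" using walk_period_ex[OF v] by blast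
  have "0 < (LEAST k. 0 < k \<and> walk A B v (2 * k) = v) \<and> walk A B v (2 * (LEAST k. 0 < k \<and> walk A B v (2 * k) = v)) = v"
    by (rule LeastI[where P = "\<lambda>k. 0 < k \<and> walk A B v (2 * k) = v", OF k])
  then show "0 < per v" "walk A B v (2 * per v) = v" unfolding per_def by auto
  show "\<And>k. 0 < k \<Longrightarrow> k < per v \<Longrightarrow> walk A B v (2 * k) \<noteq> v"
    unfolding per_def using not_less_Least by blast
qed

lemma walk_periodic:
  assumes v: "v < 2 * n"
  shows "walk A B v (i + 2 * per v) = walk A B v i"
proof (induction i)
  case 0 then show ?case using per_props(2)[OF v] by simp
next
  case (Suc i)
  have "walk A B v (Suc i + 2 * per v) = fa A B (i + 2 * per v) (walk A B v (i + 2 * per v))" by simp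
  also have "\<dots> = fa A B i (walk A B v i)" using Suc fa_par[of "i + 2 * per v" i] by simp
  finally show ?case by simp
qed

lemma walk_periodic_mult:
  assumes v: "v < 2 * n"
  shows "walk A B v (i + q * (2 * per v)) = walk A B v i"
proof (induction q)
  case 0 then show ?case by simp
next
  case (Suc q)
  have "walk A B v (i + Suc q * (2 * per v)) = walk A B v ((i + q * (2 * per v)) + 2 * per v)"
    by (simp add: algebra_simps)
  also have "\<dots> = walk A B v (i + q * (2 * per v))" by (rule walk_periodic[OF v])
  finally show ?case using Suc by simp
qed

lemma walk_mod:
  assumes v: "v < 2 * n"
  shows "walk A B v i = walk A B v (i mod (2 * per v))"
proof -
  have "walk A B v (i mod (2 * per v) + (i div (2 * per v)) * (2 * per v)) = walk A B v (i mod (2 * per v))"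
    by (rule walk_periodic_mult[OF v])
  moreover have "i mod (2 * per v) + (i div (2 * per v)) * (2 * per v) = i" by (rule mod_div_mult_eq)
  ultimately show ?thesis by simp
qed

lemma walk_reflect:
  assumes "walk A B v a = walk A B v b" "odd (a + b)" "a + t \<le> b"
  shows "walk A B v (a + t) = walk A B v (b - t)"
  using assms(3)
proof (induction t)
  case 0 then show ?case using assms(1) by simp
next
  case (Suc t)
  then have IH: "walk A B v (a + t) = walk A B v (b - t)" by simp
  have bt: "b - t = Suc (b - Suc t)" using Suc.prems by simp
  have "walk A B v (a + Suc t) = fa A B (a + t) (walk A B v (a + t))" by simp
  also have "\<dots> = fa A B (b - Suc t) (walk A B v (Suc (b - Suc t)))"
  proof -
    have "even (a + t) = even (b - Suc t)" using assms(2) Suc.prems by presburger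
    then have "fa A B (a + t) = fa A B (b - Suc t)" by (rule fa_par)
    then show ?thesis using IH bt by simp
  qed
  also have "\<dots> = walk A B v (b - Suc t)" by (rule walk_back[symmetric])
  finally show ?case .
qed

lemma walk_inj:
  assumes v: "v < 2 * n"
  shows "inj_on (walk A B v) {0..<2 * per v}"
proof (rule inj_onI)
  have main: "a = b" if ab: "a \<le> b" "b < 2 * per v" "walk A B v a = walk A B v b" for a b
  proof (rule ccontr)
    assume "a \<noteq> b"
    then have lt: "a < b" using ab by simp
    show False
    proof (cases "even (b - a)")
      case True
      have "walk A B v (0 + a) = walk A B v ((b - a) + a)" using ab lt by simp
      then have "walk A B v 0 = walk A B v (b - a)" by (rule walk_shift[rotated]) (use True in simp)
      moreover obtain j where j: "b - a = 2 * j" using True by blast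
      ultimately have "walk A B v (2 * j) = v" by simp
      moreover have "0 < j" "j < per v" using j lt ab by auto
      ultimately show False using per_props(3)[OF v] by blast
    next
      case False
      then obtain j where j: "b - a = 2 * j + 1" by (metis oddE)
      have odd: "odd (a + b)" using False lt by (simp add: even_add even_diff_nat)
      have "walk A B v (a + j) = walk A B v (b - j)" by (rule walk_reflect[OF ab(3) odd]) (use j in simp)
      moreover have "b - j = Suc (a + j)" using j lt by simp
      ultimately have "walk A B v (Suc (a + j)) = walk A B v (a + j)" by simp
      then show False using fa_nofix[OF walk_lt[OF v]] by simp
    qed
  qed
  fix a b assume "a \<in> {0..<2 * per v}" "b \<in> {0..<2 * per v}" "walk A B v a = walk A B v b"
  then show "a = b" using main[of a b] main[of b a] by (cases "a \<le> b") auto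
qed

lemma walk_range:
  assumes v: "v < 2 * n"
  shows "range (walk A B v) = walk A B v ` {0..<2 * per v}"
proof
  show "range (walk A B v) \<subseteq> walk A B v ` {0..<2 * per v}"
  proof
    fix y assume "y \<in> range (walk A B v)"
    then obtain i where "y = walk A B v i" by blast
    then have "y = walk A B v (i mod (2 * per v))" using walk_mod[OF v] by simp
    moreover have "i mod (2 * per v) < 2 * per v" using per_props(1)[OF v] by simp
    ultimately show "y \<in> walk A B v ` {0..<2 * per v}" by auto
  qed
qed auto

lemma card_walk_range:
  assumes v: "v < 2 * n"
  shows "card (range (walk A B v)) = 2 * per v"
  using walk_range[OF v] card_image[OF walk_inj[OF v]] by simp

lemma walk_other:
  assumes v: "v < 2 * n"
  shows "fa A B (Suc i) (walk A B v i) = walk A B v (i + 2 * per v - 1)"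
proof -
  let ?j = "i + 2 * per v - 1"
  have j: "Suc ?j = i + 2 * per v" using per_props(1)[OF v] by simp
  have "walk A B v ?j = fa A B ?j (walk A B v (Suc ?j))" by (rule walk_back)
  also have "\<dots> = fa A B ?j (walk A B v i)" using j walk_periodic[OF v] by simp
  also have "fa A B ?j = fa A B (Suc i)" by (rule fa_par) (use per_props(1)[OF v] in \<open>auto simp: even_diff_nat\<close>)
  finally show ?thesis by simp
qed

lemma pa_walk:
  assumes v: "v < 2 * n"
  shows "pa A (walk A B v i) \<in> range (walk A B v)" "pa B (walk A B v i) \<in> range (walk A B v)"
proof -
  have "fa A B i (walk A B v i) \<in> range (walk A B v)" using walk.simps(2)[of A B v i, symmetric] by blast
  moreover have "fa A B (Suc i) (walk A B v i) \<in> range (walk A B v)" using walk_other[OF v] by simp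
  ultimately show "pa A (walk A B v i) \<in> range (walk A B v)" "pa B (walk A B v i) \<in> range (walk A B v)"
    unfolding fa_def by (cases "even i"; simp)+
qed

definition erel :: "nat set set \<Rightarrow> (nat \<times> nat) set" where
  "erel E = {(u, v). {u, v} \<in> E}"

lemma comp_of_erel: "comp_of E x = {y. (x, y) \<in> (erel E)\<^sup>*}"
  unfolding comp_of_def erel_def by simp

lemma erel_sym: "(x, y) \<in> (erel E)\<^sup>* \<Longrightarrow> (y, x) \<in> (erel E)\<^sup>*"
proof -
  have "(erel E)\<inverse> = erel E" unfolding erel_def by (auto simp: insert_commute)
  then have "((erel E)\<^sup>*)\<inverse> = (erel E)\<^sup>*" by (metis rtrancl_converse)
  then show "(x, y) \<in> (erel E)\<^sup>* \<Longrightarrow> (y, x) \<in> (erel E)\<^sup>*" by (metis converseI)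
qed

lemma erel_AB: "(u, w) \<in> erel (A \<union> B) \<Longrightarrow> w = pa A u \<or> w = pa B u"
  unfolding erel_def using pa_eqI[OF A] pa_eqI[OF B] by auto

lemma comp_walk:
  assumes v: "v < 2 * n"
  shows "comp_of (A \<union> B) v = range (walk A B v)"
proof
  show "comp_of (A \<union> B) v \<subseteq> range (walk A B v)"
  proof
    fix y assume "y \<in> comp_of (A \<union> B) v"
    then have "(v, y) \<in> (erel (A \<union> B))\<^sup>*" unfolding comp_of_erel by simp
    then show "y \<in> range (walk A B v)"
    proof (induction rule: rtrancl_induct)
      case base then show ?case using walk.simps(1)[of A B v, symmetric] by blast
    next
      case (step y z)
      then obtain i where "y = walk A B v i" by blast
      then show ?case using erel_AB[OF step(2)] pa_walk[OF v] by auto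
    qed
  qed
  show "range (walk A B v) \<subseteq> comp_of (A \<union> B) v"
  proof
    fix y assume "y \<in> range (walk A B v)"
    then obtain i where y: "y = walk A B v i" by blast
    have "(v, walk A B v i) \<in> (erel (A \<union> B))\<^sup>*"
    proof (induction i)
      case 0 then show ?case by simp
    next
      case (Suc i)
      have "(walk A B v i, walk A B v (Suc i)) \<in> erel (A \<union> B)"
        unfolding erel_def using fa_edge[OF walk_lt[OF v]] by simp
      with Suc show ?case by (rule rtrancl_into_rtrancl)
    qed
    then show "y \<in> comp_of (A \<union> B) v" unfolding comp_of_erel y by simp
  qed
qed

lemma comp_self: "v < 2 * n \<Longrightarrow> v \<in> comp_of (A \<union> B) v"
  unfolding comp_of_erel by simp

lemma comp_sub: "v < 2 * n \<Longrightarrow> comp_of (A \<union> B) v \<subseteq> {0..<2 * n}"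
  using comp_walk walk_lt by auto

lemma comp_card: "v < 2 * n \<Longrightarrow> card (comp_of (A \<union> B) v) = 2 * per v"
  using comp_walk card_walk_range by simp

lemma comp_finite: "v < 2 * n \<Longrightarrow> finite (comp_of (A \<union> B) v)"
  using comp_sub finite_subset by blast

lemma comp_eq: "y \<in> comp_of (A \<union> B) v \<Longrightarrow> comp_of (A \<union> B) y = comp_of (A \<union> B) v"
proof -
  assume y: "y \<in> comp_of (A \<union> B) v"
  then have vy: "(v, y) \<in> (erel (A \<union> B))\<^sup>*" unfolding comp_of_erel by simp
  then have yv: "(y, v) \<in> (erel (A \<union> B))\<^sup>*" by (rule erel_sym)
  show ?thesis unfolding comp_of_erel using vy yv by (auto intro: rtrancl_trans)
qed

definition comps :: "nat set set" where
  "comps = {comp_of (A \<union> B) x | x. x < 2 * n}"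

lemma dmatch_comps: "dmatch n A B = image_mset card (mset_set comps)"
  unfolding dmatch_def comps_def by simp

lemma finite_comps: "finite comps"
  unfolding comps_def by simp

lemma comps_disj: "C \<in> comps \<Longrightarrow> C' \<in> comps \<Longrightarrow> C \<inter> C' \<noteq> {} \<Longrightarrow> C = C'"
proof -
  assume "C \<in> comps" "C' \<in> comps" "C \<inter> C' \<noteq> {}"
  then obtain x y z where "C = comp_of (A \<union> B) x" "C' = comp_of (A \<union> B) y" "z \<in> C" "z \<in> C'"
    unfolding comps_def by blast
  then show "C = C'" using comp_eq[of z x] comp_eq[of z y] by simp
qed

lemma Union_comps: "\<Union> comps = {0..<2 * n}"
proof
  show "\<Union> comps \<subseteq> {0..<2 * n}" unfolding comps_def using comp_sub by blast
  show "{0..<2 * n} \<subseteq> \<Union> comps"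
  proof
    fix x assume "x \<in> {0..<2 * n}"
    then have "x \<in> comp_of (A \<union> B) x" "comp_of (A \<union> B) x \<in> comps" using comp_self unfolding comps_def by auto
    then show "x \<in> \<Union> comps" by blast
  qed
qed

lemma comps_card: "C \<in> comps \<Longrightarrow> \<exists>v<2 * n. C = comp_of (A \<union> B) v \<and> card C = 2 * per v \<and> 0 < per v"
  unfolding comps_def using comp_card per_props(1) by blast

lemma sum_card_comps: "(\<Sum>C\<in>comps. card C) = 2 * n"
proof -
  have "card (\<Union> comps) = (\<Sum>C\<in>comps. card C)"
  proof (rule card_Union_disjoint)
    show "pairwise disjnt comps" unfolding pairwise_def disjnt_def using comps_disj by blast
    show "\<And>C. C \<in> comps \<Longrightarrow> finite C" unfolding comps_def using comp_finite by blast
  qed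
  then show ?thesis using Union_comps by simp
qed

lemma dmatch_partition: "\<exists>tau. is_partition n tau \<and> dmatch n A B = double tau"
proof -
  define tau where "tau = image_mset (\<lambda>C. card C div 2) (mset_set comps)"
  have ev: "C \<in> comps \<Longrightarrow> 2 * (card C div 2) = card C" for C using comps_card by fastforce
  have "double tau = image_mset (\<lambda>C. 2 * (card C div 2)) (mset_set comps)"
    unfolding double_def tau_def by (simp add: image_mset.compositionality comp_def)
  also have "\<dots> = image_mset card (mset_set comps)"
    by (rule image_mset_cong) (use ev finite_comps in simp)
  finally have d: "dmatch n A B = double tau" using dmatch_comps by simp
  have pos: "\<forall>x\<in>#tau. 0 < x" unfolding tau_def using comps_card finite_comps by fastforce
  have "2 * sum_mset tau = (\<Sum>C\<in>comps. 2 * (card C div 2))"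
    unfolding tau_def by (simp add: sum_unfold_sum_mset[symmetric] sum_distrib_left)
  also have "\<dots> = (\<Sum>C\<in>comps. card C)" using ev by simp
  finally have "sum_mset tau = n" using sum_card_comps by simp
  then show ?thesis using pos d unfolding is_partition_def by blast
qed

end

lemma walk_img:
  assumes A: "A \<in> matchings n" and B: "B \<in> matchings n" and g: "g permutes {0..<2 * n}" and v: "v < 2 * n"
  shows "walk (img g A) (img g B) (g v) i = g (walk A B v i)"
proof (induction i)
  case 0 then show ?case by simp
next
  case (Suc i)
  have w: "walk A B v i < 2 * n" by (rule walk_lt[OF A B v])
  show ?case using Suc pa_img[OF A g w] pa_img[OF B g w] by (simp add: fa_def)
qed

lemma comp_img:
  assumes A: "A \<in> matchings n" and B: "B \<in> matchings n" and g: "g permutes {0..<2 * n}" and v: "v < 2 * n"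
  shows "comp_of (img g A \<union> img g B) (g v) = g ` comp_of (A \<union> B) v"
proof -
  have gv: "g v < 2 * n" by (rule perm_lt[OF g v])
  have "comp_of (img g A \<union> img g B) (g v) = range (walk (img g A) (img g B) (g v))"
    by (rule comp_walk[OF img_match[OF A g] img_match[OF B g] gv])
  also have "\<dots> = range (\<lambda>i. g (walk A B v i))" using walk_img[OF A B g v] by simp
  also have "\<dots> = g ` range (walk A B v)" by auto
  also have "\<dots> = g ` comp_of (A \<union> B) v" using comp_walk[OF A B v] by simp
  finally show ?thesis .
qed

lemma comps_img:
  assumes A: "A \<in> matchings n" and B: "B \<in> matchings n" and g: "g permutes {0..<2 * n}"
  shows "comps n (img g A) (img g B) = (\<lambda>C. g ` C) ` comps n A B"
proof
  show "comps n (img g A) (img g B) \<subseteq> (\<lambda>C. g ` C) ` comps n A B"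
  proof
    fix C assume "C \<in> comps n (img g A) (img g B)"
    then obtain y where y: "y < 2 * n" "C = comp_of (img g A \<union> img g B) y"
      unfolding comps_def[OF img_match[OF A g] img_match[OF B g]] by blast
    define x where "x = inv g y"
    have x: "x < 2 * n" "g x = y" unfolding x_def using perm_lt[OF permutes_inv[OF g] y(1)] permutes_inverses(1)[OF g] by auto
    have "C = g ` comp_of (A \<union> B) x" using comp_img[OF A B g x(1)] x y by simp
    then show "C \<in> (\<lambda>C. g ` C) ` comps n A B" unfolding comps_def[OF A B] using x by blast
  qed
  show "(\<lambda>C. g ` C) ` comps n A B \<subseteq> comps n (img g A) (img g B)"
  proof
    fix C assume "C \<in> (\<lambda>C. g ` C) ` comps n A B"
    then obtain x where x: "x < 2 * n" "C = g ` comp_of (A \<union> B) x" unfolding comps_def[OF A B] by blast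
    then have "C = comp_of (img g A \<union> img g B) (g x)" using comp_img[OF A B g x(1)] by simp
    then show "C \<in> comps n (img g A) (img g B)"
      unfolding comps_def[OF img_match[OF A g] img_match[OF B g]] using perm_lt[OF g x(1)] by blast
  qed
qed

lemma dmatch_img:
  assumes A: "A \<in> matchings n" and B: "B \<in> matchings n" and g: "g permutes {0..<2 * n}"
  shows "dmatch n (img g A) (img g B) = dmatch n A B"
proof -
  have ig: "inj g" by (rule permutes_inj[OF g])
  have inj: "inj_on (\<lambda>C. g ` C) (comps n A B)" using ig by (auto simp: inj_on_def inj_image_eq_iff)
  have "dmatch n (img g A) (img g B) = image_mset card (mset_set ((\<lambda>C. g ` C) ` comps n A B))"
    using dmatch_comps[OF img_match[OF A g] img_match[OF B g]] comps_img[OF A B g] by simp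
  also have "\<dots> = image_mset card (image_mset (\<lambda>C. g ` C) (mset_set (comps n A B)))"
    using image_mset_mset_set[OF inj] by simp
  also have "\<dots> = image_mset (\<lambda>C. card (g ` C)) (mset_set (comps n A B))"
    by (simp add: image_mset.compositionality comp_def)
  also have "\<dots> = image_mset card (mset_set (comps n A B))"
    using card_image[OF inj_on_subset[OF ig]] by simp
  also have "\<dots> = dmatch n A B" using dmatch_comps[OF A B] by simp
  finally show ?thesis .
qed

lemma mset_bij:
  assumes "finite X" "finite Y" "image_mset f (mset_set X) = image_mset h (mset_set Y)"
  shows "\<exists>\<beta>. bij_betw \<beta> X Y \<and> (\<forall>x\<in>X. h (\<beta> x) = f x)"
  using assms
proof (induction X arbitrary: Y rule: finite_induct)
  case empty
  then have "mset_set Y = {#}" by simp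
  then have "Y = {}" using empty.prems(1) by (simp add: mset_set_empty_iff)
  then show ?case by (simp add: bij_betw_def)
next
  case (insert x X)
  have eq0: "add_mset (f x) (image_mset f (mset_set X)) = image_mset h (mset_set Y)" using insert.prems(2) insert.hyps by simp
  have "f x \<in># image_mset h (mset_set Y)" unfolding eq0[symmetric] by simp
  then obtain y where y: "y \<in> Y" "h y = f x" using insert.prems(1) by auto
  have "mset_set Y = add_mset y (mset_set (Y - {y}))" using mset_set.remove[OF insert.prems(1) y(1)] .
  then have "add_mset (f x) (image_mset f (mset_set X)) = add_mset (h y) (image_mset h (mset_set (Y - {y})))"
    using insert.prems(2) insert.hyps by simp
  then have "image_mset f (mset_set X) = image_mset h (mset_set (Y - {y}))" using y(2) by simp
  then obtain \<beta> where b: "bij_betw \<beta> X (Y - {y})" "\<forall>x\<in>X. h (\<beta> x) = f x"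
    using insert.IH[of "Y - {y}"] insert.prems(1) by blast
  define \<beta>' where "\<beta>' = \<beta>(x := y)"
  have "bij_betw \<beta>' (insert x X) Y"
    unfolding bij_betw_def
  proof
    have bx: "\<beta>' z = \<beta> z" if "z \<in> X" for z using that insert.hyps(2) unfolding \<beta>'_def by auto
    have bX: "\<beta> z \<in> Y - {y}" if "z \<in> X" for z using b(1) that unfolding bij_betw_def by auto
    show "inj_on \<beta>' (insert x X)"
    proof (rule inj_onI)
      fix z1 z2 assume z: "z1 \<in> insert x X" "z2 \<in> insert x X" "\<beta>' z1 = \<beta>' z2"
      show "z1 = z2"
      proof (cases "z1 = x"; cases "z2 = x")
        assume "z1 \<noteq> x" "z2 \<noteq> x"
        then have "z1 \<in> X" "z2 \<in> X" using z by auto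
        then show ?thesis using z(3) bx b(1) unfolding bij_betw_def inj_on_def by auto
      next
        assume "z1 = x" "z2 \<noteq> x"
        then have "z2 \<in> X" using z by auto
        then show ?thesis using z(3) bx bX \<open>z1 = x\<close> unfolding \<beta>'_def by auto
      next
        assume "z1 \<noteq> x" "z2 = x"
        then have "z1 \<in> X" using z by auto
        then show ?thesis using z(3) bx bX \<open>z2 = x\<close> unfolding \<beta>'_def by auto
      qed simp
    qed
    have "\<beta>' ` X = \<beta> ` X" using bx by auto
    also have "\<dots> = Y - {y}" using b(1) unfolding bij_betw_def by simp
    finally show "\<beta>' ` insert x X = Y" using y(1) unfolding \<beta>'_def by auto
  qed
  moreover have "\<forall>z\<in>insert x X. h (\<beta>' z) = f z" using b(2) y(2) insert.hyps(2) unfolding \<beta>'_def by auto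
  ultimately show ?case by auto
qed

lemma base_props:
  assumes A: "A \<in> matchings n" and B: "B \<in> matchings n" and C: "C \<in> comps n A B"
  shows "Min C < 2 * n" "comp_of (A \<union> B) (Min C) = C" "C = range (walk A B (Min C))"
    "card C = 2 * per A B (Min C)"
proof -
  obtain x where x: "x < 2 * n" "C = comp_of (A \<union> B) x" using C unfolding comps_def[OF A B] by blast
  have fin: "finite C" using comp_finite[OF A B x(1)] x(2) by simp
  have ne: "C \<noteq> {}" using comp_self[OF A B x(1)] x(2) by auto
  have m: "Min C \<in> C" by (rule Min_in[OF fin ne])
  then show "Min C < 2 * n" using comp_sub[OF A B x(1)] x(2) by auto
  show c: "comp_of (A \<union> B) (Min C) = C" using comp_eq[OF A B, of "Min C" x] m x(2) by simp
  show "C = range (walk A B (Min C))" using comp_walk[OF A B \<open>Min C < 2 * n\<close>] c by simp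
  show "card C = 2 * per A B (Min C)" using comp_card[OF A B \<open>Min C < 2 * n\<close>] c by simp
qed

theorem orbit_class:
  assumes A: "A \<in> matchings n" and B: "B \<in> matchings n"
    and A': "A' \<in> matchings n" and B': "B' \<in> matchings n"
    and d: "dmatch n A B = dmatch n A' B'"
  shows "\<exists>g. g permutes {0..<2 * n} \<and> img g A = A' \<and> img g B = B'"
proof -
  define Cs where "Cs = comps n A B"
  define Cs' where "Cs' = comps n A' B'"
  have "image_mset card (mset_set Cs) = image_mset card (mset_set Cs')"
    using d dmatch_comps[OF A B] dmatch_comps[OF A' B'] unfolding Cs_def Cs'_def by simp
  then obtain \<beta> where bb: "bij_betw \<beta> Cs Cs'" and bc: "\<forall>C\<in>Cs. card (\<beta> C) = card C"
    using mset_bij[OF finite_comps[OF A B] finite_comps[OF A' B']] unfolding Cs_def Cs'_def by blast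
  have bCs: "\<beta> C \<in> Cs'" if "C \<in> Cs" for C using bb that unfolding bij_betw_def by auto
  define W where "W C = walk A B (Min C)" for C
  define W' where "W' C = walk A' B' (Min C)" for C
  define k where "k C = per A B (Min C)" for C
  define k' where "k' C = per A' B' (Min C)" for C
  have bp: "Min C < 2 * n" "comp_of (A \<union> B) (Min C) = C" "C = range (W C)" "card C = 2 * k C"
    if "C \<in> Cs" for C using base_props[OF A B] that unfolding Cs_def W_def k_def by auto
  have bp': "Min C < 2 * n" "comp_of (A' \<union> B') (Min C) = C" "C = range (W' C)" "card C = 2 * k' C"
    if "C \<in> Cs'" for C using base_props[OF A' B'] that unfolding Cs'_def W'_def k'_def by auto
  have kk: "k' (\<beta> C) = k C" if "C \<in> Cs" for C using bp(4)[OF that] bp'(4)[OF bCs[OF that]] bc that by simp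
  define cp where "cp y = comp_of (A \<union> B) y" for y
  have cpC: "cp y \<in> Cs" "y \<in> cp y" if "y < 2 * n" for y
    unfolding cp_def Cs_def comps_def[OF A B] using that comp_self[OF A B] by auto
  have kpos: "0 < k C" if "C \<in> Cs" for C unfolding k_def using per_props(1)[OF A B bp(1)[OF that]] .
  have ex_idx: "\<exists>i. i < 2 * k (cp y) \<and> W (cp y) i = y" if y: "y < 2 * n" for y
  proof -
    have "y \<in> range (W (cp y))" using bp(3)[OF cpC(1)[OF y]] cpC(2)[OF y] by simp
    then have "y \<in> W (cp y) ` {0..<2 * k (cp y)}"
      using walk_range[OF A B bp(1)[OF cpC(1)[OF y]]] unfolding W_def k_def by simp
    then show ?thesis by auto
  qed
  define idx where "idx y = (SOME i. i < 2 * k (cp y) \<and> W (cp y) i = y)" for y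
  have idx: "idx y < 2 * k (cp y) \<and> W (cp y) (idx y) = y" if "y < 2 * n" for y
    unfolding idx_def using someI_ex[OF ex_idx[OF that]] .
  define g where "g y = (if y < 2 * n then W' (\<beta> (cp y)) (idx y) else y)" for y
  have gW: "g (W C j) = W' (\<beta> C) j" if C: "C \<in> Cs" for C j
  proof -
    let ?y = "W C j"
    have y: "?y < 2 * n" unfolding W_def by (rule walk_lt[OF A B bp(1)[OF C]])
    have "?y \<in> C" using bp(3)[OF C] by auto
    then have cy: "cp ?y = C" unfolding cp_def using comp_eq[OF A B, of ?y "Min C"] bp(2)[OF C] by simp
    have i: "idx ?y < 2 * k C" "W C (idx ?y) = ?y" using idx[OF y] cy by auto
    have "W C j = W C (j mod (2 * k C))" unfolding W_def k_def by (rule walk_mod[OF A B bp(1)[OF C]])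
    moreover have "j mod (2 * k C) < 2 * k C" using kpos[OF C] by simp
    ultimately have eqs: "W C (idx ?y) = W C (j mod (2 * k C))" "j mod (2 * k C) < 2 * k C" using i by auto
    have "inj_on (W C) {0..<2 * k C}" unfolding W_def k_def by (rule walk_inj[OF A B bp(1)[OF C]])
    then have "idx ?y = j mod (2 * k C)" by (rule inj_onD) (use eqs i in auto)
    then have "g ?y = W' (\<beta> C) (j mod (2 * k' (\<beta> C)))" unfolding g_def using y cy kk[OF C] by simp
    also have "\<dots> = W' (\<beta> C) j" unfolding W'_def k'_def
      by (rule walk_mod[OF A' B' bp'(1)[OF bCs[OF C]], symmetric])
    finally show ?thesis .
  qed
  have gfa: "g (fa A B i (W C i)) = fa A' B' i (g (W C i))"
    "g (fa A B (Suc i) (W C i)) = fa A' B' (Suc i) (g (W C i))" if C: "C \<in> Cs" for C i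
  proof -
    have "g (fa A B i (W C i)) = g (W C (Suc i))" unfolding W_def by simp
    also have "\<dots> = W' (\<beta> C) (Suc i)" by (rule gW[OF C])
    also have "\<dots> = fa A' B' i (W' (\<beta> C) i)" unfolding W'_def by simp
    finally show "g (fa A B i (W C i)) = fa A' B' i (g (W C i))" using gW[OF C] by simp
    have "g (fa A B (Suc i) (W C i)) = g (W C (i + 2 * k C - 1))"
      unfolding W_def k_def using walk_other[OF A B bp(1)[OF C]] by simp
    also have "\<dots> = W' (\<beta> C) (i + 2 * k' (\<beta> C) - 1)" using gW[OF C] kk[OF C] by simp
    also have "\<dots> = fa A' B' (Suc i) (W' (\<beta> C) i)"
      unfolding W'_def k'_def using walk_other[OF A' B' bp'(1)[OF bCs[OF C]]] by simp
    finally show "g (fa A B (Suc i) (W C i)) = fa A' B' (Suc i) (g (W C i))" using gW[OF C] by simp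
  qed
  have gpa: "g (pa A x) = pa A' (g x) \<and> g (pa B x) = pa B' (g x)" if x: "x < 2 * n" for x
  proof -
    let ?C = "cp x"
    let ?i = "idx x"
    have C: "?C \<in> Cs" by (rule cpC(1)[OF x])
    have xw: "x = W ?C ?i" using idx[OF x] by simp
    show ?thesis
    proof (cases "even ?i")
      case True
      then show ?thesis using gfa[OF C, of ?i] xw unfolding fa_def by (metis even_Suc)
    next
      case False
      then show ?thesis using gfa[OF C, of ?i] xw unfolding fa_def by (metis even_Suc)
    qed
  qed
  have glt: "g y < 2 * n" if "y < 2 * n" for y
    unfolding g_def W'_def using that walk_lt[OF A' B' bp'(1)[OF bCs[OF cpC(1)[OF that]]]] by simp
  have ginj: "inj_on g {0..<2 * n}"
  proof (rule inj_onI)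
    fix y1 y2 assume y: "y1 \<in> {0..<2 * n}" "y2 \<in> {0..<2 * n}" "g y1 = g y2"
    let ?C1 = "cp y1" and ?C2 = "cp y2"
    have C: "?C1 \<in> Cs" "?C2 \<in> Cs" using cpC y by auto
    have r1: "range (W' (\<beta> ?C1)) = \<beta> ?C1" using bp'(3)[OF bCs[OF C(1)]] by (rule sym)
    have r2: "range (W' (\<beta> ?C2)) = \<beta> ?C2" using bp'(3)[OF bCs[OF C(2)]] by (rule sym)
    have "g y1 = W' (\<beta> ?C1) (idx y1)" unfolding g_def using y by simp
    then have "g y1 \<in> range (W' (\<beta> ?C1))" by simp
    then have g1: "g y1 \<in> \<beta> ?C1" by (simp only: r1)
    have "g y2 = W' (\<beta> ?C2) (idx y2)" unfolding g_def using y by simp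
    then have "g y2 \<in> range (W' (\<beta> ?C2))" by simp
    then have g2: "g y2 \<in> \<beta> ?C2" by (simp only: r2)
    have ne: "\<beta> ?C1 \<inter> \<beta> ?C2 \<noteq> {}" using g1 g2 y(3) by auto
    have "\<beta> ?C1 = \<beta> ?C2" using comps_disj[OF A' B' _ _ ne] bCs[OF C(1)] bCs[OF C(2)]
      unfolding Cs'_def by blast
    then have CC: "?C1 = ?C2" using bb C unfolding bij_betw_def inj_on_def by blast
    have i1: "idx y1 < 2 * k' (\<beta> ?C1)" using idx y kk[OF C(1)] by auto
    have i2: "idx y2 < 2 * k' (\<beta> ?C1)" using idx y kk[OF C(2)] CC by auto
    have "W' (\<beta> ?C1) (idx y1) = W' (\<beta> ?C1) (idx y2)" using y CC unfolding g_def by simp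
    moreover have "inj_on (W' (\<beta> ?C1)) {0..<2 * k' (\<beta> ?C1)}"
      unfolding W'_def k'_def by (rule walk_inj[OF A' B' bp'(1)[OF bCs[OF C(1)]]])
    ultimately have "idx y1 = idx y2" using inj_onD i1 i2 by fastforce
    then show "y1 = y2" using idx y CC by (metis atLeastLessThan_iff)
  qed
  have "g ` {0..<2 * n} \<subseteq> {0..<2 * n}" using glt by auto
  then have "g ` {0..<2 * n} = {0..<2 * n}" using endo_inj_surj[of "{0..<2 * n}" g] ginj by blast
  then have "bij_betw g {0..<2 * n} {0..<2 * n}" using ginj by (simp add: bij_betw_def)
  moreover have "\<And>x. x \<notin> {0..<2 * n} \<Longrightarrow> g x = x" unfolding g_def by simp
  ultimately have gp: "g permutes {0..<2 * n}" by (rule bij_imp_permutes)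
  have "img g A = A'" by (rule img_eqI[OF A A' gp]) (use gpa in blast)
  moreover have "img g B = B'" by (rule img_eqI[OF B B' gp]) (use gpa in blast)
  ultimately show ?thesis using gp by blast
qed


lemma per_AA:
  assumes A: "A \<in> matchings n" and v: "v < 2 * n"
  shows "per A A v = 1"
  unfolding per_def[OF A A]
proof (rule Least_equality)
  show "0 < (1::nat) \<and> walk A A v (2 * 1) = v"
    using pa_pa[OF A] by (simp add: numeral_2_eq_2 fa_def)
qed simp

lemma dmatch_AA:
  assumes A: "A \<in> matchings n"
  shows "dmatch n A A = replicate_mset n 2"
proof -
  let ?Cs = "comps n A A"
  have c2: "card C = 2" if "C \<in> ?Cs" for C
    using comps_card[OF A A that] per_AA[OF A] by auto
  have "image_mset card (mset_set ?Cs) = image_mset (\<lambda>_. 2) (mset_set ?Cs)"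
    by (rule image_mset_cong) (use c2 finite_comps[OF A A] in simp)
  also have "\<dots> = replicate_mset (card ?Cs) 2" by (simp add: image_mset_const_eq)
  finally have d: "dmatch n A A = replicate_mset (card ?Cs) 2" using dmatch_comps[OF A A] by simp
  have "(\<Sum>C\<in>?Cs. card C) = 2 * card ?Cs" using c2 by simp
  then have "card ?Cs = n" using sum_card_comps[OF A A] by simp
  then show ?thesis using d by simp
qed

lemma I_match_in: "I_match n \<in> matchings n"
  unfolding matchings_def I_match_def
proof (intro CollectI conjI ballI allI impI)
  fix e assume "e \<in> {{i, n + i} |i. i < n}"
  then obtain i where "e = {i, n + i}" "i < n" by blast
  then show "\<exists>i j. e = {i, j} \<and> i \<noteq> j \<and> i < 2 * n \<and> j < 2 * n"
    by (intro exI[of _ i] exI[of _ "n + i"]) auto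
next
  fix x :: nat assume x: "x < 2 * n"
  define i where "i = (if x < n then x else x - n)"
  have i: "i < n" "x \<in> {i, n + i}" unfolding i_def using x by auto
  show "\<exists>!e. e \<in> {{i, n + i} |i. i < n} \<and> x \<in> e"
  proof (rule ex1I[where a = "{i, n + i}"])
    show "{i, n + i} \<in> {{i, n + i} |i. i < n} \<and> x \<in> {i, n + i}" using i by blast
  next
    fix e assume "e \<in> {{i, n + i} |i. i < n} \<and> x \<in> e"
    then obtain j where j: "e = {j, n + j}" "j < n" "x \<in> {j, n + j}" by blast
    then have "j = i" unfolding i_def by auto
    then show "e = {i, n + i}" using j by simp
  qed
qed

lemma match_trans:
  assumes A: "A \<in> matchings n"
  shows "\<exists>g. g permutes {0..<2 * n} \<and> img g A = I_match n"
proof -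
  have "dmatch n A A = dmatch n (I_match n) (I_match n)" using dmatch_AA[OF A] dmatch_AA[OF I_match_in] by simp
  then show ?thesis using orbit_class[OF A A I_match_in I_match_in] by blast
qed

lemma img_comp: "img f (img h B) = img (f \<circ> h) B"
  unfolding img_def by (auto simp: image_comp)

lemma img_id: "img id B = B"
  unfolding img_def by simp

lemma img_inv1: "g permutes S \<Longrightarrow> img g (img (inv g) B) = B"
  using img_comp[of g "inv g" B] permutes_inv_o(1)[of g S] img_id by simp

lemma img_inv2: "g permutes S \<Longrightarrow> img (inv g) (img g B) = B"
  using img_comp[of "inv g" g B] permutes_inv_o(2)[of g S] img_id by simp

lemma img_match_iff:
  assumes g: "g permutes {0..<2 * n}"
  shows "img g B \<in> matchings n \<longleftrightarrow> B \<in> matchings n"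
proof
  assume "img g B \<in> matchings n"
  then have "img (inv g) (img g B) \<in> matchings n" by (rule img_match[OF _ permutes_inv[OF g]])
  then show "B \<in> matchings n" using img_inv2[OF g] by simp
qed (rule img_match[OF _ g])

lemma img_bij:
  assumes g: "g permutes {0..<2 * n}"
  shows "bij_betw (img g) (matchings n) (matchings n)"
proof (rule bij_betw_byWitness[where f' = "img (inv g)"])
  show "\<forall>a\<in>matchings n. img (inv g) (img g a) = a" using img_inv2[OF g] by simp
  show "\<forall>a'\<in>matchings n. img g (img (inv g) a') = a'" using img_inv1[OF g] by simp
  show "img g ` matchings n \<subseteq> matchings n" using img_match[OF _ g] by auto
  show "img (inv g) ` matchings n \<subseteq> matchings n" using img_match[OF _ permutes_inv[OF g]] by auto
qed

lemma act_M_img: "act_M s g = (\<lambda>B. g (img (inv s) B))"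
  unfolding act_M_def img_def by simp

lemma sum_img_reindex:
  assumes g: "g permutes {0..<2 * n}"
  shows "(\<Sum>B\<in>matchings n. F (img g B)) = (\<Sum>B\<in>matchings n. F B)"
  using sum.reindex_bij_betw[OF img_bij[OF g], of F] .

lemma funpow_conj:
  assumes k: "k permutes S"
  shows "((k \<circ> s \<circ> inv k) ^^ j) (k x) = k ((s ^^ j) x)"
proof (induction j)
  case 0 then show ?case by simp
next
  case (Suc j)
  then show ?case using permutes_inverses(2)[OF k] by simp
qed

lemma orbit_conj:
  assumes k: "k permutes S"
  shows "orbit_of (k \<circ> s \<circ> inv k) (k x) = k ` orbit_of s x"
  unfolding orbit_of_def using funpow_conj[OF k] by auto

lemma cycle_type_conj:
  assumes k: "k permutes {0..<m}"
  shows "cycle_type m (k \<circ> s \<circ> inv k) = cycle_type m s"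
proof -
  let ?O = "{orbit_of s x | x. x < m}"
  let ?O' = "{orbit_of (k \<circ> s \<circ> inv k) y | y. y < m}"
  have eq: "?O' = (\<lambda>X. k ` X) ` ?O"
  proof
    show "?O' \<subseteq> (\<lambda>X. k ` X) ` ?O"
    proof
      fix X assume "X \<in> ?O'"
      then obtain y where y: "y < m" "X = orbit_of (k \<circ> s \<circ> inv k) y" by blast
      define x where "x = inv k y"
      have x: "x < m" "k x = y" unfolding x_def using perm_lt[OF permutes_inv[OF k] y(1)] permutes_inverses(1)[OF k] by auto
      have "X = k ` orbit_of s x" using y x orbit_conj[OF k] by metis
      then show "X \<in> (\<lambda>X. k ` X) ` ?O" using x by blast
    qed
    show "(\<lambda>X. k ` X) ` ?O \<subseteq> ?O'"
    proof
      fix X assume "X \<in> (\<lambda>X. k ` X) ` ?O"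
      then obtain x where x: "x < m" "X = k ` orbit_of s x" by blast
      then have "X = orbit_of (k \<circ> s \<circ> inv k) (k x)" using orbit_conj[OF k] by metis
      then show "X \<in> ?O'" using perm_lt[OF k x(1)] by blast
    qed
  qed
  have ik: "inj k" by (rule permutes_inj[OF k])
  have inj: "inj_on (\<lambda>X. k ` X) ?O" using ik by (auto simp: inj_on_def inj_image_eq_iff)
  have "cycle_type m (k \<circ> s \<circ> inv k) = image_mset card (mset_set ((\<lambda>X. k ` X) ` ?O))"
    unfolding cycle_type_def eq ..
  also have "\<dots> = image_mset card (image_mset (\<lambda>X. k ` X) (mset_set ?O))"
    using image_mset_mset_set[OF inj] by simp
  also have "\<dots> = image_mset (\<lambda>X. card (k ` X)) (mset_set ?O)"
    by (simp add: image_mset.compositionality comp_def)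
  also have "\<dots> = image_mset card (mset_set ?O)"
    using card_image[OF inj_on_subset[OF ik]] by simp
  also have "\<dots> = cycle_type m s" unfolding cycle_type_def ..
  finally show ?thesis .
qed

lemma P_conj:
  assumes s: "s \<in> perms_of_type m mu" and k: "k permutes {0..<m}"
  shows "k \<circ> s \<circ> inv k \<in> perms_of_type m mu"
proof -
  have sp: "s permutes {0..<m}" using s unfolding perms_of_type_def by simp
  have "k \<circ> s \<circ> inv k permutes {0..<m}"
    using permutes_compose[OF permutes_inv[OF k] permutes_compose[OF sp k]] by (simp add: comp_assoc)
  then show ?thesis using s cycle_type_conj[OF k, of s] unfolding perms_of_type_def by simp
qed

lemma finite_P: "finite (perms_of_type m mu)"
proof -
  have "perms_of_type m mu \<subseteq> {s. s permutes {0..<m}}" unfolding perms_of_type_def by auto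
  then show ?thesis using finite_permutations[of "{0..<m}"] finite_subset by blast
qed

lemma P_perm: "s \<in> perms_of_type m mu \<Longrightarrow> s permutes {0..<m}"
  unfolding perms_of_type_def by simp

lemma count_conj:
  assumes h: "h permutes {0..<2 * n}"
  shows "card {s \<in> perms_of_type (2 * n) mu. img s A = B} =
         card {s \<in> perms_of_type (2 * n) mu. img s (img h A) = img h B}"
proof (rule bij_betw_same_card[where f = "\<lambda>s. h \<circ> s \<circ> inv h"], rule bij_betw_byWitness[where f' = "\<lambda>s. inv h \<circ> s \<circ> h"])
  have i1: "inv h \<circ> (h \<circ> s \<circ> inv h) \<circ> h = s" for s using permutes_inverses[OF h] by (simp add: fun_eq_iff)
  have i2: "h \<circ> (inv h \<circ> s \<circ> h) \<circ> inv h = s" for s using permutes_inverses[OF h] by (simp add: fun_eq_iff)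
  show "\<forall>s\<in>{s \<in> perms_of_type (2 * n) mu. img s A = B}. inv h \<circ> (h \<circ> s \<circ> inv h) \<circ> h = s" using i1 by simp
  show "\<forall>s\<in>{s \<in> perms_of_type (2 * n) mu. img s (img h A) = img h B}. h \<circ> (inv h \<circ> s \<circ> h) \<circ> inv h = s"
    using i2 by simp
  show "(\<lambda>s. h \<circ> s \<circ> inv h) ` {s \<in> perms_of_type (2 * n) mu. img s A = B}
        \<subseteq> {s \<in> perms_of_type (2 * n) mu. img s (img h A) = img h B}"
  proof
    fix s' assume "s' \<in> (\<lambda>s. h \<circ> s \<circ> inv h) ` {s \<in> perms_of_type (2 * n) mu. img s A = B}"
    then obtain s where s: "s \<in> perms_of_type (2 * n) mu" "img s A = B" "s' = h \<circ> s \<circ> inv h" by blast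
    have "img s' (img h A) = img h (img s (img (inv h) (img h A)))" unfolding s(3) img_comp by (simp add: comp_assoc)
    also have "\<dots> = img h B" using img_inv2[OF h] s(2) by simp
    finally show "s' \<in> {s \<in> perms_of_type (2 * n) mu. img s (img h A) = img h B}"
      using P_conj[OF s(1) h] s(3) by simp
  qed
  show "(\<lambda>s. inv h \<circ> s \<circ> h) ` {s \<in> perms_of_type (2 * n) mu. img s (img h A) = img h B}
        \<subseteq> {s \<in> perms_of_type (2 * n) mu. img s A = B}"
  proof
    fix s' assume "s' \<in> (\<lambda>s. inv h \<circ> s \<circ> h) ` {s \<in> perms_of_type (2 * n) mu. img s (img h A) = img h B}"
    then obtain s where s: "s \<in> perms_of_type (2 * n) mu" "img s (img h A) = img h B" "s' = inv h \<circ> s \<circ> h" by blast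
    have "img s' A = img (inv h) (img s (img h A))" unfolding s(3) img_comp by (simp add: comp_assoc)
    also have "\<dots> = B" using img_inv2[OF h] s(2) by simp
    moreover have "s' = inv h \<circ> s \<circ> inv (inv h)" using s(3) permutes_inv_inv[OF h] by simp
    ultimately show "s' \<in> {s \<in> perms_of_type (2 * n) mu. img s A = B}"
      using P_conj[OF s(1) permutes_inv[OF h]] by simp
  qed
qed

lemma count_eq:
  assumes A: "A \<in> matchings n" and B: "B \<in> matchings n" and d: "dmatch n A B = double tau"
  shows "card {s \<in> perms_of_type (2 * n) mu. img s A = B} = m_count n mu tau"
proof -
  define A0 where "A0 = (SOME A. A \<in> matchings n \<and> dmatch n (I_match n) A = double tau)"
  obtain g where g: "g permutes {0..<2 * n}" "img g A = I_match n" using match_trans[OF A] by blast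
  have "img g B \<in> matchings n \<and> dmatch n (I_match n) (img g B) = double tau"
    using dmatch_img[OF A B g(1)] g d img_match[OF B g(1)] by simp
  then have A0: "A0 \<in> matchings n" "dmatch n (I_match n) A0 = double tau"
    unfolding A0_def by (metis (mono_tags, lifting) someI_ex)+
  obtain h where h: "h permutes {0..<2 * n}" "img h A = I_match n" "img h B = A0"
    using orbit_class[OF A B I_match_in A0(1)] d A0(2) by auto
  have "card {s \<in> perms_of_type (2 * n) mu. img s A = B} = card {s \<in> perms_of_type (2 * n) mu. img s (I_match n) = A0}"
    using count_conj[OF h(1), of mu A B] h by simp
  also have "\<dots> = m_count n mu tau" unfolding m_count_def A0_def[symmetric] img_def Let_def by simp
  finally show ?thesis .
qed


lemma double_inj: "double tau = double tau' \<Longrightarrow> tau = tau'"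
proof -
  have h: "image_mset (\<lambda>x. x div 2) (double t) = t" for t
    unfolding double_def by (simp add: image_mset.compositionality comp_def)
  assume "double tau = double tau'"
  then show ?thesis using h[of tau] h[of tau'] by metis
qed

lemma size_le_sum: "\<forall>x\<in>#t. 0 < x \<Longrightarrow> size t \<le> sum_mset (t :: nat multiset)"
  by (induction t) auto

lemma elem_le_sum: "x \<in># t \<Longrightarrow> x \<le> sum_mset (t :: nat multiset)"
  using sum_mset.remove[of x t] by simp

lemma finite_Par: "finite {tau. is_partition n tau}"
proof -
  have "{tau. is_partition n tau} \<subseteq> mset ` {xs. set xs \<subseteq> {0..n} \<and> length xs \<le> n}"
  proof
    fix tau assume "tau \<in> {tau. is_partition n tau}"
    then have t: "\<forall>x\<in>#tau. 0 < x" "sum_mset tau = n" unfolding is_partition_def by auto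
    let ?xs = "sorted_list_of_multiset tau"
    have "set ?xs \<subseteq> {0..n}" using elem_le_sum[of _ tau] t(2) by auto
    moreover have "length ?xs \<le> n" using size_le_sum[OF t(1)] t(2) by (metis mset_sorted_list_of_multiset size_mset)
    ultimately show "tau \<in> mset ` {xs. set xs \<subseteq> {0..n} \<and> length xs \<le> n}"
      by (metis (mono_tags, lifting) image_eqI mem_Collect_eq mset_sorted_list_of_multiset)
  qed
  moreover have "finite {xs. set xs \<subseteq> {0..n} \<and> length xs \<le> n}" by (rule finite_lists_length_le) simp
  ultimately show ?thesis using finite_subset by blast
qed

definition csm :: "nat \<Rightarrow> nat multiset \<Rightarrow> (nat set set \<Rightarrow> complex) \<Rightarrow> (nat set set \<Rightarrow> complex)" where
  "csm n mu g = (\<lambda>B. \<Sum>s\<in>perms_of_type (2 * n) mu. act_M s g B)"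

lemma csm_eq:
  assumes g: "in_CM n g"
  shows "csm n mu g = (\<lambda>B. \<Sum>tau\<in>{tau. is_partition n tau}. of_nat (m_count n mu tau) * N_op n tau g B)"
proof
  fix B
  let ?P = "perms_of_type (2 * n) mu"
  let ?M = "matchings n"
  let ?Par = "{tau. is_partition n tau}"
  show "csm n mu g B = (\<Sum>tau\<in>?Par. of_nat (m_count n mu tau) * N_op n tau g B)"
  proof (cases "B \<in> ?M")
    case False
    have "act_M s g B = 0" if "s \<in> ?P" for s
    proof -
      have "img (inv s) B \<notin> ?M" using img_match_iff[OF permutes_inv[OF P_perm[OF that]]] False by simp
      then show ?thesis unfolding act_M_img using g unfolding in_CM_def by simp
    qed
    then show ?thesis unfolding csm_def N_op_def using False by simp
  next
    case True
    have a: "act_M s g B = (\<Sum>A\<in>?M. if img s A = B then g A else 0)" if s: "s \<in> ?P" for s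
    proof -
      have sp: "s permutes {0..<2 * n}" by (rule P_perm[OF s])
      have A1: "img (inv s) B \<in> ?M" using img_match_iff[OF permutes_inv[OF sp]] True by simp
      have "(\<Sum>A\<in>?M. if img s A = B then g A else 0) = (\<Sum>A\<in>?M. if A = img (inv s) B then g A else 0)"
      proof (rule sum.cong[OF refl])
        fix A assume "A \<in> ?M"
        have "img s A = B \<longleftrightarrow> A = img (inv s) B" using img_inv1[OF sp] img_inv2[OF sp] by metis
        then show "(if img s A = B then g A else 0) = (if A = img (inv s) B then g A else 0)" by simp
      qed
      also have "\<dots> = g (img (inv s) B)" using A1 finite_matchings[of n] by simp
      finally show ?thesis unfolding act_M_img by simp
    qed
    have "csm n mu g B = (\<Sum>s\<in>?P. \<Sum>A\<in>?M. if img s A = B then g A else 0)"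
      unfolding csm_def using a by simp
    also have "\<dots> = (\<Sum>A\<in>?M. \<Sum>s\<in>?P. if img s A = B then g A else 0)" by (rule sum.swap)
    also have "\<dots> = (\<Sum>A\<in>?M. of_nat (card {s \<in> ?P. img s A = B}) * g A)"
    proof (rule sum.cong[OF refl])
      fix A
      have "(\<Sum>s\<in>?P. if img s A = B then g A else 0) = (\<Sum>s\<in>{s \<in> ?P. img s A = B}. g A)"
        by (rule sum.inter_filter[symmetric]) (rule finite_P)
      then show "(\<Sum>s\<in>?P. if img s A = B then g A else 0) = of_nat (card {s \<in> ?P. img s A = B}) * g A"
        by simp
    qed
    also have "\<dots> = (\<Sum>A\<in>?M. \<Sum>tau\<in>?Par. if dmatch n A B = double tau then of_nat (m_count n mu tau) * g A else 0)"
    proof (rule sum.cong[OF refl])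
      fix A assume A: "A \<in> ?M"
      obtain tau0 where t0: "is_partition n tau0" "dmatch n A B = double tau0"
        using dmatch_partition[OF A True] by blast
      have "(\<Sum>tau\<in>?Par. if dmatch n A B = double tau then of_nat (m_count n mu tau) * g A else 0)
          = (\<Sum>tau\<in>?Par. if tau = tau0 then of_nat (m_count n mu tau) * g A else 0)"
        using t0(2) double_inj by (intro sum.cong) auto
      also have "\<dots> = of_nat (m_count n mu tau0) * g A" using t0(1) finite_Par[of n] by simp
      also have "m_count n mu tau0 = card {s \<in> ?P. img s A = B}" using count_eq[OF A True t0(2)] by simp
      finally show "of_nat (card {s \<in> ?P. img s A = B}) * g A =
          (\<Sum>tau\<in>?Par. if dmatch n A B = double tau then of_nat (m_count n mu tau) * g A else 0)" by simp
    qed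
    also have "\<dots> = (\<Sum>tau\<in>?Par. \<Sum>A\<in>?M. if dmatch n A B = double tau then of_nat (m_count n mu tau) * g A else 0)"
      by (rule sum.swap)
    also have "\<dots> = (\<Sum>tau\<in>?Par. of_nat (m_count n mu tau) * N_op n tau g B)"
    proof (rule sum.cong[OF refl])
      fix tau
      have "(\<Sum>A\<in>?M. if dmatch n A B = double tau then of_nat (m_count n mu tau) * g A else 0)
          = (\<Sum>A\<in>{A \<in> ?M. dmatch n A B = double tau}. of_nat (m_count n mu tau) * g A)"
        by (rule sum.inter_filter[symmetric]) (rule finite_matchings)
      then show "(\<Sum>A\<in>?M. if dmatch n A B = double tau then of_nat (m_count n mu tau) * g A else 0) =
          of_nat (m_count n mu tau) * N_op n tau g B"
        unfolding N_op_def using True by (simp add: sum_distrib_left)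
    qed
    finally show ?thesis .
  qed
qed


definition ip :: "nat \<Rightarrow> (nat set set \<Rightarrow> complex) \<Rightarrow> (nat set set \<Rightarrow> complex) \<Rightarrow> complex" where
  "ip n x y = (\<Sum>B\<in>matchings n. x B * cnj (y B))"

definition dl :: "nat set set \<Rightarrow> nat set set \<Rightarrow> complex" where
  "dl B0 = (\<lambda>B. if B = B0 then 1 else 0)"

lemma act_M_comp:
  assumes s: "s permutes {0..<2 * n}" and s': "s' permutes {0..<2 * n}"
  shows "act_M s (act_M s' g) = act_M (s \<circ> s') g"
proof -
  have "inv (s \<circ> s') = inv s' \<circ> inv s"
    by (rule o_inv_distrib) (use permutes_bij s s' in auto)
  then show ?thesis unfolding act_M_img img_comp by simp
qed

lemma act_M_dl:
  assumes s: "s permutes {0..<2 * n}"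
  shows "act_M s (dl B0) = dl (img s B0)"
proof
  fix B
  have "img (inv s) B = B0 \<longleftrightarrow> B = img s B0" using img_inv1[OF s] img_inv2[OF s] by metis
  then show "act_M s (dl B0) B = dl (img s B0) B" unfolding act_M_img dl_def by simp
qed

lemma act_M_in_CM:
  assumes s: "s permutes {0..<2 * n}" and g: "in_CM n g"
  shows "in_CM n (act_M s g)"
  unfolding in_CM_def act_M_img using g img_match_iff[OF permutes_inv[OF s]] unfolding in_CM_def by simp

lemma ip_inv:
  assumes k: "k permutes {0..<2 * n}"
  shows "ip n (act_M k x) (act_M k y) = ip n x y"
  unfolding ip_def act_M_img using sum_img_reindex[OF permutes_inv[OF k], of "\<lambda>B. x B * cnj (y B)"] by simp

lemma dl_in_CM: "B0 \<in> matchings n \<Longrightarrow> in_CM n (dl B0)"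
  unfolding in_CM_def dl_def by auto

lemma ip_dl: "B0 \<in> matchings n \<Longrightarrow> ip n (dl B0) y = cnj (y B0)"
proof -
  assume B0: "B0 \<in> matchings n"
  have "ip n (dl B0) y = (\<Sum>B\<in>matchings n. if B = B0 then cnj (y B) else 0)"
    unfolding ip_def dl_def by (rule sum.cong) auto
  also have "\<dots> = cnj (y B0)" using B0 finite_matchings[of n] by simp
  finally show ?thesis .
qed

lemma in_CM_expand: "in_CM n x \<Longrightarrow> x = (\<lambda>A. \<Sum>B\<in>matchings n. x B * dl B A)"
proof
  fix A assume x: "in_CM n x"
  show "x A = (\<Sum>B\<in>matchings n. x B * dl B A)"
  proof (cases "A \<in> matchings n")
    case True
    have "(\<Sum>B\<in>matchings n. x B * dl B A) = (\<Sum>B\<in>matchings n. if A = B then x B else 0)"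
      unfolding dl_def by (rule sum.cong) auto
    also have "\<dots> = x A" using True finite_matchings[of n] by simp
    finally show ?thesis by simp
  next
    case False
    then show ?thesis using x unfolding in_CM_def dl_def by (auto intro!: sum.neutral)
  qed
qed

definition inv_kernel :: "nat \<Rightarrow> (nat set set \<Rightarrow> nat set set \<Rightarrow> complex) \<Rightarrow> bool" where
  "inv_kernel n K \<longleftrightarrow> (\<forall>k. k permutes {0..<2 * n} \<longrightarrow>
     (\<forall>A\<in>matchings n. \<forall>B\<in>matchings n. K (img k A) (img k B) = K A B))"

lemma kernel_sym:
  assumes K: "inv_kernel n K" and A: "A \<in> matchings n" and B: "B \<in> matchings n"
  shows "K A B = K B A"
proof -
  have "dmatch n A B = dmatch n B A" unfolding dmatch_def by (simp add: Un_commute)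
  then obtain k where k: "k permutes {0..<2 * n}" "img k A = B" "img k B = A"
    using orbit_class[OF A B B A] by blast
  then show ?thesis using K A B unfolding inv_kernel_def by metis
qed

lemma kernel_comm:
  assumes K1: "inv_kernel n K1" and K2: "inv_kernel n K2" and A: "A \<in> matchings n" and B: "B \<in> matchings n"
  shows "(\<Sum>C\<in>matchings n. K1 A C * K2 C B) = (\<Sum>C\<in>matchings n. K2 A C * K1 C B)"
proof -
  define P where "P X Y = (\<Sum>C\<in>matchings n. K2 X C * K1 C Y)" for X Y
  have PK: "inv_kernel n P" unfolding inv_kernel_def
  proof (intro allI impI ballI)
    fix k X Y assume k: "k permutes {0..<2 * n}" and X: "X \<in> matchings n" and Y: "Y \<in> matchings n"
    have "P (img k X) (img k Y) = (\<Sum>C\<in>matchings n. K2 (img k X) (img k C) * K1 (img k C) (img k Y))"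
      unfolding P_def by (rule sum_img_reindex[OF k, symmetric])
    also have "\<dots> = P X Y" unfolding P_def
      using K1 K2 k X Y unfolding inv_kernel_def by (intro sum.cong) auto
    finally show "P (img k X) (img k Y) = P X Y" .
  qed
  have "(\<Sum>C\<in>matchings n. K1 A C * K2 C B) = (\<Sum>C\<in>matchings n. K2 B C * K1 C A)"
    using kernel_sym[OF K1 A] kernel_sym[OF K2 _ B] by (intro sum.cong) (auto simp: mult.commute)
  also have "\<dots> = P B A" unfolding P_def ..
  also have "\<dots> = P A B" by (rule kernel_sym[OF PK B A])
  finally show ?thesis unfolding P_def .
qed

definition good_op :: "nat \<Rightarrow> ((nat set set \<Rightarrow> complex) \<Rightarrow> (nat set set \<Rightarrow> complex)) \<Rightarrow> bool" where
  "good_op n F \<longleftrightarrow> (\<forall>x. in_CM n x \<longrightarrow> in_CM n (F x) \<and> F x = (\<lambda>A. \<Sum>B\<in>matchings n. x B * F (dl B) A)) \<and>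
     (\<forall>k x. k permutes {0..<2 * n} \<longrightarrow> in_CM n x \<longrightarrow> F (act_M k x) = act_M k (F x))"

lemma good_kernel:
  assumes F: "good_op n F"
  shows "inv_kernel n (\<lambda>A B. F (dl B) A)"
  unfolding inv_kernel_def
proof (intro allI impI ballI)
  fix k A B assume k: "k permutes {0..<2 * n}" and A: "A \<in> matchings n" and B: "B \<in> matchings n"
  have "F (dl (img k B)) = F (act_M k (dl B))" using act_M_dl[OF k] by simp
  also have "\<dots> = act_M k (F (dl B))" using F k dl_in_CM[OF B] unfolding good_op_def by blast
  finally show "F (dl (img k B)) (img k A) = F (dl B) A" unfolding act_M_img using img_inv2[OF k] by simp
qed

lemma good_comm:
  assumes F1: "good_op n F1" and F2: "good_op n F2" and x: "in_CM n x"
  shows "F1 (F2 x) = F2 (F1 x)"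
proof
  fix A
  let ?M = "matchings n"
  let ?K1 = "\<lambda>A B. F1 (dl B) A" and ?K2 = "\<lambda>A B. F2 (dl B) A"
  have r1: "F1 y = (\<lambda>A. \<Sum>B\<in>?M. y B * ?K1 A B)" "in_CM n (F1 y)" if "in_CM n y" for y
    using F1 that unfolding good_op_def by blast+
  have r2: "F2 y = (\<lambda>A. \<Sum>B\<in>?M. y B * ?K2 A B)" "in_CM n (F2 y)" if "in_CM n y" for y
    using F2 that unfolding good_op_def by blast+
  show "F1 (F2 x) A = F2 (F1 x) A"
  proof (cases "A \<in> ?M")
    case False
    then show ?thesis using r1(2)[OF r2(2)[OF x]] r2(2)[OF r1(2)[OF x]] unfolding in_CM_def by simp
  next
    case True
    have e1: "F1 (F2 x) = (\<lambda>A. \<Sum>C\<in>?M. F2 x C * ?K1 A C)" by (rule r1(1)[OF r2(2)[OF x]])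
    have e2: "F2 x = (\<lambda>C. \<Sum>B\<in>?M. x B * ?K2 C B)" by (rule r2(1)[OF x])
    have e3: "F2 (F1 x) = (\<lambda>A. \<Sum>C\<in>?M. F1 x C * ?K2 A C)" by (rule r2(1)[OF r1(2)[OF x]])
    have e4: "F1 x = (\<lambda>C. \<Sum>B\<in>?M. x B * ?K1 C B)" by (rule r1(1)[OF x])
    have "F1 (F2 x) A = (\<Sum>C\<in>?M. (\<Sum>B\<in>?M. x B * ?K2 C B) * ?K1 A C)"
      unfolding e1 by (subst e2) (rule refl)
    also have "\<dots> = (\<Sum>C\<in>?M. \<Sum>B\<in>?M. x B * (?K1 A C * ?K2 C B))"
      by (rule sum.cong[OF refl]) (simp add: sum_distrib_left sum_distrib_right mult_ac)
    also have "\<dots> = (\<Sum>B\<in>?M. \<Sum>C\<in>?M. x B * (?K1 A C * ?K2 C B))" by (rule sum.swap)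
    also have "\<dots> = (\<Sum>B\<in>?M. x B * (\<Sum>C\<in>?M. ?K1 A C * ?K2 C B))"
      by (simp add: sum_distrib_left)
    also have "\<dots> = (\<Sum>B\<in>?M. x B * (\<Sum>C\<in>?M. ?K2 A C * ?K1 C B))"
      using kernel_comm[OF good_kernel[OF F1] good_kernel[OF F2] True] by (intro sum.cong) auto
    also have "\<dots> = (\<Sum>B\<in>?M. \<Sum>C\<in>?M. x B * (?K2 A C * ?K1 C B))"
      by (simp add: sum_distrib_left)
    also have "\<dots> = (\<Sum>C\<in>?M. \<Sum>B\<in>?M. x B * (?K2 A C * ?K1 C B))" by (rule sum.swap)
    also have "\<dots> = (\<Sum>C\<in>?M. (\<Sum>B\<in>?M. x B * ?K1 C B) * ?K2 A C)"
      by (rule sum.cong[OF refl]) (simp add: sum_distrib_left sum_distrib_right mult_ac)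
    also have "\<dots> = F2 (F1 x) A"
      unfolding e3 by (subst e4) (rule refl)
    finally show ?thesis .
  qed
qed


definition GP :: "nat \<Rightarrow> (nat \<Rightarrow> nat) set" where
  "GP n = {g. g permutes {0..<2 * n}}"

lemma finite_GP: "finite (GP n)"
  unfolding GP_def using finite_permutations[of "{0..<2 * n}"] by simp

definition hh :: "nat \<Rightarrow> nat multiset \<Rightarrow> (nat \<Rightarrow> nat \<times> nat) \<Rightarrow> (nat set set \<Rightarrow> complex) \<Rightarrow>
    (nat set set \<Rightarrow> complex) \<Rightarrow> ((nat \<Rightarrow> nat) \<Rightarrow> complex)" where
  "hh n nu t0 w x = (\<lambda>T. \<Sum>g\<in>GP n. ip n x (act_M g w) * act_tab g (polytabloid nu t0) T)"

lemma ip_lin: "ip n (\<lambda>B. a * x B + b * y B) z = a * ip n x z + b * ip n y z"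
  unfolding ip_def by (simp add: sum.distrib sum_distrib_left algebra_simps)

lemma ip_sum: "finite I \<Longrightarrow> ip n (\<lambda>B. \<Sum>i\<in>I. c i * u i B) z = (\<Sum>i\<in>I. c i * ip n (u i) z)"
  unfolding ip_def by (simp add: sum_distrib_left sum_distrib_right sum.swap[of _ I] mult_ac)

lemma ip_cnj: "ip n y x = cnj (ip n x y)"
  unfolding ip_def by (simp add: mult.commute)

lemma ip_self: "ip n x x = of_real (\<Sum>B\<in>matchings n. (cmod (x B))\<^sup>2)"
proof -
  have "ip n x x = (\<Sum>B\<in>matchings n. of_real ((cmod (x B))\<^sup>2))"
    unfolding ip_def using complex_norm_square by (intro sum.cong) auto
  then show ?thesis by simp
qed

context
  fixes n :: nat and nu :: "nat multiset" and t0 :: "nat \<Rightarrow> nat \<times> nat"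
  assumes nm: "sum_mset nu = 2 * n" and t0: "t0 \<in> tableaux nu"
begin

lemma GP_specht: "g \<in> GP n \<Longrightarrow> act_tab g (polytabloid nu t0) \<in> specht nu"
  unfolding GP_def using act_tab_specht[of g nu "polytabloid nu t0"] polytab_in[OF t0] nm by simp

lemma hh_in: "hh n nu t0 w x \<in> specht nu"
  unfolding hh_def by (rule lin_sum_mem[OF specht_lin finite_GP]) (use GP_specht in blast)

lemma hh_lin: "hh n nu t0 w (\<lambda>B. a * x B + b * y B) = (\<lambda>T. a * hh n nu t0 w x T + b * hh n nu t0 w y T)"
  unfolding hh_def ip_lin by (simp add: sum.distrib sum_distrib_left algebra_simps)

lemma hh_smult: "hh n nu t0 w (\<lambda>B. a * x B) = (\<lambda>T. a * hh n nu t0 w x T)"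
  unfolding hh_def ip_def by (simp add: sum_distrib_left algebra_simps)

lemma hh_equiv:
  assumes k: "k permutes {0..<2 * n}"
  shows "hh n nu t0 w (act_M k x) = act_tab k (hh n nu t0 w x)"
proof
  fix T
  let ?e = "polytabloid nu t0"
  have ik: "inv k permutes {0..<2 * n}" by (rule permutes_inv[OF k])
  have "hh n nu t0 w (act_M k x) T = (\<Sum>g\<in>GP n. ip n x (act_M (inv k \<circ> g) w) * act_tab g ?e T)"
    unfolding hh_def
  proof (rule sum.cong[OF refl])
    fix g assume g: "g \<in> GP n"
    have gp: "g permutes {0..<2 * n}" using g unfolding GP_def by simp
    have "act_M g w = act_M k (act_M (inv k \<circ> g) w)"
      using act_M_comp[OF k permutes_compose[OF gp ik]] permutes_inv_o(1)[OF k] by (simp add: comp_assoc[symmetric])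
    then show "ip n (act_M k x) (act_M g w) * act_tab g ?e T = ip n x (act_M (inv k \<circ> g) w) * act_tab g ?e T"
      using ip_inv[OF k] by simp
  qed
  also have "\<dots> = (\<Sum>g\<in>GP n. ip n x (act_M g w) * act_tab (k \<circ> g) ?e T)"
  proof (rule sum.reindex_bij_witness[where i = "\<lambda>g. k \<circ> g" and j = "\<lambda>g. inv k \<circ> g"])
    fix g :: "nat \<Rightarrow> nat"
    show "k \<circ> (inv k \<circ> g) = g" using permutes_inv_o(1)[OF k] by (simp add: comp_assoc[symmetric])
    show "inv k \<circ> (k \<circ> g) = g" using permutes_inv_o(2)[OF k] by (simp add: comp_assoc[symmetric])
  next
    fix g assume "g \<in> GP n"
    then show "inv k \<circ> g \<in> GP n" "k \<circ> g \<in> GP n" unfolding GP_def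
      using permutes_compose[OF _ ik] permutes_compose[OF _ k] by auto
  qed (use permutes_inv_o(1)[OF k] in \<open>simp add: comp_assoc[symmetric]\<close>)
  also have "\<dots> = act_tab k (hh n nu t0 w x) T"
    unfolding hh_def act_tab_def by (simp add: comp_assoc)
  finally show "hh n nu t0 w (act_M k x) T = act_tab k (hh n nu t0 w x) T" .
qed

lemma hh_dl:
  assumes x: "in_CM n x"
  shows "hh n nu t0 w x = (\<lambda>T. \<Sum>B\<in>matchings n. x B * hh n nu t0 w (dl B) T)"
proof
  fix T
  let ?e = "polytabloid nu t0"
  have "hh n nu t0 w x T = (\<Sum>g\<in>GP n. (\<Sum>B\<in>matchings n. x B * cnj (act_M g w B)) * act_tab g ?e T)"
    unfolding hh_def ip_def ..
  also have "\<dots> = (\<Sum>B\<in>matchings n. x B * (\<Sum>g\<in>GP n. cnj (act_M g w B) * act_tab g ?e T))"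
    by (simp add: sum_distrib_left sum_distrib_right sum.swap[of _ "GP n"] mult_ac)
  also have "\<dots> = (\<Sum>B\<in>matchings n. x B * hh n nu t0 w (dl B) T)"
    unfolding hh_def using ip_dl by (intro sum.cong) auto
  finally show "hh n nu t0 w x T = (\<Sum>B\<in>matchings n. x B * hh n nu t0 w (dl B) T)" .
qed

lemma equiv_parts:
  assumes "equivariant_into_CM n nu f"
  shows "\<And>v. v \<in> specht nu \<Longrightarrow> in_CM n (f v)" "lin_on (specht nu) f"
    "\<And>s v. s permutes {0..<2 * n} \<Longrightarrow> v \<in> specht nu \<Longrightarrow> f (act_tab s v) = act_M s (f v)"
  using assms unfolding equivariant_into_CM_def lin_on_def by auto

lemma schur_hh:
  assumes f: "equivariant_into_CM n nu f"
  shows "\<exists>a. \<forall>v\<in>specht nu. hh n nu t0 w (f v) = (\<lambda>T. a * v T)"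
proof (rule schur_specht)
  note fp = equiv_parts[OF f]
  show "\<And>v. v \<in> specht nu \<Longrightarrow> hh n nu t0 w (f v) \<in> specht nu" by (rule hh_in)
  show "lin_on (specht nu) (\<lambda>v. hh n nu t0 w (f v))"
    unfolding lin_on_def using lin_onD[OF fp(2)] hh_lin by simp
  show "\<And>s v. s permutes {0..<sum_mset nu} \<Longrightarrow> v \<in> specht nu \<Longrightarrow>
      hh n nu t0 w (f (act_tab s v)) = act_tab s (hh n nu t0 w (f v))"
    using fp(3) hh_equiv nm by simp
qed

lemma good_fh:
  assumes f: "equivariant_into_CM n nu f"
  shows "good_op n (\<lambda>x. f (hh n nu t0 w x))"
  unfolding good_op_def
proof (intro conjI allI impI)
  note fp = equiv_parts[OF f]
  fix x assume x: "in_CM n x"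
  show "in_CM n (f (hh n nu t0 w x))" by (rule fp(1)[OF hh_in])
  have "\<forall>B\<in>matchings n. hh n nu t0 w (dl B) \<in> specht nu" using hh_in by blast
  then have "f (\<lambda>T. \<Sum>B\<in>matchings n. x B * hh n nu t0 w (dl B) T) = (\<lambda>A. \<Sum>B\<in>matchings n. x B * f (hh n nu t0 w (dl B)) A)"
    using lin_sum[OF specht_lin fp(2) finite_matchings[of n], of "\<lambda>B. hh n nu t0 w (dl B)" x] by blast
  then show "f (hh n nu t0 w x) = (\<lambda>A. \<Sum>B\<in>matchings n. x B * f (hh n nu t0 w (dl B)) A)"
    using hh_dl[OF x] by simp
next
  note fp = equiv_parts[OF f]
  fix k x assume k: "k permutes {0..<2 * n}" and x: "in_CM n x"
  show "f (hh n nu t0 w (act_M k x)) = act_M k (f (hh n nu t0 w x))"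
    using hh_equiv[OF k] fp(3)[OF k hh_in] by simp
qed

end


lemma in_CM_zero: "in_CM n x \<Longrightarrow> (\<forall>B\<in>matchings n. x B = 0) \<Longrightarrow> x = (\<lambda>B. 0)"
  unfolding in_CM_def by auto

context
  fixes n :: nat and nu :: "nat multiset" and t0 :: "nat \<Rightarrow> nat \<times> nat"
  assumes nm: "sum_mset nu = 2 * n" and t0: "t0 \<in> tableaux nu"
begin

lemma hom_e0:
  assumes f1: "equivariant_into_CM n nu f1" and f2: "equivariant_into_CM n nu f2"
    and nz: "f1 (polytabloid nu t0) \<noteq> (\<lambda>B. 0)"
  shows "\<exists>c. f2 (polytabloid nu t0) = (\<lambda>B. c * f1 (polytabloid nu t0) B)"
proof -
  let ?e = "polytabloid nu t0"
  let ?S = "specht nu"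
  have e: "?e \<in> ?S" by (rule polytab_in[OF t0])
  define w where "w = f1 ?e"
  define h where "h = hh n nu t0 w"
  note p1 = equiv_parts[OF nm t0 f1] and p2 = equiv_parts[OF nm t0 f2]
  have wCM: "in_CM n w" unfolding w_def by (rule p1(1)[OF e])
  obtain a1 where a1: "\<forall>v\<in>?S. h (f1 v) = (\<lambda>T. a1 * v T)" using schur_hh[OF nm t0 f1] unfolding h_def by blast
  obtain a2 where a2: "\<forall>v\<in>?S. h (f2 v) = (\<lambda>T. a2 * v T)" using schur_hh[OF nm t0 f2] unfolding h_def by blast
  have g1: "good_op n (\<lambda>x. f1 (h x))" unfolding h_def by (rule good_fh[OF nm t0 f1])
  have g2: "good_op n (\<lambda>x. f2 (h x))" unfolding h_def by (rule good_fh[OF nm t0 f2])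
  have comm: "f1 (h (f2 (h w))) = f2 (h (f1 (h w)))" by (rule good_comm[OF g1 g2 wCM])
  have hw: "h w = (\<lambda>T. a1 * ?e T)" using a1 e unfolding w_def by blast
  have sm: "h (\<lambda>B. c * x B) = (\<lambda>T. c * h x T)" for c x unfolding h_def by (rule hh_smult[OF nm t0])
  have "f1 (h (f2 (h w))) = f1 (h (\<lambda>B. a1 * f2 ?e B))" unfolding hw using lin_on_smult[OF p2(2) e] by simp
  also have "\<dots> = f1 (\<lambda>T. a1 * (a2 * ?e T))" unfolding sm using a2 e by simp
  also have "\<dots> = (\<lambda>B. (a1 * a2) * w B)" unfolding w_def using lin_on_smult[OF p1(2) e, of "a1 * a2"]
    by (simp add: mult.assoc)
  finally have L: "f1 (h (f2 (h w))) = (\<lambda>B. (a1 * a2) * w B)" .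
  have f1hw: "f1 (h w) = (\<lambda>B. a1 * w B)" unfolding hw unfolding w_def by (rule lin_on_smult[OF p1(2) e])
  have "f2 (h (f1 (h w))) = f2 (h (\<lambda>B. a1 * w B))" unfolding f1hw ..
  also have "\<dots> = f2 (\<lambda>T. a1 * (a1 * ?e T))" unfolding sm using a1 e unfolding w_def by simp
  also have "\<dots> = (\<lambda>B. (a1 * a1) * f2 ?e B)" using lin_on_smult[OF p2(2) e, of "a1 * a1"]
    by (simp add: mult.assoc)
  finally have R: "f2 (h (f1 (h w))) = (\<lambda>B. (a1 * a1) * f2 ?e B)" .
  have a1nz: "a1 \<noteq> 0"
  proof
    assume a0: "a1 = 0"
    have "f1 (h w) = (\<lambda>B. 0)" using hw a0 lin_on_zero[OF specht_lin p1(2)] by simp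
    moreover have "f1 (h w) = (\<lambda>A. \<Sum>g\<in>GP n. ip n w (act_M g w) * act_M g w A)"
    proof -
      have "\<forall>g\<in>GP n. act_tab g ?e \<in> ?S" using GP_specht[OF nm t0] by blast
      then have "f1 (h w) = (\<lambda>A. \<Sum>g\<in>GP n. ip n w (act_M g w) * f1 (act_tab g ?e) A)"
        unfolding h_def hh_def
        using lin_sum[OF specht_lin p1(2) finite_GP[of n], of "\<lambda>g. act_tab g ?e" "\<lambda>g. ip n w (act_M g w)"] by blast
      moreover have "f1 (act_tab g ?e) = act_M g w" if "g \<in> GP n" for g
        using p1(3)[OF _ e] that unfolding GP_def w_def by simp
      ultimately show ?thesis by simp
    qed
    ultimately have "ip n (\<lambda>A. \<Sum>g\<in>GP n. ip n w (act_M g w) * act_M g w A) w = ip n (\<lambda>B. 0) w" by simp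
    then have "(\<Sum>g\<in>GP n. ip n w (act_M g w) * ip n (act_M g w) w) = 0"
      unfolding ip_sum[OF finite_GP] by (simp add: ip_def)
    then have "(\<Sum>g\<in>GP n. ip n w (act_M g w) * cnj (ip n w (act_M g w))) = 0"
      using ip_cnj[of n "act_M _ w" w] by simp
    moreover have "(\<Sum>g\<in>GP n. ip n w (act_M g w) * cnj (ip n w (act_M g w))) =
        (\<Sum>g\<in>GP n. complex_of_real ((cmod (ip n w (act_M g w)))\<^sup>2))"
      by (rule sum.cong[OF refl]) (rule complex_norm_square[symmetric])
    ultimately have "(\<Sum>g\<in>GP n. complex_of_real ((cmod (ip n w (act_M g w)))\<^sup>2)) = 0" by simp
    then have "complex_of_real (\<Sum>g\<in>GP n. (cmod (ip n w (act_M g w)))\<^sup>2) = 0"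
      by (simp only: of_real_sum)
    then have "(\<Sum>g\<in>GP n. (cmod (ip n w (act_M g w)))\<^sup>2) = 0" by (simp only: of_real_eq_0_iff)
    then have "\<forall>g\<in>GP n. (cmod (ip n w (act_M g w)))\<^sup>2 = 0"
      using sum_nonneg_eq_0_iff[OF finite_GP[of n], of "\<lambda>g. (cmod (ip n w (act_M g w)))\<^sup>2"] by simp
    moreover have "id \<in> GP n" unfolding GP_def by (simp add: permutes_id)
    moreover have "act_M id w = w" unfolding act_M_img using img_id by simp
    ultimately have "ip n w w = 0" by force
    then have "complex_of_real (\<Sum>B\<in>matchings n. (cmod (w B))\<^sup>2) = 0" unfolding ip_self .
    then have "(\<Sum>B\<in>matchings n. (cmod (w B))\<^sup>2) = 0" by (simp only: of_real_eq_0_iff)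
    then have "\<forall>B\<in>matchings n. (cmod (w B))\<^sup>2 = 0"
      using sum_nonneg_eq_0_iff[OF finite_matchings[of n], of "\<lambda>B. (cmod (w B))\<^sup>2"] by simp
    then have "w = (\<lambda>B. 0)" using in_CM_zero[OF wCM] by simp
    then show False using nz unfolding w_def by simp
  qed
  have "(\<lambda>B. (a1 * a2) * w B) = (\<lambda>B. (a1 * a1) * f2 ?e B)" using L R comm by simp
  then have "f2 ?e = (\<lambda>B. (a2 / a1) * w B)" using a1nz
    by (auto simp: fun_eq_iff field_simps)
  then show ?thesis unfolding w_def by blast
qed

lemma hom_ext:
  assumes f1: "equivariant_into_CM n nu f1" and f2: "equivariant_into_CM n nu f2"
    and c: "f2 (polytabloid nu t0) = (\<lambda>B. c * f1 (polytabloid nu t0) B)"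
    and v: "v \<in> specht nu"
  shows "f2 v = (\<lambda>B. c * f1 v B)"
proof -
  note p1 = equiv_parts[OF nm t0 f1] and p2 = equiv_parts[OF nm t0 f2]
  have et: "f2 (polytabloid nu t) = (\<lambda>B. c * f1 (polytabloid nu t) B)" if t: "t \<in> tableaux nu" for t
  proof -
    obtain s where s: "s permutes {0..<sum_mset nu}" and es: "polytabloid nu t = act_tab s (polytabloid nu t0)"
      using tableau_trans[OF t t0] by blast
    have s': "s permutes {0..<2 * n}" using s nm by simp
    have e0: "polytabloid nu t0 \<in> specht nu" by (rule polytab_in[OF t0])
    show ?thesis unfolding es p1(3)[OF s' e0] p2(3)[OF s' e0] c by (simp add: act_M_def)
  qed
  obtain F a where F: "finite F" "F \<subseteq> tableaux nu" and v': "v = (\<lambda>T. \<Sum>t\<in>F. a t * polytabloid nu t T)"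
    using specht_form[OF v] by blast
  have Fs: "\<forall>t\<in>F. polytabloid nu t \<in> specht nu" using F polytab_in by blast
  have "f2 v = (\<lambda>B. \<Sum>t\<in>F. a t * f2 (polytabloid nu t) B)"
    unfolding v' using lin_sum[OF specht_lin p2(2) F(1) Fs] by blast
  also have "\<dots> = (\<lambda>B. \<Sum>t\<in>F. a t * (c * f1 (polytabloid nu t) B))"
  proof (rule ext, rule sum.cong[OF refl])
    fix B t assume "t \<in> F"
    then show "a t * f2 (polytabloid nu t) B = a t * (c * f1 (polytabloid nu t) B)" using et F by auto
  qed
  also have "\<dots> = (\<lambda>B. c * (\<Sum>t\<in>F. a t * f1 (polytabloid nu t) B))" by (simp add: sum_distrib_left mult_ac)
  also have "\<dots> = (\<lambda>B. c * f1 v B)"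
    unfolding v' using lin_sum[OF specht_lin p1(2) F(1) Fs] by simp
  finally show ?thesis .
qed

end

lemma rows_double: "rows (double lam) = map (\<lambda>x. 2 * x) (rows lam)"
proof -
  let ?xs = "sorted_list_of_multiset lam"
  have lam: "lam = mset ?xs" by simp
  have dl: "double lam = mset (map (\<lambda>x. 2 * x) ?xs)" unfolding double_def by (subst lam) simp
  have "sorted_list_of_multiset (double lam) = sort (map (\<lambda>x. 2 * x) ?xs)"
    unfolding dl by (rule sorted_list_of_multiset_mset)
  also have "\<dots> = map (\<lambda>x. 2 * x) ?xs"
  proof (rule sorted_sort_id)
    have "sorted ?xs" by simp
    then show "sorted (map (\<lambda>x. 2 * x) ?xs)" unfolding sorted_map
      by (rule sorted_wrt_mono_rel[rotated]) simp
  qed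
  finally show ?thesis unfolding rows_def by (simp add: rev_map)
qed

lemma rlen_double: "rlen (double lam) i = 2 * rlen lam i"
  unfolding rlen_def rows_double by simp

lemma sum_double: "sum_mset (double lam) = 2 * sum_mset lam"
  unfolding double_def by (induction lam) auto

definition f0 :: "nat \<Rightarrow> nat multiset \<Rightarrow> (nat \<Rightarrow> nat \<times> nat) \<Rightarrow> ((nat \<Rightarrow> nat) \<Rightarrow> complex) \<Rightarrow> (nat set set \<Rightarrow> complex)" where
  "f0 n nu t v = (\<lambda>B. if B \<in> matchings n then
     (\<Sum>g\<in>{g \<in> GP n. img g (I_match n) = B}. v (tabloid_of nu t id \<circ> inv g)) else 0)"

lemma f0_equiv:
  assumes nm: "sum_mset nu = 2 * n"
  shows "equivariant_into_CM n nu (f0 n nu t)"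
  unfolding equivariant_into_CM_def
proof (intro conjI ballI allI impI)
  fix u assume "u \<in> specht nu"
  show "in_CM n (f0 n nu t u)" unfolding in_CM_def f0_def by simp
next
  fix u v a b
  show "f0 n nu t (\<lambda>T. a * u T + b * v T) = (\<lambda>B. a * f0 n nu t u B + b * f0 n nu t v B)"
    unfolding f0_def by (auto simp: sum.distrib sum_distrib_left)
next
  fix k v assume k: "k permutes {0..<2 * n}"
  let ?R = "tabloid_of nu t id"
  let ?I = "I_match n"
  have ik: "inv k permutes {0..<2 * n}" by (rule permutes_inv[OF k])
  show "f0 n nu t (act_tab k v) = act_M k (f0 n nu t v)"
  proof
    fix B
    show "f0 n nu t (act_tab k v) B = act_M k (f0 n nu t v) B"
    proof (cases "B \<in> matchings n")
      case False
      then have "img (inv k) B \<notin> matchings n" using img_match_iff[OF ik] by simp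
      then show ?thesis using False unfolding f0_def act_M_img by simp
    next
      case True
      then have Bk: "img (inv k) B \<in> matchings n" using img_match_iff[OF ik] by simp
      have "(\<Sum>g\<in>{g \<in> GP n. img g ?I = B}. act_tab k v (?R \<circ> inv g)) =
            (\<Sum>g\<in>{g \<in> GP n. img g ?I = img (inv k) B}. v (?R \<circ> inv g))"
      proof (rule sum.reindex_bij_witness[where j = "\<lambda>g. inv k \<circ> g" and i = "\<lambda>g. k \<circ> g"])
        fix g :: "nat \<Rightarrow> nat"
        show "k \<circ> (inv k \<circ> g) = g" using permutes_inv_o(1)[OF k] by (simp add: comp_assoc[symmetric])
        show "inv k \<circ> (k \<circ> g) = g" using permutes_inv_o(2)[OF k] by (simp add: comp_assoc[symmetric])
      next
        fix g assume g: "g \<in> {g \<in> GP n. img g ?I = B}"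
        have gp: "g permutes {0..<2 * n}" using g unfolding GP_def by simp
        show "inv k \<circ> g \<in> {g \<in> GP n. img g ?I = img (inv k) B}"
          using g permutes_compose[OF gp ik] unfolding GP_def by (simp add: img_comp[symmetric])
        have "inv (inv k \<circ> g) = inv g \<circ> inv (inv k)"
          by (rule o_inv_distrib) (use permutes_bij gp ik in auto)
        also have "\<dots> = inv g \<circ> k" using permutes_inv_inv[OF k] by simp
        finally show "v (?R \<circ> inv (inv k \<circ> g)) = act_tab k v (?R \<circ> inv g)"
          unfolding act_tab_def by (simp add: comp_assoc)
      next
        fix g assume g: "g \<in> {g \<in> GP n. img g ?I = img (inv k) B}"
        have gp: "g permutes {0..<2 * n}" using g unfolding GP_def by simp
        show "k \<circ> g \<in> {g \<in> GP n. img g ?I = B}"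
          using g permutes_compose[OF gp k] img_inv1[OF k] unfolding GP_def by (simp add: img_comp[symmetric])
      qed
      then show ?thesis using True Bk unfolding f0_def act_M_img by simp
    qed
  qed
qed

context
  fixes n :: nat and lam :: "nat multiset" and b :: "nat \<Rightarrow> nat \<times> nat"
  assumes lamn: "sum_mset lam = n" and b: "bij_betw b {0..<n} (cells lam)"
begin

definition tt :: "nat \<Rightarrow> nat \<times> nat" where
  "tt x = (if x < n then (fst (b x), 2 * snd (b x)) else (fst (b (x - n)), 2 * snd (b (x - n)) + 1))"

lemma b_cell: "x < n \<Longrightarrow> snd (b x) < rlen lam (fst (b x))"
proof -
  assume "x < n"
  then have "b x \<in> cells lam" using b unfolding bij_betw_def by auto
  then show ?thesis unfolding cells_iff' .
qed

lemma tt_tab: "tt \<in> tableaux (double lam)"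
proof -
  have m: "sum_mset (double lam) = 2 * n" using sum_double lamn by simp
  have inj: "inj_on tt {0..<2 * n}"
  proof (rule inj_onI)
    fix x y assume x: "x \<in> {0..<2 * n}" and y: "y \<in> {0..<2 * n}" and e: "tt x = tt y"
    have binj: "b u = b v \<Longrightarrow> u < n \<Longrightarrow> v < n \<Longrightarrow> u = v" for u v
      using b unfolding bij_betw_def inj_on_def by auto
    have ev: "u < n \<Longrightarrow> even (snd (tt u))" and od: "\<not> u < n \<Longrightarrow> odd (snd (tt u))" for u
      unfolding tt_def by simp_all
    show "x = y"
    proof (cases "x < n"; cases "y < n")
      assume xy: "x < n" "y < n"
      then have "b x = b y" using e unfolding tt_def by (simp add: prod_eq_iff)
      then show ?thesis using binj xy by blast
    next
      assume "x < n" "\<not> y < n" then show ?thesis using e ev[of x] od[of y] by simp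
    next
      assume "\<not> x < n" "y < n" then show ?thesis using e ev[of y] od[of x] by simp
    next
      assume xy: "\<not> x < n" "\<not> y < n"
      then have "b (x - n) = b (y - n)" using e unfolding tt_def by (simp add: prod_eq_iff)
      moreover have "x - n < n" "y - n < n" using x y xy by auto
      ultimately have "x - n = y - n" using binj by blast
      then show ?thesis using xy by simp
    qed
  qed
  have img: "tt ` {0..<2 * n} = cells (double lam)"
  proof
    show "tt ` {0..<2 * n} \<subseteq> cells (double lam)"
    proof
      fix c assume "c \<in> tt ` {0..<2 * n}"
      then obtain x where x: "x < 2 * n" "c = tt x" by auto
      show "c \<in> cells (double lam)"
      proof (cases "x < n")
        case True then show ?thesis using x b_cell[OF True] unfolding tt_def cells_iff' rlen_double by simp
      next
        case False then have "x - n < n" using x by simp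
        then have "snd (b (x - n)) < rlen lam (fst (b (x - n)))" by (rule b_cell)
        then show ?thesis using x False unfolding tt_def cells_iff' rlen_double by simp
      qed
    qed
    show "cells (double lam) \<subseteq> tt ` {0..<2 * n}"
    proof
      fix c assume c: "c \<in> cells (double lam)"
      obtain i k where ik: "c = (i, k)" by (cases c)
      have k: "k < 2 * rlen lam i" using c ik unfolding cells_iff' rlen_double by simp
      have "(i, k div 2) \<in> cells lam" unfolding cells_iff' using k by simp
      then have "(i, k div 2) \<in> b ` {0..<n}" using b unfolding bij_betw_def by simp
      then obtain x where x: "x < n" "b x = (i, k div 2)" by (metis atLeastLessThan_iff imageE)
      show "c \<in> tt ` {0..<2 * n}"
      proof (cases "even k")
        case True
        then have "tt x = c" using x ik unfolding tt_def by simp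
        then show ?thesis using x by force
      next
        case False
        then have "tt (x + n) = c" using x ik unfolding tt_def by simp
        then show ?thesis using x by force
      qed
    qed
  qed
  show ?thesis unfolding tableaux_def m using inj img by (simp add: bij_betw_def)
qed

lemma tt_even: "x < n \<Longrightarrow> even (snd (tt x))" unfolding tt_def by simp
lemma tt_odd: "n \<le> x \<Longrightarrow> odd (snd (tt x))" unfolding tt_def by simp
lemma tt_pair: "i < n \<Longrightarrow> tt (n + i) = (fst (tt i), snd (tt i) + 1)" unfolding tt_def by simp

lemma sign_pairs:
  assumes p: "p \<in> column_group (double lam) tt" and sg: "\<sigma> permutes {0..<2 * n}"
    and sI: "img \<sigma> (I_match n) = I_match n"
    and eq: "\<And>x. x < 2 * n \<Longrightarrow> fst (tt (\<sigma> x)) = fst (tt (p x))"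
  shows "sign p = 1"
proof -
  have m: "sum_mset (double lam) = 2 * n" using sum_double lamn by simp
  have pp: "p permutes {0..<2 * n}" using cg_perm[OF p] m by simp
  have col: "snd (tt (p x)) = snd (tt x)" if "x < 2 * n" for x using cg_col[OF p] that m by simp
  have tinj: "x = y" if "x < 2 * n" "y < 2 * n" "tt x = tt y" for x y
    using tab_inj[OF tt_tab] that m by simp
  have rowpair: "fst (tt (\<sigma> i)) = fst (tt (\<sigma> (n + i)))" if i: "i < n" for i
  proof -
    have "{i, n + i} \<in> I_match n" unfolding I_match_def using i by blast
    then have "\<sigma> ` {i, n + i} \<in> img \<sigma> (I_match n)" unfolding img_def by blast
    then have "{\<sigma> i, \<sigma> (n + i)} \<in> I_match n" using sI by simp
    then obtain j where j: "j < n" "{\<sigma> i, \<sigma> (n + i)} = {j, n + j}" unfolding I_match_def by blast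
    have fj: "fst (tt (n + j)) = fst (tt j)" using tt_pair[OF j(1)] by simp
    from j(2) have "(\<sigma> i = j \<and> \<sigma> (n + i) = n + j) \<or> (\<sigma> i = n + j \<and> \<sigma> (n + i) = j)"
      by (auto simp: doubleton_eq_iff)
    then show ?thesis using fj by auto
  qed
  have pn: "p i < n \<and> p (n + i) = n + p i" if i: "i < n" for i
  proof -
    have pi2: "p i < 2 * n" using perm_lt[OF pp] i by simp
    have "even (snd (tt (p i)))" using col[of i] i tt_even[OF i] by simp
    then have pi: "p i < n" using tt_odd[of "p i"] by (cases "p i < n") auto
    have ni: "n + i < 2 * n" using i by simp
    have "tt (n + p i) = (fst (tt (p i)), snd (tt (p i)) + 1)" by (rule tt_pair[OF pi])
    also have "fst (tt (p i)) = fst (tt (p (n + i)))" using eq[of i] eq[OF ni] rowpair[OF i] i by simp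
    also have "snd (tt (p i)) + 1 = snd (tt (p (n + i)))" using col[of i] col[OF ni] i tt_pair[OF i] by simp
    finally have "tt (n + p i) = tt (p (n + i))" by simp
    then have "n + p i = p (n + i)" using tinj[of "n + p i" "p (n + i)"] pi perm_lt[OF pp ni] by simp
    then show ?thesis using pi by simp
  qed
  define r where "r x = (if x < n then p x else x)" for x
  define q where "q x = (if x < n then x + n else if x < 2 * n then x - n else x)" for x
  have rinj: "inj_on r {0..<n}"
  proof (rule inj_onI)
    fix x y assume "x \<in> {0..<n}" "y \<in> {0..<n}" "r x = r y"
    then show "x = y" using permutes_inj[OF pp] unfolding r_def by (auto simp: inj_eq)
  qed
  have "r ` {0..<n} \<subseteq> {0..<n}" using pn unfolding r_def by auto
  then have "r ` {0..<n} = {0..<n}" using endo_inj_surj[of "{0..<n}" r] rinj by blast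
  then have "bij_betw r {0..<n} {0..<n}" using rinj by (simp add: bij_betw_def)
  moreover have "\<And>x. x \<notin> {0..<n} \<Longrightarrow> r x = x" unfolding r_def by simp
  ultimately have rp: "r permutes {0..<n}" by (rule bij_imp_permutes)
  have "bij_betw q {0..<2 * n} {0..<2 * n}"
    by (rule bij_betw_byWitness[where f' = q]) (auto simp: q_def)
  moreover have "\<And>x. x \<notin> {0..<2 * n} \<Longrightarrow> q x = x" unfolding q_def by simp
  ultimately have qp: "q permutes {0..<2 * n}" by (rule bij_imp_permutes)
  have pr: "permutation r" by (rule perm_sign[OF rp])
  have pq: "permutation q" by (rule perm_sign[OF qp])
  have decomp: "p = r \<circ> (q \<circ> r \<circ> q)"
  proof
    fix x show "p x = (r \<circ> (q \<circ> r \<circ> q)) x"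
    proof (cases "x < n")
      case True then show ?thesis unfolding r_def q_def by simp
    next
      case False
      show ?thesis
      proof (cases "x < 2 * n")
        case True
        then have xn: "x - n < n" using False by simp
        have "p x = n + p (x - n)" using pn[OF xn] False by simp
        then show ?thesis using False True xn pn[OF xn] unfolding r_def q_def by simp
      next
        case F2: False
        then show ?thesis using permutes_not_in[OF pp, of x] False unfolding r_def q_def by simp
      qed
    qed
  qed
  have "sign (q \<circ> r \<circ> q) = sign q * sign r * sign q"
    using sign_compose[OF permutation_compose[OF pq pr] pq] sign_compose[OF pq pr] by simp
  then have "sign (q \<circ> r \<circ> q) = sign r" by (simp add: mult.commute mult.left_commute)
  then have "sign p = sign r * sign r"
    using decomp sign_compose[OF pr permutation_compose[OF permutation_compose[OF pq pr] pq]] by simp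
  then show ?thesis by simp
qed


lemma f0_nonzero: "f0 n (double lam) tt (polytabloid (double lam) tt) (I_match n) \<noteq> 0"
proof -
  let ?nu = "double lam"
  let ?R = "tabloid_of ?nu tt id"
  let ?I = "I_match n"
  let ?G = "column_group ?nu tt"
  let ?S = "{g \<in> GP n. img g ?I = ?I}"
  have m: "sum_mset ?nu = 2 * n" using sum_double lamn by simp
  define cnt where "cnt h = card {p \<in> ?G. ?R \<circ> inv h = tabloid_of ?nu tt p}" for h
  have tm: "polytabloid ?nu tt (?R \<circ> inv h) = of_nat (cnt h)" if h: "h \<in> ?S" for h
  proof -
    have hp: "h permutes {0..<2 * n}" using h unfolding GP_def by simp
    have ihp: "inv h permutes {0..<2 * n}" by (rule permutes_inv[OF hp])
    have sI: "img (inv h) ?I = ?I" using h img_inv2[OF hp, of ?I] by simp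
    have sg: "sign p = 1" if p: "p \<in> ?G" and e: "?R \<circ> inv h = tabloid_of ?nu tt p" for p
    proof (rule sign_pairs[OF p ihp sI])
      fix x assume x: "x < 2 * n"
      have "(?R \<circ> inv h) x = tabloid_of ?nu tt p x" using e by simp
      then show "fst (tt (inv h x)) = fst (tt (p x))"
        unfolding tabloid_of_def using x perm_lt[OF ihp x] m by simp
    qed
    have "polytabloid ?nu tt (?R \<circ> inv h) = (\<Sum>p\<in>?G. if ?R \<circ> inv h = tabloid_of ?nu tt p then 1 else 0)"
      unfolding polytabloid_def using sg by (intro sum.cong) auto
    also have "\<dots> = of_nat (cnt h)" unfolding cnt_def
      by (simp add: sum.If_cases[OF cg_finite] Int_def)
    finally show ?thesis .
  qed
  have "f0 n ?nu tt (polytabloid ?nu tt) ?I = (\<Sum>h\<in>?S. of_nat (cnt h))"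
  proof -
    have "f0 n ?nu tt (polytabloid ?nu tt) ?I = (\<Sum>h\<in>?S. polytabloid ?nu tt (?R \<circ> inv h))"
      unfolding f0_def using I_match_in by simp
    also have "\<dots> = (\<Sum>h\<in>?S. of_nat (cnt h))" by (rule sum.cong[OF refl]) (rule tm)
    finally show ?thesis .
  qed
  also have "\<dots> = of_nat (\<Sum>h\<in>?S. cnt h)" by simp
  finally have eq: "f0 n ?nu tt (polytabloid ?nu tt) ?I = of_nat (\<Sum>h\<in>?S. cnt h)" .
  have idS: "id \<in> ?S" unfolding GP_def using img_id by (simp add: permutes_id)
  have "id \<in> {p \<in> ?G. ?R \<circ> inv id = tabloid_of ?nu tt p}" using cg_id by simp
  then have "cnt id \<ge> 1" unfolding cnt_def using cg_finite[of ?nu tt]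
    by (metis (no_types, lifting) One_nat_def Suc_leI card_gt_0_iff empty_iff finite_subset mem_Collect_eq subsetI)
  moreover have "finite ?S" using finite_GP[of n] by simp
  ultimately have "(\<Sum>h\<in>?S. cnt h) \<ge> 1" using idS by (meson dual_order.trans member_le_sum zero_le)
  then have ne: "(\<Sum>h\<in>?S. cnt h) \<noteq> 0" by simp
  have "(of_nat (\<Sum>h\<in>?S. cnt h) :: complex) \<noteq> 0" using ne by (metis of_nat_eq_0_iff)
  then show ?thesis unfolding eq .
qed

end

lemma the_scalar:
  fixes c :: complex
  assumes F: "\<forall>v\<in>S. F v = (\<lambda>x. c * v x)" and v0: "w \<in> S" and x0: "w z \<noteq> 0"
  shows "(THE c. \<forall>v\<in>S. F v = (\<lambda>x. c * v x)) = c"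
proof (rule the_equality)
  show "\<forall>v\<in>S. F v = (\<lambda>x. c * v x)" by (rule F)
  fix c' assume c': "\<forall>v\<in>S. F v = (\<lambda>x. c' * v x)"
  have "c' * w z = c * w z" using F c' v0 by metis
  then show "c' = c" using x0 by simp
qed

lemma P_conj_bij:
  assumes k: "k permutes {0..<m}"
  shows "bij_betw (\<lambda>s. k \<circ> s \<circ> inv k) (perms_of_type m mu) (perms_of_type m mu)"
proof (rule bij_betw_byWitness[where f' = "\<lambda>s. inv k \<circ> s \<circ> k"])
  have i1: "inv k \<circ> (k \<circ> s \<circ> inv k) \<circ> k = s" for s using permutes_inverses[OF k] by (simp add: fun_eq_iff)
  have i2: "k \<circ> (inv k \<circ> s \<circ> k) \<circ> inv k = s" for s using permutes_inverses[OF k] by (simp add: fun_eq_iff)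
  show "\<forall>a\<in>perms_of_type m mu. inv k \<circ> (k \<circ> a \<circ> inv k) \<circ> k = a" using i1 by simp
  show "\<forall>a'\<in>perms_of_type m mu. k \<circ> (inv k \<circ> a' \<circ> k) \<circ> inv k = a'" using i2 by simp
  show "(\<lambda>s. k \<circ> s \<circ> inv k) ` perms_of_type m mu \<subseteq> perms_of_type m mu" using P_conj[OF _ k] by auto
  have "inv k \<circ> s \<circ> k = inv k \<circ> s \<circ> inv (inv k)" for s using permutes_inv_inv[OF k] by simp
  then show "(\<lambda>s. inv k \<circ> s \<circ> k) ` perms_of_type m mu \<subseteq> perms_of_type m mu"
    using P_conj[OF _ permutes_inv[OF k]] by auto
qed

lemma class_sum_scalar:
  assumes m: "sum_mset nu = m"
  shows "\<exists>c. \<forall>v\<in>specht nu. class_sum_tab m mu v = (\<lambda>T. c * v T)"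
proof (rule schur_specht)
  let ?P = "perms_of_type m mu"
  have cs: "class_sum_tab m mu v = (\<lambda>T. \<Sum>s\<in>?P. 1 * act_tab s v T)" for v
    unfolding class_sum_tab_def by simp
  show "\<And>v. v \<in> specht nu \<Longrightarrow> class_sum_tab m mu v \<in> specht nu"
    unfolding cs by (rule lin_sum_mem[OF specht_lin finite_P]) (use act_tab_specht P_perm m in blast)
  show "lin_on (specht nu) (class_sum_tab m mu)"
    unfolding lin_on_def class_sum_tab_def act_tab_def by (simp add: sum.distrib sum_distrib_left)
  fix k v assume k: "k permutes {0..<sum_mset nu}" and v: "v \<in> specht nu"
  have k': "k permutes {0..<m}" using k m by simp
  show "class_sum_tab m mu (act_tab k v) = act_tab k (class_sum_tab m mu v)"
  proof
    fix T
    have "act_tab k (class_sum_tab m mu v) T = (\<Sum>s\<in>?P. v (T \<circ> k \<circ> s))"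
      unfolding class_sum_tab_def act_tab_def by (simp add: comp_assoc)
    also have "\<dots> = (\<Sum>s\<in>?P. v (T \<circ> (k \<circ> s \<circ> inv k) \<circ> k))"
    proof (rule sum.cong[OF refl])
      fix s
      have "k \<circ> s \<circ> inv k \<circ> k = k \<circ> s" using permutes_inv_o(2)[OF k'] by (simp add: comp_assoc)
      then show "v (T \<circ> k \<circ> s) = v (T \<circ> (k \<circ> s \<circ> inv k) \<circ> k)" by (simp add: comp_assoc)
    qed
    also have "\<dots> = (\<Sum>s\<in>?P. v (T \<circ> s \<circ> k))"
      using sum.reindex_bij_betw[OF P_conj_bij[OF k'], of "\<lambda>s. v (T \<circ> s \<circ> k)"] by simp
    also have "\<dots> = class_sum_tab m mu (act_tab k v) T"
      unfolding class_sum_tab_def act_tab_def by (simp add: comp_assoc)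
    finally show "class_sum_tab m mu (act_tab k v) T = act_tab k (class_sum_tab m mu v) T" by simp
  qed
qed

lemma N_equiv:
  assumes k: "k permutes {0..<2 * n}"
  shows "N_op n tau (act_M k g) = act_M k (N_op n tau g)"
proof
  fix B
  have ik: "inv k permutes {0..<2 * n}" by (rule permutes_inv[OF k])
  show "N_op n tau (act_M k g) B = act_M k (N_op n tau g) B"
  proof (cases "B \<in> matchings n")
    case False
    then have "img (inv k) B \<notin> matchings n" using img_match_iff[OF ik] by simp
    then show ?thesis using False unfolding N_op_def act_M_img by simp
  next
    case True
    then have Bk: "img (inv k) B \<in> matchings n" using img_match_iff[OF ik] by simp
    have "(\<Sum>A\<in>{A \<in> matchings n. dmatch n A B = double tau}. g (img (inv k) A)) =
          (\<Sum>A\<in>{A \<in> matchings n. dmatch n A (img (inv k) B) = double tau}. g A)"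
    proof (rule sum.reindex_bij_witness[where j = "img (inv k)" and i = "img k"])
      fix A
      show "img k (img (inv k) A) = A" by (rule img_inv1[OF k])
      show "img (inv k) (img k A) = A" by (rule img_inv2[OF k])
    next
      fix A assume A: "A \<in> {A \<in> matchings n. dmatch n A B = double tau}"
      then show "img (inv k) A \<in> {A \<in> matchings n. dmatch n A (img (inv k) B) = double tau}"
        using img_match[OF _ ik] dmatch_img[OF _ True ik, of A] by simp
    next
      fix A assume A: "A \<in> {A \<in> matchings n. dmatch n A (img (inv k) B) = double tau}"
      have "dmatch n (img k A) (img k (img (inv k) B)) = dmatch n A (img (inv k) B)"
        using A dmatch_img[OF _ Bk k, of A] by simp
      then show "img k A \<in> {A \<in> matchings n. dmatch n A B = double tau}"
        using A img_match[OF _ k] img_inv1[OF k] by simp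
    qed simp
    then show ?thesis using True Bk unfolding N_op_def act_M_img by simp
  qed
qed

lemma N_lin: "N_op n tau (\<lambda>B. a * g B + b * h B) = (\<lambda>B. a * N_op n tau g B + b * N_op n tau h B)"
  unfolding N_op_def by (auto simp: sum.distrib sum_distrib_left)

lemma N_smult: "N_op n tau (\<lambda>B. a * g B) = (\<lambda>B. a * N_op n tau g B)"
  unfolding N_op_def by (auto simp: sum_distrib_left)

lemma N_comp_equiv:
  assumes f: "equivariant_into_CM n nu f"
  shows "equivariant_into_CM n nu (\<lambda>v. N_op n tau (f v))"
  unfolding equivariant_into_CM_def
proof (intro conjI ballI allI impI)
  fix u assume "u \<in> specht nu"
  show "in_CM n (N_op n tau (f u))" unfolding in_CM_def N_op_def by simp
next
  fix u v a b assume u: "u \<in> specht nu" and v: "v \<in> specht nu"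
  have "f (\<lambda>T. a * u T + b * v T) = (\<lambda>B. a * f u B + b * f v B)"
    using f u v unfolding equivariant_into_CM_def by blast
  then show "N_op n tau (f (\<lambda>T. a * u T + b * v T)) = (\<lambda>B. a * N_op n tau (f u) B + b * N_op n tau (f v) B)"
    by (simp add: N_lin)
next
  fix s u assume s: "s permutes {0..<2 * n}" and u: "u \<in> specht nu"
  have "f (act_tab s u) = act_M s (f u)" using f s u unfolding equivariant_into_CM_def by blast
  then show "N_op n tau (f (act_tab s u)) = act_M s (N_op n tau (f u))" by (simp add: N_equiv[OF s])
qed


theorem lemma3p2:
  fixes n :: nat and mu lam :: "nat multiset"
  assumes "1 \<le> n" and "is_partition (2 * n) mu" and "is_partition n lam"
  shows "phi_hat (double lam) mu =
           (\<Sum>tau\<in>{tau. is_partition n tau}. of_nat (m_count n mu tau) * theta_hat n lam tau)"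
proof -
  let ?nu = "double lam"
  let ?S = "specht ?nu"
  let ?I = "I_match n"
  let ?Par = "{tau. is_partition n tau}"
  have lamn: "sum_mset lam = n" using assms(3) unfolding is_partition_def by simp
  have m: "sum_mset ?nu = 2 * n" using sum_double lamn by simp
  obtain b where b: "bij_betw b {0..<n} (cells lam)"
    using ex_bij_betw_nat_finite[OF finite_cells, of lam] card_cells[of lam] lamn by auto
  define t0 where "t0 = tt n b"
  have t0: "t0 \<in> tableaux ?nu" unfolding t0_def by (rule tt_tab[OF lamn b])
  define e0 where "e0 = polytabloid ?nu t0"
  have e0: "e0 \<in> ?S" unfolding e0_def by (rule polytab_in[OF t0])
  have e0nz: "e0 (tabloid_of ?nu t0 id) \<noteq> 0" unfolding e0_def using polytab_self[OF t0] by simp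
  obtain c where c: "\<forall>v\<in>?S. class_sum_tab (2 * n) mu v = (\<lambda>T. c * v T)"
    using class_sum_scalar[OF m] by blast
  have phi: "phi_hat ?nu mu = c"
    unfolding phi_hat_def m
    using the_scalar[of ?S "class_sum_tab (2 * n) mu" c e0 "tabloid_of ?nu t0 id"] c e0 e0nz by blast
  define f where "f = f0 n ?nu t0"
  have f: "equivariant_into_CM n ?nu f" unfolding f_def by (rule f0_equiv[OF m])
  note fp = equiv_parts[OF m t0 f]
  define u0 where "u0 = f e0"
  have u0nz: "u0 ?I \<noteq> 0" unfolding u0_def f_def e0_def t0_def by (rule f0_nonzero[OF lamn b])
  have u0nz': "f e0 \<noteq> (\<lambda>B. 0)" using u0nz unfolding u0_def by auto
  have u0CM: "in_CM n u0" unfolding u0_def by (rule fp(1)[OF e0])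
  have theta: "N_op n tau u0 = (\<lambda>B. theta_hat n lam tau * u0 B)" for tau
  proof -
    have fN: "equivariant_into_CM n ?nu (\<lambda>v. N_op n tau (f v))" by (rule N_comp_equiv[OF f])
    obtain th where th: "N_op n tau (f e0) = (\<lambda>B. th * f e0 B)"
      using hom_e0[OF m t0 f fN u0nz'[unfolded e0_def]] unfolding e0_def by blast
    have thv: "N_op n tau (f v) = (\<lambda>B. th * f v B)" if "v \<in> ?S" for v
      using hom_ext[OF m t0 f fN th[unfolded e0_def] that] .
    have allV: "\<forall>u\<in>V_in_CM n lam. N_op n tau u = (\<lambda>B. th * u B)"
    proof
      fix u assume "u \<in> V_in_CM n lam"
      then obtain g v where g: "equivariant_into_CM n ?nu g" and v: "v \<in> ?S" and u: "u = g v"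
        unfolding V_in_CM_def by blast
      obtain c' where c': "g e0 = (\<lambda>B. c' * f e0 B)"
        using hom_e0[OF m t0 f g u0nz'[unfolded e0_def]] unfolding e0_def by blast
      have gv: "g v = (\<lambda>B. c' * f v B)" using hom_ext[OF m t0 f g c'[unfolded e0_def] v] .
      show "N_op n tau u = (\<lambda>B. th * u B)" unfolding u gv N_smult thv[OF v] by (simp add: mult_ac)
    qed
    have u0V: "u0 \<in> V_in_CM n lam" unfolding V_in_CM_def u0_def using f e0 by blast
    have "theta_hat n lam tau = th" unfolding theta_hat_def by (rule the_scalar[OF allV u0V u0nz])
    then show ?thesis using allV u0V by simp
  qed
  have "csm n mu u0 = f (class_sum_tab (2 * n) mu e0)"
  proof -
    let ?P = "perms_of_type (2 * n) mu"
    have "\<forall>s\<in>?P. act_tab s e0 \<in> ?S" using act_tab_specht[OF _ e0] P_perm m by simp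
    then have "f (\<lambda>T. \<Sum>s\<in>?P. 1 * act_tab s e0 T) = (\<lambda>B. \<Sum>s\<in>?P. 1 * f (act_tab s e0) B)"
      using lin_sum[OF specht_lin fp(2) finite_P[of "2 * n" mu], of "\<lambda>s. act_tab s e0" "\<lambda>_. 1"] by blast
    moreover have "f (act_tab s e0) = act_M s u0" if "s \<in> ?P" for s
      unfolding u0_def using fp(3)[OF P_perm[OF that] e0] .
    ultimately show ?thesis unfolding csm_def class_sum_tab_def by simp
  qed
  also have "\<dots> = f (\<lambda>T. c * e0 T)" using c e0 by simp
  also have "\<dots> = (\<lambda>B. c * u0 B)" unfolding u0_def by (rule lin_on_smult[OF fp(2) e0])
  finally have L: "csm n mu u0 = (\<lambda>B. c * u0 B)" .
  have R: "csm n mu u0 = (\<lambda>B. (\<Sum>tau\<in>?Par. of_nat (m_count n mu tau) * theta_hat n lam tau) * u0 B)"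
    unfolding csm_eq[OF u0CM] theta by (simp add: sum_distrib_right sum_distrib_left mult_ac)
  have "c * u0 ?I = (\<Sum>tau\<in>?Par. of_nat (m_count n mu tau) * theta_hat n lam tau) * u0 ?I"
    using L R by metis
  then have "c = (\<Sum>tau\<in>?Par. of_nat (m_count n mu tau) * theta_hat n lam tau)" using u0nz by simp
  then show ?thesis using phi by simp
qed

end
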